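(* Let $N$ be a $d$-small $\mathrm{FS}_B^{\mathrm{op}}$-module and $M_1,\dots,M_p$ be $\mathrm{FS}_A^{\mathrm{op}}$-modules (all over $\mathbb C$) with $M_i$ $c_i$-small. Let $R$ be the $\mathrm{FS}_B^{\mathrm{op}}$-module with $$R(E,\sigma)=\bigoplus_{\varphi:(E,\sigma)\to[-p,p]}N(\varphi^{-1}(0),\sigma)\otimes M_1(\varphi^{-1}(1))\otimes\cdots\otimes M_p(\varphi^{-1}(p)),$$ the sum over all $\mathrm{FS}_B$-morphisms $\varphi$, where a morphism $\psi:(E',\sigma')\to(E,\sigma)$ maps the summand indexed by $\varphi$ to the summand indexed by $\varphi\circ\psi$ via $N(\psi|)\otimes M_1(\psi|)\otimes\cdots\otimes M_p(\psi|)$, $\psi|$ denoting the restrictions $(\varphi\psi)^{-1}(0)\to\varphi^{-1}(0)$ and $(\varphi\psi)^{-1}(i)\to\varphi^{-1}(i)$. Then $R$ is $(d+c_1+\cdots+c_p)$-small.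
   Context: $\mathrm{FS}_A$: nonempty finite sets with surjections. $\mathrm{FS}_B$: pairs $(E,\sigma)$, $E$ finite, $\sigma$ an involution with unique fixed point $0$, morphisms surjective equivariant maps; $[-n,n]=\{-n,\dots,n\}$ with $k\mapsto -k$; for a morphism $\varphi$, $(\varphi^{-1}(0),\sigma)$ is an object of $\mathrm{FS}_B$. A $\mathcal C^{\mathrm{op}}$-module is a contravariant functor to vector spaces; the principal projective $P_x(y)$ has basis $\mathrm{Hom}(y,x)$. An $\mathrm{FS}_A^{\mathrm{op}}$-module is finitely generated in degree $\le d$ if it is a quotient of a finite sum of $P_{[m]}$ with $m\le d$ ($[m]=\{1,\dots,m\}$); an $\mathrm{FS}_B^{\mathrm{op}}$-module is finitely generated in degree $\le d$ if it is a quotient of a finite sum of $P_{[-m,m]}$ with $m\le d$. A module is $d$-small if it is isomorphic to a subquotient of a module finitely generated in degree $\le d$. *)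

theory Defs
  imports Complex_Main "HOL-Library.FuncSet"
begin

definition fn_subspace :: "('a \<Rightarrow> complex) set \<Rightarrow> bool" where
  "fn_subspace S \<longleftrightarrow> (\<lambda>_. 0) \<in> S \<and>
     (\<forall>x\<in>S. \<forall>y\<in>S. (\<lambda>a. x a + y a) \<in> S) \<and>
     (\<forall>c. \<forall>x\<in>S. (\<lambda>a. c * x a) \<in> S)"

definition fn_linear_on :: "('a \<Rightarrow> complex) set \<Rightarrow> ('b \<Rightarrow> complex) set
    \<Rightarrow> (('a \<Rightarrow> complex) \<Rightarrow> ('b \<Rightarrow> complex)) \<Rightarrow> bool" where
  "fn_linear_on S T h \<longleftrightarrow> (\<forall>x\<in>S. h x \<in> T) \<and>
     (\<forall>x\<in>S. \<forall>y\<in>S. h (\<lambda>a. x a + y a) = (\<lambda>a. h x a + h y a)) \<and>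
     (\<forall>c. \<forall>x\<in>S. h (\<lambda>a. c * x a) = (\<lambda>a. c * h x a))"

definition fn_span :: "('a \<Rightarrow> complex) set \<Rightarrow> ('a \<Rightarrow> complex) set" where
  "fn_span S = {(\<lambda>z. \<Sum>j<(n::nat). c j * u j z) | n c u. \<forall>j<n. u j \<in> S}"

text \<open>A category is given by an object predicate, hom sets, composition
  (cmp X g f = g o f for f : X -> Y, g : Y -> Z) and identities.\<close>

definition is_module ::
  "('o \<Rightarrow> bool) \<Rightarrow> ('o \<Rightarrow> 'o \<Rightarrow> 'h set) \<Rightarrow> ('o \<Rightarrow> 'h \<Rightarrow> 'h \<Rightarrow> 'h) \<Rightarrow> ('o \<Rightarrow> 'h)
   \<Rightarrow> ('o \<Rightarrow> ('a \<Rightarrow> complex) set)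
   \<Rightarrow> ('o \<Rightarrow> 'o \<Rightarrow> 'h \<Rightarrow> ('a \<Rightarrow> complex) \<Rightarrow> ('a \<Rightarrow> complex)) \<Rightarrow> bool" where
  "is_module obj hom cmp idm Mob Mmor \<longleftrightarrow>
     (\<forall>X. obj X \<longrightarrow> fn_subspace (Mob X)) \<and>
     (\<forall>X Y f. obj X \<longrightarrow> obj Y \<longrightarrow> f \<in> hom X Y \<longrightarrow> fn_linear_on (Mob Y) (Mob X) (Mmor X Y f)) \<and>
     (\<forall>X. obj X \<longrightarrow> (\<forall>v\<in>Mob X. Mmor X X (idm X) v = v)) \<and>
     (\<forall>X Y Z f g. obj X \<longrightarrow> obj Y \<longrightarrow> obj Z \<longrightarrow> f \<in> hom X Y \<longrightarrow> g \<in> hom Y Z \<longrightarrow>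
        (\<forall>v\<in>Mob Z. Mmor X Z (cmp X g f) v = Mmor X Y f (Mmor Y Z g v)))"

text \<open>The direct sum of principal projectives P_{gens!0} + ... + P_{gens!(k-1)}:
  at Y it has basis the pairs (i, f) with f in hom Y (gens!i).\<close>

definition free_ob :: "('o \<Rightarrow> 'o \<Rightarrow> 'h set) \<Rightarrow> 'o list \<Rightarrow> 'o \<Rightarrow> (nat \<times> 'h \<Rightarrow> complex) set" where
  "free_ob hom gens Y = {v. \<forall>i f. v (i, f) \<noteq> 0 \<longrightarrow> i < length gens \<and> f \<in> hom Y (gens ! i)}"

definition free_mor :: "('o \<Rightarrow> 'o \<Rightarrow> 'h set) \<Rightarrow> ('o \<Rightarrow> 'h \<Rightarrow> 'h \<Rightarrow> 'h) \<Rightarrow> 'o list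
    \<Rightarrow> 'o \<Rightarrow> 'o \<Rightarrow> 'h \<Rightarrow> (nat \<times> 'h \<Rightarrow> complex) \<Rightarrow> (nat \<times> 'h \<Rightarrow> complex)" where
  "free_mor hom cmp gens Y' Y h v = (\<lambda>(i, f').
     if i < length gens then (\<Sum>f\<in>{f \<in> hom Y (gens ! i). cmp Y' f h = f'}. v (i, f)) else 0)"

definition is_submodule ::
  "('o \<Rightarrow> bool) \<Rightarrow> ('o \<Rightarrow> 'o \<Rightarrow> 'h set) \<Rightarrow> ('o \<Rightarrow> ('a \<Rightarrow> complex) set)
   \<Rightarrow> ('o \<Rightarrow> 'o \<Rightarrow> 'h \<Rightarrow> ('a \<Rightarrow> complex) \<Rightarrow> ('a \<Rightarrow> complex))
   \<Rightarrow> ('o \<Rightarrow> ('a \<Rightarrow> complex) set) \<Rightarrow> bool" where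
  "is_submodule obj hom Mob Mmor S \<longleftrightarrow>
     (\<forall>X. obj X \<longrightarrow> fn_subspace (S X) \<and> S X \<subseteq> Mob X) \<and>
     (\<forall>X Y f. obj X \<longrightarrow> obj Y \<longrightarrow> f \<in> hom X Y \<longrightarrow> Mmor X Y f ` S Y \<subseteq> S X)"

definition is_epi ::
  "('o \<Rightarrow> bool) \<Rightarrow> ('o \<Rightarrow> 'o \<Rightarrow> 'h set)
   \<Rightarrow> ('o \<Rightarrow> ('a \<Rightarrow> complex) set) \<Rightarrow> ('o \<Rightarrow> 'o \<Rightarrow> 'h \<Rightarrow> ('a \<Rightarrow> complex) \<Rightarrow> ('a \<Rightarrow> complex))
   \<Rightarrow> ('o \<Rightarrow> ('b \<Rightarrow> complex) set) \<Rightarrow> ('o \<Rightarrow> 'o \<Rightarrow> 'h \<Rightarrow> ('b \<Rightarrow> complex) \<Rightarrow> ('b \<Rightarrow> complex))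
   \<Rightarrow> ('o \<Rightarrow> ('a \<Rightarrow> complex) \<Rightarrow> ('b \<Rightarrow> complex)) \<Rightarrow> bool" where
  "is_epi obj hom Sob Smor Mob Mmor \<eta> \<longleftrightarrow>
     (\<forall>X. obj X \<longrightarrow> fn_linear_on (Sob X) (Mob X) (\<eta> X) \<and> \<eta> X ` Sob X = Mob X) \<and>
     (\<forall>X Y f. obj X \<longrightarrow> obj Y \<longrightarrow> f \<in> hom X Y \<longrightarrow>
        (\<forall>v\<in>Sob Y. \<eta> X (Smor X Y f v) = Mmor X Y f (\<eta> Y v)))"

text \<open>d-small: isomorphic to a subquotient of a module finitely generated in degree \<le> d,
  i.e. the image of an epimorphism from a submodule S of a module F which itself is a
  quotient of a finite sum of P_{gen m}, m \<le> d.  Since a subquotient of a quotient of F0 is a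
  subquotient of F0, we take F = the finite sum of principal projectives directly.\<close>

definition small ::
  "('o \<Rightarrow> bool) \<Rightarrow> ('o \<Rightarrow> 'o \<Rightarrow> 'h set) \<Rightarrow> ('o \<Rightarrow> 'h \<Rightarrow> 'h \<Rightarrow> 'h)
   \<Rightarrow> (nat \<Rightarrow> 'o) \<Rightarrow> nat \<Rightarrow> nat
   \<Rightarrow> ('o \<Rightarrow> ('a \<Rightarrow> complex) set) \<Rightarrow> ('o \<Rightarrow> 'o \<Rightarrow> 'h \<Rightarrow> ('a \<Rightarrow> complex) \<Rightarrow> ('a \<Rightarrow> complex))
   \<Rightarrow> bool" where
  "small obj hom cmp gen lo d Mob Mmor \<longleftrightarrow>
     (\<exists>ms. (\<forall>m\<in>set ms. lo \<le> m \<and> m \<le> d) \<and>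
       (\<exists>S. is_submodule obj hom (free_ob hom (map gen ms)) (free_mor hom cmp (map gen ms)) S \<and>
         (\<exists>\<eta>. is_epi obj hom S (free_mor hom cmp (map gen ms)) Mob Mmor \<eta>)))"

definition fsA_obj :: "int set \<Rightarrow> bool" where
  "fsA_obj X \<longleftrightarrow> finite X \<and> X \<noteq> {}"

definition fsA_hom :: "int set \<Rightarrow> int set \<Rightarrow> (int \<Rightarrow> int) set" where
  "fsA_hom X Y = {f \<in> X \<rightarrow>\<^sub>E Y. f ` X = Y}"

definition fsA_comp :: "int set \<Rightarrow> (int \<Rightarrow> int) \<Rightarrow> (int \<Rightarrow> int) \<Rightarrow> (int \<Rightarrow> int)" where
  "fsA_comp X g f = compose X g f"

definition fsA_id :: "int set \<Rightarrow> (int \<Rightarrow> int)" where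
  "fsA_id X = restrict id X"

definition fsA_gen :: "nat \<Rightarrow> int set" where
  "fsA_gen m = {1..int m}"

type_synonym fsB_ob = "int set \<times> (int \<Rightarrow> int)"

definition fsB_obj :: "fsB_ob \<Rightarrow> bool" where
  "fsB_obj Es \<longleftrightarrow> (let E = fst Es; \<sigma> = snd Es in
     finite E \<and> 0 \<in> E \<and> \<sigma> \<in> E \<rightarrow>\<^sub>E E \<and> (\<forall>x\<in>E. \<sigma> (\<sigma> x) = x) \<and>
     (\<forall>x\<in>E. \<sigma> x = x \<longleftrightarrow> x = 0))"

definition fsB_hom :: "fsB_ob \<Rightarrow> fsB_ob \<Rightarrow> (int \<Rightarrow> int) set" where
  "fsB_hom Es Fs = {f \<in> fst Es \<rightarrow>\<^sub>E fst Fs. f ` fst Es = fst Fs \<and>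
     (\<forall>x\<in>fst Es. f (snd Es x) = snd Fs (f x))}"

definition fsB_comp :: "fsB_ob \<Rightarrow> (int \<Rightarrow> int) \<Rightarrow> (int \<Rightarrow> int) \<Rightarrow> (int \<Rightarrow> int)" where
  "fsB_comp Es g f = compose (fst Es) g f"

definition fsB_id :: "fsB_ob \<Rightarrow> (int \<Rightarrow> int)" where
  "fsB_id Es = restrict id (fst Es)"

definition fsB_gen :: "nat \<Rightarrow> fsB_ob" where
  "fsB_gen n = ({- int n..int n}, restrict uminus {- int n..int n})"

abbreviation fsA_module where
  "fsA_module \<equiv> is_module fsA_obj fsA_hom fsA_comp fsA_id"
abbreviation fsB_module where
  "fsB_module \<equiv> is_module fsB_obj fsB_hom fsB_comp fsB_id"
abbreviation fsA_small where
  "fsA_small d \<equiv> small fsA_obj fsA_hom fsA_comp fsA_gen 1 d"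
abbreviation fsB_small where
  "fsB_small d \<equiv> small fsB_obj fsB_hom fsB_comp fsB_gen 0 d"

definition fib :: "(int \<Rightarrow> int) \<Rightarrow> int set \<Rightarrow> int \<Rightarrow> int set" where
  "fib \<phi> E i = {x \<in> E. \<phi> x = i}"

definition fibB :: "(int \<Rightarrow> int) \<Rightarrow> fsB_ob \<Rightarrow> fsB_ob" where
  "fibB \<phi> Es = (fib \<phi> (fst Es) 0, restrict (snd Es) (fib \<phi> (fst Es) 0))"

text \<open>Elementary tensor v (x) w_1 (x) ... (x) w_p of functions, as a function on
  'b x 'a list; the algebraic tensor product of function spaces embeds this way.\<close>
definition elem_tensor :: "('b \<Rightarrow> complex) \<Rightarrow> ('a \<Rightarrow> complex) list \<Rightarrow> ('b \<times> 'a list \<Rightarrow> complex)" where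
  "elem_tensor v ws = (\<lambda>(b, xs). if length xs = length ws
      then v b * (\<Prod>i<length ws. (ws ! i) (xs ! i)) else 0)"

definition tensor_space :: "('b \<Rightarrow> complex) set \<Rightarrow> ('a \<Rightarrow> complex) set list \<Rightarrow> ('b \<times> 'a list \<Rightarrow> complex) set" where
  "tensor_space V Ws = fn_span {elem_tensor v ws | v ws. v \<in> V \<and> length ws = length Ws \<and>
       (\<forall>i<length Ws. ws ! i \<in> Ws ! i)}"

type_synonym 'a fsA_mod =
  "(int set \<Rightarrow> ('a \<Rightarrow> complex) set) \<times> (int set \<Rightarrow> int set \<Rightarrow> (int \<Rightarrow> int) \<Rightarrow> ('a \<Rightarrow> complex) \<Rightarrow> ('a \<Rightarrow> complex))"

text \<open>R(E, sigma) = direct sum over phi : (E,sigma) -> [-p,p] of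
  N(phi^{-1}(0)) (x) M_1(phi^{-1}(1)) (x) ... (x) M_p(phi^{-1}(p));
  here Ms ! i is M_{i+1}.\<close>
definition R_ob :: "(fsB_ob \<Rightarrow> ('b \<Rightarrow> complex) set) \<Rightarrow> 'a fsA_mod list
    \<Rightarrow> fsB_ob \<Rightarrow> ((int \<Rightarrow> int) \<times> 'b \<times> 'a list \<Rightarrow> complex) set" where
  "R_ob Nob Ms Es = {g.
     (\<forall>\<phi> b xs. g (\<phi>, b, xs) \<noteq> 0 \<longrightarrow> \<phi> \<in> fsB_hom Es (fsB_gen (length Ms))) \<and>
     (\<forall>\<phi>\<in>fsB_hom Es (fsB_gen (length Ms)).
        (\<lambda>(b, xs). g (\<phi>, b, xs)) \<in> tensor_space (Nob (fibB \<phi> Es))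
           (map (\<lambda>i. fst (Ms ! i) (fib \<phi> (fst Es) (int i + 1))) [0..<length Ms]))}"

definition summand_inj :: "(int \<Rightarrow> int) \<Rightarrow> ('b \<times> 'a list \<Rightarrow> complex) \<Rightarrow> ((int \<Rightarrow> int) \<times> 'b \<times> 'a list \<Rightarrow> complex)" where
  "summand_inj \<phi> t = (\<lambda>(\<phi>', b, xs). if \<phi>' = \<phi> then t (b, xs) else 0)"

text \<open>These conditions determine R(psi) uniquely (R(E,sigma) is spanned by such tensors).\<close>
definition R_mor_spec :: "(fsB_ob \<Rightarrow> ('b \<Rightarrow> complex) set)
    \<Rightarrow> (fsB_ob \<Rightarrow> fsB_ob \<Rightarrow> (int \<Rightarrow> int) \<Rightarrow> ('b \<Rightarrow> complex) \<Rightarrow> ('b \<Rightarrow> complex))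
    \<Rightarrow> 'a fsA_mod list
    \<Rightarrow> (fsB_ob \<Rightarrow> fsB_ob \<Rightarrow> (int \<Rightarrow> int) \<Rightarrow> ((int \<Rightarrow> int) \<times> 'b \<times> 'a list \<Rightarrow> complex)
          \<Rightarrow> ((int \<Rightarrow> int) \<times> 'b \<times> 'a list \<Rightarrow> complex)) \<Rightarrow> bool" where
  "R_mor_spec Nob Nmor Ms Rmor \<longleftrightarrow>
    (\<forall>Es' Es \<psi>. fsB_obj Es' \<longrightarrow> fsB_obj Es \<longrightarrow> \<psi> \<in> fsB_hom Es' Es \<longrightarrow>
       fn_linear_on (R_ob Nob Ms Es) (R_ob Nob Ms Es') (Rmor Es' Es \<psi>) \<and>
       (\<forall>\<phi> v ws. \<phi> \<in> fsB_hom Es (fsB_gen (length Ms)) \<longrightarrow>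
          v \<in> Nob (fibB \<phi> Es) \<longrightarrow> length ws = length Ms \<longrightarrow>
          (\<forall>i<length Ms. ws ! i \<in> fst (Ms ! i) (fib \<phi> (fst Es) (int i + 1))) \<longrightarrow>
          (let \<chi> = compose (fst Es') \<phi> \<psi> in
           Rmor Es' Es \<psi> (summand_inj \<phi> (elem_tensor v ws)) =
           summand_inj \<chi> (elem_tensor
              (Nmor (fibB \<chi> Es') (fibB \<phi> Es) (restrict \<psi> (fib \<chi> (fst Es') 0)) v)
              (map (\<lambda>i. snd (Ms ! i) (fib \<chi> (fst Es') (int i + 1)) (fib \<phi> (fst Es) (int i + 1))
                          (restrict \<psi> (fib \<chi> (fst Es') (int i + 1))) (ws ! i))
                   [0..<length Ms])))))"

end

theory Submission
  imports Defs
begin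


lemma fn_span_eq:
  "fn_span S = {(\<lambda>z. \<Sum>(c,u)\<leftarrow>L. c * u z) | L. \<forall>p\<in>set L. snd p \<in> S}"
proof (intro set_eqI iffI)
  fix x assume "x \<in> fn_span S"
  then obtain n c u where x: "x = (\<lambda>z. \<Sum>j<(n::nat). c j * u j z)" and u: "\<forall>j<n. u j \<in> S"
    unfolding fn_span_def by blast
  let ?L = "map (\<lambda>j. (c j, u j)) [0..<n]"
  have "x = (\<lambda>z. \<Sum>(c,u)\<leftarrow>?L. c * u z)"
    unfolding x by (simp add: o_def interv_sum_list_conv_sum_set_nat atLeast0LessThan)
  moreover have "\<forall>p\<in>set ?L. snd p \<in> S" using u by auto
  ultimately show "x \<in> {(\<lambda>z. \<Sum>(c,u)\<leftarrow>L. c * u z) | L. \<forall>p\<in>set L. snd p \<in> S}" by blast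
next
  fix x assume "x \<in> {(\<lambda>z. \<Sum>(c,u)\<leftarrow>L. c * u z) | L. \<forall>p\<in>set L. snd p \<in> S}"
  then obtain L where x: "x = (\<lambda>z. \<Sum>(c,u)\<leftarrow>L. c * u z)" and L: "\<forall>p\<in>set L. snd p \<in> S" by blast
  have "x = (\<lambda>z. \<Sum>j<length L. fst (L!j) * snd (L!j) z)"
    unfolding x
    apply (rule ext)
    apply (subst sum_list_sum_nth)
    apply (simp add: atLeast0LessThan case_prod_beta)
    done
  moreover have "\<forall>j<length L. snd (L!j) \<in> S" using L by auto
  ultimately show "x \<in> fn_span S" unfolding fn_span_def
    by (intro CollectI exI[of _ "length L"] exI[of _ "\<lambda>j. fst (L!j)"] exI[of _ "\<lambda>j. snd (L!j)"]) simp
qed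

lemma fn_span_subspace: "fn_subspace (fn_span S)"
  unfolding fn_subspace_def fn_span_eq
proof (intro conjI ballI allI)
  show "(\<lambda>_. 0) \<in> {(\<lambda>z. \<Sum>(c,u)\<leftarrow>L. c * u z) | L. \<forall>p\<in>set L. snd p \<in> S}"
    by (rule CollectI, rule exI[of _ "[]"]) (auto)
next
  fix x y assume "x \<in> {(\<lambda>z. \<Sum>(c,u)\<leftarrow>L. c * u z) | L. \<forall>p\<in>set L. snd p \<in> S}"
    "y \<in> {(\<lambda>z. \<Sum>(c,u)\<leftarrow>L. c * u z) | L. \<forall>p\<in>set L. snd p \<in> S}"
  then obtain L1 L2 where "x = (\<lambda>z. \<Sum>(c,u)\<leftarrow>L1. c * u z)" "\<forall>p\<in>set L1. snd p \<in> S"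
    "y = (\<lambda>z. \<Sum>(c,u)\<leftarrow>L2. c * u z)" "\<forall>p\<in>set L2. snd p \<in> S" by blast
  then show "(\<lambda>a. x a + y a) \<in> {(\<lambda>z. \<Sum>(c,u)\<leftarrow>L. c * u z) | L. \<forall>p\<in>set L. snd p \<in> S}"
    by (intro CollectI exI[of _ "L1 @ L2"]) auto
next
  fix k x assume "x \<in> {(\<lambda>z. \<Sum>(c,u)\<leftarrow>L. c * u z) | L. \<forall>p\<in>set L. snd p \<in> S}"
  then obtain L1 where x: "x = (\<lambda>z. \<Sum>(c,u)\<leftarrow>L1. c * u z)" "\<forall>p\<in>set L1. snd p \<in> S" by blast
  have "(\<lambda>a. k * x a) = (\<lambda>z. \<Sum>(c,u)\<leftarrow>map (\<lambda>(c,u). (k*c,u)) L1. c * u z)"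
    unfolding x by (simp add: sum_list_const_mult[symmetric] o_def case_prod_beta mult.assoc)
  then show "(\<lambda>a. k * x a) \<in> {(\<lambda>z. \<Sum>(c,u)\<leftarrow>L. c * u z) | L. \<forall>p\<in>set L. snd p \<in> S}"
    using x(2) by (intro CollectI exI[of _ "map (\<lambda>(c,u). (k*c,u)) L1"]) auto
qed

lemma fn_span_sup: "u \<in> S \<Longrightarrow> u \<in> fn_span S"
  unfolding fn_span_eq
  by (intro CollectI exI[of _ "[(1,u)]"]) auto

lemma add_closed: "fn_subspace V \<Longrightarrow> x\<in>V \<Longrightarrow> y\<in>V \<Longrightarrow> (\<lambda>a. x a + y a) \<in> V"
  by (simp add: fn_subspace_def)
lemma scal_closed: "fn_subspace V \<Longrightarrow> x\<in>V \<Longrightarrow> (\<lambda>a. c * x a) \<in> V"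
  by (simp add: fn_subspace_def)
lemma zero_closed: "fn_subspace V \<Longrightarrow> (\<lambda>a. 0) \<in> V"
  by (simp add: fn_subspace_def)

lemma lin_add: "fn_linear_on V W h \<Longrightarrow> x\<in>V \<Longrightarrow> y\<in>V \<Longrightarrow> h (\<lambda>a. x a + y a) = (\<lambda>a. h x a + h y a)"
  by (simp add: fn_linear_on_def)
lemma lin_scal: "fn_linear_on V W h \<Longrightarrow> x\<in>V \<Longrightarrow> h (\<lambda>a. c * x a) = (\<lambda>a. c * h x a)"
  by (simp add: fn_linear_on_def)
lemma lin_in: "fn_linear_on V W h \<Longrightarrow> x\<in>V \<Longrightarrow> h x \<in> W"
  by (simp add: fn_linear_on_def)

lemma lin_zero: "fn_linear_on V W h \<Longrightarrow> fn_subspace V \<Longrightarrow> h (\<lambda>a. 0) = (\<lambda>a. 0)"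
proof -
  assume h: "fn_linear_on V W h" and V: "fn_subspace V"
  have "h (\<lambda>a. 0 * (\<lambda>a. 0) a) = (\<lambda>a. 0 * h (\<lambda>a. 0) a)"
    by (rule lin_scal[OF h zero_closed[OF V]])
  then show ?thesis by simp
qed

lemma lin_list:
  assumes h: "fn_linear_on V W h" and V: "fn_subspace V"
  shows "(\<forall>x\<in>set xs. cf x \<noteq> 0 \<longrightarrow> uf x \<in> V) \<Longrightarrow>
    (\<lambda>a. \<Sum>x\<leftarrow>xs. cf x * uf x a) \<in> V \<and> h (\<lambda>a. \<Sum>x\<leftarrow>xs. cf x * uf x a) = (\<lambda>a. \<Sum>x\<leftarrow>xs. cf x * h (uf x) a)"
proof (induction xs)
  case Nil
  then show ?case using lin_zero[OF h V] zero_closed[OF V] by simp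
next
  case (Cons x xs)
  have P: "\<forall>x\<in>set xs. cf x \<noteq> 0 \<longrightarrow> uf x \<in> V" using Cons.prems by simp
  note IH = conjunct1[OF Cons.IH[OF P]] conjunct2[OF Cons.IH[OF P]]
  show ?case
  proof (cases "cf x = 0")
    case True
    then show ?thesis using IH by simp
  next
    case False
    then have u: "uf x \<in> V" using Cons.prems by simp
    have cu: "(\<lambda>a. cf x * uf x a) \<in> V" using scal_closed[OF V u] .
    have "(\<lambda>a. (\<lambda>a. cf x * uf x a) a + (\<lambda>a. \<Sum>x\<leftarrow>xs. cf x * uf x a) a) \<in> V"
      using add_closed[OF V cu IH(1)] .
    moreover have e1: "h (\<lambda>a. (\<lambda>a. cf x * uf x a) a + (\<lambda>a. \<Sum>x\<leftarrow>xs. cf x * uf x a) a)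
       = (\<lambda>a. h (\<lambda>a. cf x * uf x a) a + h (\<lambda>a. \<Sum>x\<leftarrow>xs. cf x * uf x a) a)"
      using lin_add[OF h cu IH(1)] .
    moreover have e2: "h (\<lambda>a. cf x * uf x a) = (\<lambda>a. cf x * h (uf x) a)"
      using lin_scal[OF h u] .
    ultimately show ?thesis unfolding sum_list.Cons list.map e1 e2 IH(2) by simp
  qed
qed


definition off :: "(nat \<Rightarrow> nat) \<Rightarrow> nat \<Rightarrow> nat" where
  "off A m = (\<Sum>l<m. A l)"

definition cl :: "(nat \<Rightarrow> nat) \<Rightarrow> nat \<Rightarrow> int \<Rightarrow> int" where
  "cl A p w = sgn w * int (card {m. 1 \<le> m \<and> m \<le> p \<and> int (off A m) < \<bar>w\<bar>})"

lemma off_Suc: "off A (Suc m) = off A m + A m"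
  by (simp add: off_def)

lemma off_mono: "m \<le> m' \<Longrightarrow> off A m \<le> off A m'"
  unfolding off_def by (rule sum_mono2) auto

lemma off_1: "off A 1 = A 0"
  by (simp add: off_def)

lemma cl_neg: "cl A p (- w) = - cl A p w"
  by (simp add: cl_def sgn_minus)

lemma cl_zero: "\<bar>w\<bar> \<le> int (off A 1) \<Longrightarrow> cl A p w = 0"
proof -
  assume a: "\<bar>w\<bar> \<le> int (off A 1)"
  have "\<forall>m. \<not> (1 \<le> m \<and> m \<le> p \<and> int (off A m) < \<bar>w\<bar>)"
  proof (intro allI notI)
    fix m assume m: "1 \<le> m \<and> m \<le> p \<and> int (off A m) < \<bar>w\<bar>"
    then have "off A 1 \<le> off A m" by (intro off_mono) simp
    with m a show False by linarith
  qed
  then have "{m. 1 \<le> m \<and> m \<le> p \<and> int (off A m) < \<bar>w\<bar>} = {}" by blast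
  then show ?thesis by (simp add: cl_def)
qed

lemma cl_block:
  assumes "1 \<le> m" "m \<le> p" "int (off A m) < \<bar>w\<bar>" "\<bar>w\<bar> \<le> int (off A (Suc m))"
  shows "cl A p w = sgn w * int m"
proof -
  have "{l. 1 \<le> l \<and> l \<le> p \<and> int (off A l) < \<bar>w\<bar>} = {1..m}"
  proof (intro set_eqI iffI)
    fix l assume "l \<in> {l. 1 \<le> l \<and> l \<le> p \<and> int (off A l) < \<bar>w\<bar>}"
    then have l: "1 \<le> l" "l \<le> p" "int (off A l) < \<bar>w\<bar>" by auto
    have "l \<le> m"
    proof (rule ccontr)
      assume "\<not> l \<le> m"
      then have "Suc m \<le> l" by simp
      with off_mono[of "Suc m" l A] assms l show False by linarith
    qed
    then show "l \<in> {1..m}" using l by auto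
  next
    fix l assume l: "l \<in> {1..m}"
    then have "off A l \<le> off A m" using off_mono[of l m A] by auto
    then show "l \<in> {l. 1 \<le> l \<and> l \<le> p \<and> int (off A l) < \<bar>w\<bar>}"
      using assms l by auto
  qed
  then show ?thesis by (simp add: cl_def)
qed

lemma cover:
  "\<bar>w\<bar> \<le> int (off A (Suc p)) \<Longrightarrow> \<bar>w\<bar> \<le> int (off A 1) \<or>
     (\<exists>m. 1 \<le> m \<and> m \<le> p \<and> int (off A m) < \<bar>w\<bar> \<and> \<bar>w\<bar> \<le> int (off A (Suc m)))"
proof (induction p)
  case 0
  then show ?case by simp
next
  case (Suc p)
  show ?case
  proof (cases "\<bar>w\<bar> \<le> int (off A (Suc p))")
    case True
    from Suc.IH[OF True] show ?thesis
      using le_SucI by blast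
  next
    case False
    then show ?thesis using Suc.prems
      by (intro disjI2 exI[of _ "Suc p"]) auto
  qed
qed

lemma cl_range: "\<bar>cl A p w\<bar> \<le> int p"
proof -
  have "card {m. 1 \<le> m \<and> m \<le> p \<and> int (off A m) < \<bar>w\<bar>} \<le> card {1..p}"
    by (rule card_mono) auto
  then have c: "card {m. 1 \<le> m \<and> m \<le> p \<and> int (off A m) < \<bar>w\<bar>} \<le> p" by simp
  define k where "k = card {m. 1 \<le> m \<and> m \<le> p \<and> int (off A m) < \<bar>w\<bar>}"
  have e: "cl A p w = sgn w * int k" unfolding cl_def k_def ..
  have "k \<le> p" using c unfolding k_def .
  then show ?thesis unfolding e abs_mult by (cases "w = 0") (simp_all add: sgn_if)
qed

lemma cl_eq0_iff:
  assumes "\<bar>w\<bar> \<le> int (off A (Suc p))"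
  shows "cl A p w = 0 \<longleftrightarrow> \<bar>w\<bar> \<le> int (off A 1)"
proof
  assume c: "cl A p w = 0"
  show "\<bar>w\<bar> \<le> int (off A 1)"
  proof (rule ccontr)
    assume n: "\<not> \<bar>w\<bar> \<le> int (off A 1)"
    then obtain m where m: "1 \<le> m" "m \<le> p" "int (off A m) < \<bar>w\<bar>" "\<bar>w\<bar> \<le> int (off A (Suc m))"
      using cover[OF assms] by blast
    have "w \<noteq> 0" using n by auto
    then show False using cl_block[OF m] c m(1) by (auto simp: sgn_if split: if_splits)
  qed
qed (rule cl_zero)

lemma cl_eqpos_iff:
  assumes "\<bar>w\<bar> \<le> int (off A (Suc p))" "1 \<le> m" "m \<le> p"
  shows "cl A p w = int m \<longleftrightarrow> int (off A m) < w \<and> w \<le> int (off A (Suc m))"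
proof
  assume c: "cl A p w = int m"
  have "\<not> \<bar>w\<bar> \<le> int (off A 1)" using cl_zero[of w A p] c assms by auto
  then obtain m' where m': "1 \<le> m'" "m' \<le> p" "int (off A m') < \<bar>w\<bar>" "\<bar>w\<bar> \<le> int (off A (Suc m'))"
    using cover[OF assms(1)] by blast
  have w0: "w \<noteq> 0" using m' by auto
  have "sgn w * int m' = int m" using cl_block[OF m'] c by simp
  then have "w > 0 \<and> m' = m" using w0 m'(1) assms(2) by (auto simp: sgn_if split: if_splits)
  then show "int (off A m) < w \<and> w \<le> int (off A (Suc m))" using m' by auto
next
  assume "int (off A m) < w \<and> w \<le> int (off A (Suc m))"
  then have "int (off A m) < \<bar>w\<bar>" "\<bar>w\<bar> \<le> int (off A (Suc m))" "w > 0" by auto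
  then show "cl A p w = int m" using cl_block[OF assms(2,3)] by simp
qed


lemma fib_iff: "x \<in> fib \<phi> E i \<longleftrightarrow> x \<in> E \<and> \<phi> x = i"
  by (simp add: fib_def)

lemma fsB_gen_simps: "fst (fsB_gen n) = {- int n..int n}" "v \<in> {- int n..int n} \<Longrightarrow> snd (fsB_gen n) v = - v"
  by (auto simp: fsB_gen_def)

lemma fsB_gen_obj: "fsB_obj (fsB_gen n)"
  by (auto simp: fsB_obj_def fsB_gen_def Let_def)

lemma fsB_homD:
  assumes "f \<in> fsB_hom Es Fs"
  shows "f \<in> fst Es \<rightarrow>\<^sub>E fst Fs" "f ` fst Es = fst Fs" "\<And>x. x \<in> fst Es \<Longrightarrow> f (snd Es x) = snd Fs (f x)"
    "\<And>x. x \<in> fst Es \<Longrightarrow> f x \<in> fst Fs" "\<And>x. x \<notin> fst Es \<Longrightarrow> f x = undefined"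
  using assms by (auto simp: fsB_hom_def PiE_iff extensional_def)

lemma fsB_homI:
  assumes "\<And>x. x \<in> fst Es \<Longrightarrow> f x \<in> fst Fs" "\<And>x. x \<notin> fst Es \<Longrightarrow> f x = undefined"
    "\<And>y. y \<in> fst Fs \<Longrightarrow> \<exists>x\<in>fst Es. f x = y" "\<And>x. x \<in> fst Es \<Longrightarrow> f (snd Es x) = snd Fs (f x)"
  shows "f \<in> fsB_hom Es Fs"
  using assms unfolding fsB_hom_def by (auto simp: PiE_iff extensional_def image_def) (metis)

lemma fsA_homD:
  assumes "f \<in> fsA_hom X Y"
  shows "f \<in> X \<rightarrow>\<^sub>E Y" "f ` X = Y" "\<And>x. x \<in> X \<Longrightarrow> f x \<in> Y" "\<And>x. x \<notin> X \<Longrightarrow> f x = undefined"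
  using assms by (auto simp: fsA_hom_def PiE_iff extensional_def)

lemma fsA_homI:
  assumes "\<And>x. x \<in> X \<Longrightarrow> f x \<in> Y" "\<And>x. x \<notin> X \<Longrightarrow> f x = undefined"
    "\<And>y. y \<in> Y \<Longrightarrow> \<exists>x\<in>X. f x = y"
  shows "f \<in> fsA_hom X Y"
  using assms unfolding fsA_hom_def by (auto simp: PiE_iff extensional_def image_def) (metis)

lemma fsB_objD:
  assumes "fsB_obj Es"
  shows "finite (fst Es)" "0 \<in> fst Es" "\<And>x. x \<in> fst Es \<Longrightarrow> snd Es x \<in> fst Es"
    "\<And>x. x \<in> fst Es \<Longrightarrow> snd Es (snd Es x) = x" "\<And>x. x \<in> fst Es \<Longrightarrow> snd Es x = x \<longleftrightarrow> x = 0"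
    "\<And>x. x \<notin> fst Es \<Longrightarrow> snd Es x = undefined"
  using assms by (auto simp: fsB_obj_def Let_def PiE_iff extensional_def)

lemma hom_gen_neg:
  assumes "\<phi> \<in> fsB_hom Es (fsB_gen p)" "x \<in> fst Es"
  shows "\<phi> (snd Es x) = - \<phi> x"
proof -
  have "\<phi> x \<in> {- int p..int p}" using fsB_homD(4)[OF assms(1,2)] by (simp add: fsB_gen_simps)
  then show ?thesis using fsB_homD(3)[OF assms] by (simp add: fsB_gen_simps)
qed

lemma hom_gen_range:
  assumes "\<phi> \<in> fsB_hom Es (fsB_gen p)" "x \<in> fst Es"
  shows "\<bar>\<phi> x\<bar> \<le> int p"
  using fsB_homD(4)[OF assms] by (auto simp: fsB_gen_simps)

lemma hom_gen_surj:
  assumes "\<phi> \<in> fsB_hom Es (fsB_gen p)" "\<bar>v\<bar> \<le> int p"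
  shows "\<exists>x\<in>fst Es. \<phi> x = v"
proof -
  have "v \<in> fst (fsB_gen p)" using assms(2) by (auto simp: fsB_gen_simps)
  then show ?thesis using fsB_homD(2)[OF assms(1)] by (metis imageE)
qed

lemma hom_gen_0:
  assumes "fsB_obj Es" "\<phi> \<in> fsB_hom Es (fsB_gen p)"
  shows "\<phi> 0 = 0"
  using hom_gen_neg[OF assms(2) fsB_objD(2)[OF assms(1)]] fsB_objD(5)[OF assms(1) fsB_objD(2)[OF assms(1)]]
  by simp

lemma fibB_simps: "fst (fibB \<phi> Es) = fib \<phi> (fst Es) 0" "snd (fibB \<phi> Es) = restrict (snd Es) (fib \<phi> (fst Es) 0)"
  by (simp_all add: fibB_def)

lemma fibB_obj:
  assumes "fsB_obj Es" "\<phi> \<in> fsB_hom Es (fsB_gen p)"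
  shows "fsB_obj (fibB \<phi> Es)"
proof -
  note o = fsB_objD[OF assms(1)]
  have "finite (fib \<phi> (fst Es) 0)" using o(1) by (simp add: fib_def)
  moreover have "0 \<in> fib \<phi> (fst Es) 0" using o(2) hom_gen_0[OF assms] by (simp add: fib_iff)
  moreover have "\<And>x. x \<in> fib \<phi> (fst Es) 0 \<Longrightarrow> snd Es x \<in> fib \<phi> (fst Es) 0"
    using o(3) hom_gen_neg[OF assms(2)] by (auto simp: fib_iff)
  ultimately show ?thesis unfolding fsB_obj_def Let_def fibB_simps
    using o by (auto simp: PiE_iff extensional_def fib_iff)
qed

lemma fsA_gen_obj: "m \<ge> 1 \<Longrightarrow> fsA_obj (fsA_gen m)"
  by (auto simp: fsA_obj_def fsA_gen_def)

lemma fib_obj: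
  assumes "fsB_obj Es" "\<phi> \<in> fsB_hom Es (fsB_gen p)" "1 \<le> i" "i \<le> int p"
  shows "fsA_obj (fib \<phi> (fst Es) i)"
proof -
  obtain x where "x \<in> fst Es" "\<phi> x = i" using hom_gen_surj[OF assms(2), of i] assms(3,4) by auto
  then show ?thesis using fsB_objD(1)[OF assms(1)] by (auto simp: fsA_obj_def fib_def)
qed


definition enc :: "(nat \<Rightarrow> nat) \<Rightarrow> fsB_ob \<Rightarrow> (int \<Rightarrow> int) \<Rightarrow> (int \<Rightarrow> int) \<Rightarrow> (int \<Rightarrow> int) list \<Rightarrow> (int \<Rightarrow> int)" where
  "enc A Es \<phi> f0 fs = restrict (\<lambda>x. if \<phi> x = 0 then f0 x
      else if \<phi> x > 0 then int (off A (nat (\<phi> x))) + (fs ! (nat (\<phi> x) - 1)) x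
      else - (int (off A (nat (- \<phi> x))) + (fs ! (nat (- \<phi> x) - 1)) (snd Es x))) (fst Es)"

definition validraw :: "(nat \<Rightarrow> nat) \<Rightarrow> nat \<Rightarrow> fsB_ob \<Rightarrow> (int \<Rightarrow> int) \<Rightarrow> (int \<Rightarrow> int) \<Rightarrow> (int \<Rightarrow> int) list \<Rightarrow> bool" where
  "validraw A p Es \<phi> f0 fs \<longleftrightarrow> \<phi> \<in> fsB_hom Es (fsB_gen p) \<and> f0 \<in> fsB_hom (fibB \<phi> Es) (fsB_gen (A 0)) \<and>
     length fs = p \<and> (\<forall>i<p. fs ! i \<in> fsA_hom (fib \<phi> (fst Es) (int i + 1)) (fsA_gen (A (Suc i))))"

lemma enc_pos_val:
  assumes v: "validraw A p Es \<phi> f0 fs" and x: "x \<in> fst Es" and m: "\<phi> x = int m" "m \<ge> 1"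
  shows "m \<le> p" "enc A Es \<phi> f0 fs x = int (off A m) + (fs ! (m - 1)) x"
    "int (off A m) < enc A Es \<phi> f0 fs x" "enc A Es \<phi> f0 fs x \<le> int (off A (Suc m))"
proof -
  have ph: "\<phi> \<in> fsB_hom Es (fsB_gen p)" using v by (simp add: validraw_def)
  show mp: "m \<le> p" using hom_gen_range[OF ph x] m by simp
  show e: "enc A Es \<phi> f0 fs x = int (off A m) + (fs ! (m - 1)) x"
    using x m by (simp add: enc_def)
  have "x \<in> fib \<phi> (fst Es) (int (m - 1) + 1)" using x m by (simp add: fib_iff)
  moreover have "fs ! (m - 1) \<in> fsA_hom (fib \<phi> (fst Es) (int (m - 1) + 1)) (fsA_gen (A (Suc (m - 1))))"
  proof -
    have all: "\<forall>i<p. fs ! i \<in> fsA_hom (fib \<phi> (fst Es) (int i + 1)) (fsA_gen (A (Suc i)))"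
      using v by (simp add: validraw_def)
    have "m - 1 < p" using mp m(2) by simp
    then show ?thesis using all by blast
  qed
  ultimately have "(fs ! (m - 1)) x \<in> fsA_gen (A (Suc (m - 1)))" by (rule fsA_homD(3)[rotated])
  then have "1 \<le> (fs ! (m - 1)) x" "(fs ! (m - 1)) x \<le> int (A m)" using m(2) by (auto simp: fsA_gen_def)
  then show "int (off A m) < enc A Es \<phi> f0 fs x" "enc A Es \<phi> f0 fs x \<le> int (off A (Suc m))"
    unfolding e off_Suc by auto
qed

lemma enc_zero_val:
  assumes v: "validraw A p Es \<phi> f0 fs" and x: "x \<in> fst Es" and m: "\<phi> x = 0"
  shows "enc A Es \<phi> f0 fs x = f0 x" "\<bar>enc A Es \<phi> f0 fs x\<bar> \<le> int (off A 1)"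
proof -
  show e: "enc A Es \<phi> f0 fs x = f0 x" using x m by (simp add: enc_def)
  have "x \<in> fst (fibB \<phi> Es)" using x m by (simp add: fibB_simps fib_iff)
  moreover have f0h: "f0 \<in> fsB_hom (fibB \<phi> Es) (fsB_gen (A 0))" using v by (simp add: validraw_def)
  ultimately have "f0 x \<in> fst (fsB_gen (A 0))" using fsB_homD(4) by blast
  then show "\<bar>enc A Es \<phi> f0 fs x\<bar> \<le> int (off A 1)" unfolding e off_1 by (auto simp: fsB_gen_simps)
qed

lemma enc_neg_eq:
  assumes o: "fsB_obj Es" and v: "validraw A p Es \<phi> f0 fs" and x: "x \<in> fst Es"
  shows "enc A Es \<phi> f0 fs (snd Es x) = - enc A Es \<phi> f0 fs x"
proof -
  have ph: "\<phi> \<in> fsB_hom Es (fsB_gen p)" using v by (simp add: validraw_def)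
  note oo = fsB_objD[OF o]
  have sx: "snd Es x \<in> fst Es" using oo(3) x .
  have n: "\<phi> (snd Es x) = - \<phi> x" using hom_gen_neg[OF ph x] .
  consider "\<phi> x = 0" | "\<phi> x > 0" | "\<phi> x < 0" by linarith
  then show ?thesis
  proof cases
    case 1
    have xf: "x \<in> fst (fibB \<phi> Es)" using x 1 by (simp add: fibB_simps fib_iff)
    have f0h: "f0 \<in> fsB_hom (fibB \<phi> Es) (fsB_gen (A 0))" using v by (simp add: validraw_def)
    have "f0 (snd (fibB \<phi> Es) x) = snd (fsB_gen (A 0)) (f0 x)" using fsB_homD(3)[OF f0h xf] .
    moreover have "f0 x \<in> fst (fsB_gen (A 0))" using fsB_homD(4)[OF f0h xf] .
    ultimately have "f0 (snd Es x) = - f0 x" using xf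
      by (simp add: fibB_simps fsB_gen_simps)
    then show ?thesis using 1 n x sx by (simp add: enc_def)
  next
    case 2
    then show ?thesis using n x sx oo(4)[OF x] by (simp add: enc_def)
  next
    case 3
    then show ?thesis using n x sx oo(4)[OF x] by (simp add: enc_def)
  qed
qed

lemma enc_val_range:
  assumes o: "fsB_obj Es" and v: "validraw A p Es \<phi> f0 fs" and x: "x \<in> fst Es"
  shows "\<bar>enc A Es \<phi> f0 fs x\<bar> \<le> int (off A (Suc p))"
proof -
  have ph: "\<phi> \<in> fsB_hom Es (fsB_gen p)" using v by (simp add: validraw_def)
  have pos: "\<bar>enc A Es \<phi> f0 fs y\<bar> \<le> int (off A (Suc p))" if y: "y \<in> fst Es" "\<phi> y \<ge> 0" for y
  proof (cases "\<phi> y = 0")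
    case True
    then show ?thesis using enc_zero_val(2)[OF v y(1) True] off_mono[of 1 "Suc p" A] by simp
  next
    case False
    then obtain m where m: "\<phi> y = int m" "m \<ge> 1" using y(2)
      by (metis nonneg_int_cases of_nat_0 less_one not_le)
    note e = enc_pos_val[OF v y(1) m]
    then show ?thesis using off_mono[of "Suc m" "Suc p" A] by simp
  qed
  show ?thesis
  proof (cases "\<phi> x \<ge> 0")
    case True then show ?thesis using pos x by simp
  next
    case False
    have sx: "snd Es x \<in> fst Es" using fsB_objD(3)[OF o x] .
    have "\<phi> (snd Es x) \<ge> 0" using hom_gen_neg[OF ph x] False by simp
    then have "\<bar>enc A Es \<phi> f0 fs (snd Es x)\<bar> \<le> int (off A (Suc p))" using pos sx by simp
    then show ?thesis using enc_neg_eq[OF o v x] by simp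
  qed
qed


lemma enc_surj_pos:
  assumes v: "validraw A p Es \<phi> f0 fs" and m: "1 \<le> m" "m \<le> p" "int (off A m) < y" "y \<le> int (off A (Suc m))"
  shows "\<exists>x\<in>fst Es. enc A Es \<phi> f0 fs x = y"
proof -
  have all: "\<forall>i<p. fs ! i \<in> fsA_hom (fib \<phi> (fst Es) (int i + 1)) (fsA_gen (A (Suc i)))"
    using v by (simp add: validraw_def)
  have "m - 1 < p" using m by simp
  then have fh: "fs ! (m - 1) \<in> fsA_hom (fib \<phi> (fst Es) (int (m - 1) + 1)) (fsA_gen (A (Suc (m - 1))))"
    using all by blast
  have "y - int (off A m) \<in> fsA_gen (A (Suc (m - 1)))" using m by (auto simp: fsA_gen_def off_Suc)
  then obtain x where x: "x \<in> fib \<phi> (fst Es) (int (m - 1) + 1)" "(fs ! (m - 1)) x = y - int (off A m)"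
    using fsA_homD(2)[OF fh] by (metis imageE)
  have xe: "x \<in> fst Es" and px: "\<phi> x = int m" using x(1) m(1) by (auto simp: fib_iff)
  have "enc A Es \<phi> f0 fs x = y" using enc_pos_val(2)[OF v xe px m(1)] x(2) by simp
  then show ?thesis using xe by blast
qed

lemma enc_hom:
  assumes o: "fsB_obj Es" and v: "validraw A p Es \<phi> f0 fs"
  shows "enc A Es \<phi> f0 fs \<in> fsB_hom Es (fsB_gen (off A (Suc p)))"
proof (rule fsB_homI)
  fix x assume x: "x \<in> fst Es"
  show "enc A Es \<phi> f0 fs x \<in> fst (fsB_gen (off A (Suc p)))"
    using enc_val_range[OF o v x] by (auto simp: fsB_gen_simps)
  show "enc A Es \<phi> f0 fs (snd Es x) = snd (fsB_gen (off A (Suc p))) (enc A Es \<phi> f0 fs x)"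
  proof -
    have "enc A Es \<phi> f0 fs x \<in> {- int (off A (Suc p))..int (off A (Suc p))}"
      using enc_val_range[OF o v x] by auto
    then show ?thesis using enc_neg_eq[OF o v x] fsB_gen_simps(2) by metis
  qed
next
  fix x assume "x \<notin> fst Es" then show "enc A Es \<phi> f0 fs x = undefined" by (simp add: enc_def)
next
  fix y assume "y \<in> fst (fsB_gen (off A (Suc p)))"
  then have y: "\<bar>y\<bar> \<le> int (off A (Suc p))" by (auto simp: fsB_gen_simps)
  show "\<exists>x\<in>fst Es. enc A Es \<phi> f0 fs x = y"
  proof (cases "\<bar>y\<bar> \<le> int (off A 1)")
    case True
    have f0h: "f0 \<in> fsB_hom (fibB \<phi> Es) (fsB_gen (A 0))" using v by (simp add: validraw_def)
    have "y \<in> fst (fsB_gen (A 0))" using True off_1[of A] by (auto simp: fsB_gen_simps)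
    then obtain x where x: "x \<in> fib \<phi> (fst Es) 0" "f0 x = y"
      using fsB_homD(2)[OF f0h] by (metis fibB_simps(1) imageE)
    then have "x \<in> fst Es" "\<phi> x = 0" by (auto simp: fib_iff)
    then show ?thesis using enc_zero_val(1)[OF v] x(2) by metis
  next
    case False
    then obtain m where m: "1 \<le> m" "m \<le> p" "int (off A m) < \<bar>y\<bar>" "\<bar>y\<bar> \<le> int (off A (Suc m))"
      using cover[OF y] by blast
    show ?thesis
    proof (cases "y > 0")
      case True
      then show ?thesis using enc_surj_pos[OF v m(1,2)] m(3,4) by simp
    next
      case False
      then obtain x where x: "x \<in> fst Es" "enc A Es \<phi> f0 fs x = - y"
        using enc_surj_pos[OF v m(1,2), of "- y"] m(3,4) by auto
      then have "enc A Es \<phi> f0 fs (snd Es x) = y" using enc_neg_eq[OF o v x(1)] by simp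
      then show ?thesis using fsB_objD(3)[OF o x(1)] by blast
    qed
  qed
qed


definition decphi :: "(nat \<Rightarrow> nat) \<Rightarrow> nat \<Rightarrow> fsB_ob \<Rightarrow> (int \<Rightarrow> int) \<Rightarrow> (int \<Rightarrow> int)" where
  "decphi A p Es g = restrict (\<lambda>x. cl A p (g x)) (fst Es)"
definition dec0 :: "(nat \<Rightarrow> nat) \<Rightarrow> nat \<Rightarrow> fsB_ob \<Rightarrow> (int \<Rightarrow> int) \<Rightarrow> (int \<Rightarrow> int)" where
  "dec0 A p Es g = restrict g (fib (decphi A p Es g) (fst Es) 0)"
definition decs :: "(nat \<Rightarrow> nat) \<Rightarrow> nat \<Rightarrow> fsB_ob \<Rightarrow> (int \<Rightarrow> int) \<Rightarrow> (int \<Rightarrow> int) list" where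
  "decs A p Es g = map (\<lambda>i. restrict (\<lambda>x. g x - int (off A (Suc i))) (fib (decphi A p Es g) (fst Es) (int i + 1))) [0..<p]"

lemma cl_enc:
  assumes o: "fsB_obj Es" and v: "validraw A p Es \<phi> f0 fs" and x: "x \<in> fst Es"
  shows "cl A p (enc A Es \<phi> f0 fs x) = \<phi> x"
proof -
  have ph: "\<phi> \<in> fsB_hom Es (fsB_gen p)" using v by (simp add: validraw_def)
  have pos: "cl A p (enc A Es \<phi> f0 fs y) = \<phi> y" if y: "y \<in> fst Es" "\<phi> y \<ge> 0" for y
  proof (cases "\<phi> y = 0")
    case True
    then show ?thesis using enc_zero_val(2)[OF v y(1) True] cl_zero by simp
  next
    case False
    then obtain m where m: "\<phi> y = int m" "m \<ge> 1" using y(2)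
      by (metis nonneg_int_cases of_nat_0 less_one not_le)
    note e = enc_pos_val[OF v y(1) m]
    have "enc A Es \<phi> f0 fs y > 0" using e(3) by linarith
    then show ?thesis using cl_block[OF m(2) e(1), where w = "enc A Es \<phi> f0 fs y"] e(3,4) m(1) by simp
  qed
  show ?thesis
  proof (cases "\<phi> x \<ge> 0")
    case True then show ?thesis using pos x by simp
  next
    case False
    have sx: "snd Es x \<in> fst Es" using fsB_objD(3)[OF o x] .
    have n: "\<phi> (snd Es x) = - \<phi> x" using hom_gen_neg[OF ph x] .
    then have "cl A p (enc A Es \<phi> f0 fs (snd Es x)) = - \<phi> x" using pos sx False by simp
    then show ?thesis using enc_neg_eq[OF o v x] cl_neg by (metis minus_minus)
  qed
qed

lemma dec_enc:
  assumes o: "fsB_obj Es" and v: "validraw A p Es \<phi> f0 fs"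
  shows "decphi A p Es (enc A Es \<phi> f0 fs) = \<phi>" "dec0 A p Es (enc A Es \<phi> f0 fs) = f0"
    "decs A p Es (enc A Es \<phi> f0 fs) = fs"
proof -
  have ph: "\<phi> \<in> fsB_hom Es (fsB_gen p)" using v by (simp add: validraw_def)
  show dp: "decphi A p Es (enc A Es \<phi> f0 fs) = \<phi>"
  proof (rule ext)
    fix x show "decphi A p Es (enc A Es \<phi> f0 fs) x = \<phi> x"
      using cl_enc[OF o v] fsB_homD(5)[OF ph] by (cases "x \<in> fst Es") (auto simp: decphi_def)
  qed
  have f0h: "f0 \<in> fsB_hom (fibB \<phi> Es) (fsB_gen (A 0))" using v by (simp add: validraw_def)
  show "dec0 A p Es (enc A Es \<phi> f0 fs) = f0"
  proof (rule ext)
    fix x show "dec0 A p Es (enc A Es \<phi> f0 fs) x = f0 x"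
    proof (cases "x \<in> fib \<phi> (fst Es) 0")
      case True
      then show ?thesis using enc_zero_val(1)[OF v] unfolding dec0_def dp by (auto simp: fib_iff)
    next
      case False
      then show ?thesis using fsB_homD(5)[OF f0h] unfolding dec0_def dp by (simp add: fibB_simps)
    qed
  qed
  have len: "length fs = p" using v by (simp add: validraw_def)
  have all: "\<forall>i<p. fs ! i \<in> fsA_hom (fib \<phi> (fst Es) (int i + 1)) (fsA_gen (A (Suc i)))"
    using v by (simp add: validraw_def)
  show "decs A p Es (enc A Es \<phi> f0 fs) = fs"
  proof (rule nth_equalityI)
    show "length (decs A p Es (enc A Es \<phi> f0 fs)) = length fs" using len by (simp add: decs_def)
  next
    fix i assume "i < length (decs A p Es (enc A Es \<phi> f0 fs))"
    then have i: "i < p" by (simp add: decs_def)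
    have fh: "fs ! i \<in> fsA_hom (fib \<phi> (fst Es) (int i + 1)) (fsA_gen (A (Suc i)))" using all i by blast
    show "decs A p Es (enc A Es \<phi> f0 fs) ! i = fs ! i"
    proof (rule ext)
      fix x
      show "(decs A p Es (enc A Es \<phi> f0 fs) ! i) x = (fs ! i) x"
      proof (cases "x \<in> fib \<phi> (fst Es) (int i + 1)")
        case True
        then have xe: "x \<in> fst Es" and px: "\<phi> x = int (Suc i)" by (auto simp: fib_iff)
        have "enc A Es \<phi> f0 fs x = int (off A (Suc i)) + (fs ! (Suc i - 1)) x"
          using enc_pos_val(2)[OF v xe px] by simp
        then show ?thesis using True i unfolding decs_def dp by simp
      next
        case False
        then show ?thesis using fsA_homD(4)[OF fh] i unfolding decs_def dp by simp
      qed
    qed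
  qed
qed


lemma gen_hom_facts:
  assumes o: "fsB_obj Es" and g: "g \<in> fsB_hom Es (fsB_gen n)"
  shows "\<And>x. x \<in> fst Es \<Longrightarrow> \<bar>g x\<bar> \<le> int n"
    "\<And>x. x \<in> fst Es \<Longrightarrow> g (snd Es x) = - g x"
    "\<And>y. \<bar>y\<bar> \<le> int n \<Longrightarrow> \<exists>x\<in>fst Es. g x = y"
  using hom_gen_range[OF g] hom_gen_neg[OF g] hom_gen_surj[OF g] by auto

lemma dec_valid:
  assumes o: "fsB_obj Es" and g: "g \<in> fsB_hom Es (fsB_gen (off A (Suc p)))"
    and Apos: "\<forall>m. 1 \<le> m \<and> m \<le> p \<longrightarrow> A m \<ge> 1"
  shows "validraw A p Es (decphi A p Es g) (dec0 A p Es g) (decs A p Es g)"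
proof -
  note gf = gen_hom_facts[OF o g]
  note oo = fsB_objD[OF o]
  define \<phi> where "\<phi> = decphi A p Es g"
  have phx: "\<And>x. x \<in> fst Es \<Longrightarrow> \<phi> x = cl A p (g x)" by (simp add: \<phi>_def decphi_def)
  have ph: "\<phi> \<in> fsB_hom Es (fsB_gen p)"
  proof (rule fsB_homI)
    fix x assume x: "x \<in> fst Es"
    show "\<phi> x \<in> fst (fsB_gen p)" using cl_range[of A p "g x"] phx[OF x] by (auto simp: fsB_gen_simps)
    have "\<phi> (snd Es x) = - \<phi> x" using phx[OF x] phx[OF oo(3)[OF x]] gf(2)[OF x] cl_neg by simp
    moreover have "\<phi> x \<in> {- int p..int p}" using cl_range[of A p "g x"] phx[OF x] by auto
    ultimately show "\<phi> (snd Es x) = snd (fsB_gen p) (\<phi> x)" using fsB_gen_simps(2) by metis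
  next
    fix x assume "x \<notin> fst Es" then show "\<phi> x = undefined" by (simp add: \<phi>_def decphi_def)
  next
    fix v assume "v \<in> fst (fsB_gen p)"
    then have v: "\<bar>v\<bar> \<le> int p" by (auto simp: fsB_gen_simps)
    have blk: "\<exists>x\<in>fst Es. \<phi> x = int m \<and> g x > 0" if m: "1 \<le> m" "m \<le> p" for m
    proof -
      have "A m \<ge> 1" using Apos m by blast
      then have w: "int (off A m) < int (off A m) + 1" "int (off A m) + 1 \<le> int (off A (Suc m))"
        by (auto simp: off_Suc)
      have "\<bar>int (off A m) + 1\<bar> \<le> int (off A (Suc p))" using w off_mono[of "Suc m" "Suc p" A] m by auto
      then obtain x where x: "x \<in> fst Es" "g x = int (off A m) + 1" using gf(3) by blast
      have "cl A p (g x) = int m" using cl_block[OF m, where w = "g x"] w x(2) by simp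
      moreover have "g x > 0" using x(2) by simp
      ultimately show ?thesis using x(1) phx[OF x(1)] by auto
    qed
    show "\<exists>x\<in>fst Es. \<phi> x = v"
    proof (cases "v = 0")
      case True
      obtain x where x: "x \<in> fst Es" "g x = 0" using gf(3)[of 0] by auto
      then have "\<phi> x = 0" using phx[OF x(1)] cl_zero[of 0 A p] by simp
      then show ?thesis using True x(1) by blast
    next
      case False
      show ?thesis
      proof (cases "v > 0")
        case True
        define m where "m = nat v"
        have "v = int m" "1 \<le> m" "m \<le> p" using v True by (auto simp: m_def)
        then show ?thesis using blk by blast
      next
        case False
        define m where "m = nat (- v)"
        have m: "v = - int m" "1 \<le> m" "m \<le> p" using v False \<open>v \<noteq> 0\<close> by (auto simp: m_def)
        obtain x where x: "x \<in> fst Es" "\<phi> x = int m" using blk[OF m(2,3)] by blast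
        have "\<phi> (snd Es x) = - \<phi> x" using phx[OF x(1)] phx[OF oo(3)[OF x(1)]] gf(2)[OF x(1)] cl_neg by simp
        then show ?thesis using x m(1) oo(3)[OF x(1)] by auto
      qed
    qed
  qed
  have f0: "dec0 A p Es g \<in> fsB_hom (fibB \<phi> Es) (fsB_gen (A 0))"
  proof (rule fsB_homI)
    fix x assume "x \<in> fst (fibB \<phi> Es)"
    then have x: "x \<in> fst Es" "\<phi> x = 0" by (auto simp: fibB_simps fib_iff)
    then have "\<bar>g x\<bar> \<le> int (off A 1)" using cl_eq0_iff[OF gf(1)[OF x(1)]] phx by auto
    then show "dec0 A p Es g x \<in> fst (fsB_gen (A 0))"
      using x off_1[of A] by (auto simp: dec0_def \<phi>_def[symmetric] fib_iff fsB_gen_simps)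
    have sx: "snd Es x \<in> fst Es" "\<phi> (snd Es x) = 0"
      using oo(3)[OF x(1)] phx[OF x(1)] phx[OF oo(3)[OF x(1)]] gf(2)[OF x(1)] cl_neg x(2) by auto
    have "dec0 A p Es g (snd (fibB \<phi> Es) x) = - dec0 A p Es g x"
      using x sx gf(2)[OF x(1)] by (simp add: dec0_def \<phi>_def[symmetric] fibB_simps fib_iff)
    moreover have "dec0 A p Es g x \<in> {- int (A 0)..int (A 0)}"
      using \<open>\<bar>g x\<bar> \<le> int (off A 1)\<close> x off_1[of A] by (auto simp: dec0_def \<phi>_def[symmetric] fib_iff)
    ultimately show "dec0 A p Es g (snd (fibB \<phi> Es) x) = snd (fsB_gen (A 0)) (dec0 A p Es g x)"
      using fsB_gen_simps(2) by metis
  next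
    fix x assume "x \<notin> fst (fibB \<phi> Es)"
    then show "dec0 A p Es g x = undefined" by (simp add: dec0_def \<phi>_def[symmetric] fibB_simps)
  next
    fix y assume "y \<in> fst (fsB_gen (A 0))"
    then have y: "\<bar>y\<bar> \<le> int (off A 1)" using off_1[of A] by (auto simp: fsB_gen_simps)
    then have "\<bar>y\<bar> \<le> int (off A (Suc p))" using off_mono[of 1 "Suc p" A] by simp
    then obtain x where x: "x \<in> fst Es" "g x = y" using gf(3) by blast
    then have "\<phi> x = 0" using phx cl_zero[OF y] by simp
    then show "\<exists>x\<in>fst (fibB \<phi> Es). dec0 A p Es g x = y"
      using x by (auto simp: fibB_simps fib_iff dec0_def \<phi>_def[symmetric])
  qed
  have fs: "decs A p Es g ! i \<in> fsA_hom (fib \<phi> (fst Es) (int i + 1)) (fsA_gen (A (Suc i)))" if i: "i < p" for i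
  proof (rule fsA_homI)
    have e: "decs A p Es g ! i = restrict (\<lambda>x. g x - int (off A (Suc i))) (fib \<phi> (fst Es) (int i + 1))"
      using i by (simp add: decs_def \<phi>_def)
    fix x assume "x \<in> fib \<phi> (fst Es) (int i + 1)"
    then have x: "x \<in> fst Es" "cl A p (g x) = int (Suc i)" using phx by (auto simp: fib_iff)
    then have "int (off A (Suc i)) < g x \<and> g x \<le> int (off A (Suc (Suc i)))"
      using cl_eqpos_iff[OF gf(1)[OF x(1)], of "Suc i"] i by simp
    then show "(decs A p Es g ! i) x \<in> fsA_gen (A (Suc i))"
      using \<open>x \<in> fib \<phi> (fst Es) (int i + 1)\<close> unfolding e by (auto simp: fsA_gen_def off_Suc)
  next
    fix x assume "x \<notin> fib \<phi> (fst Es) (int i + 1)"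
    then show "(decs A p Es g ! i) x = undefined" using i by (simp add: decs_def \<phi>_def)
  next
    fix y assume "y \<in> fsA_gen (A (Suc i))"
    then have y: "1 \<le> y" "y \<le> int (A (Suc i))" by (auto simp: fsA_gen_def)
    define w where "w = int (off A (Suc i)) + y"
    have w: "int (off A (Suc i)) < w" "w \<le> int (off A (Suc (Suc i)))" using y by (auto simp: w_def off_Suc)
    then have "\<bar>w\<bar> \<le> int (off A (Suc p))" using off_mono[of "Suc (Suc i)" "Suc p" A] i by auto
    then obtain x where x: "x \<in> fst Es" "g x = w" using gf(3) by blast
    have "cl A p w = int (Suc i)" using cl_block[of "Suc i" p A w] w i by simp
    then have xf: "x \<in> fib \<phi> (fst Es) (int i + 1)" using x phx by (auto simp: fib_iff)
    then have "(decs A p Es g ! i) x = y"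
      using x i by (simp add: decs_def \<phi>_def[symmetric] w_def)
    then show "\<exists>x\<in>fib \<phi> (fst Es) (int i + 1). (decs A p Es g ! i) x = y"
      using xf by blast
  qed
  show ?thesis unfolding validraw_def \<phi>_def[symmetric] using ph f0 fs by (simp add: decs_def)
qed


lemma enc_dec:
  assumes o: "fsB_obj Es" and g: "g \<in> fsB_hom Es (fsB_gen (off A (Suc p)))"
  shows "enc A Es (decphi A p Es g) (dec0 A p Es g) (decs A p Es g) = g"
proof (rule ext)
  fix x
  note gf = gen_hom_facts[OF o g]
  note oo = fsB_objD[OF o]
  define \<phi> where "\<phi> = decphi A p Es g"
  have phx: "\<And>x. x \<in> fst Es \<Longrightarrow> \<phi> x = cl A p (g x)" by (simp add: \<phi>_def decphi_def)
  show "enc A Es (decphi A p Es g) (dec0 A p Es g) (decs A p Es g) x = g x"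
  proof (cases "x \<in> fst Es")
    case False
    then show ?thesis using fsB_homD(5)[OF g] by (simp add: enc_def)
  next
    case x: True
    consider "cl A p (g x) = 0" | "cl A p (g x) > 0" | "cl A p (g x) < 0" by linarith
    then show ?thesis
    proof cases
      case 1
      then show ?thesis using x phx[OF x] by (simp add: enc_def \<phi>_def[symmetric] dec0_def fib_iff)
    next
      case 2
      define m where "m = nat (cl A p (g x))"
      have m: "cl A p (g x) = int m" "1 \<le> m" "m \<le> p" using 2 cl_range[of A p "g x"] by (auto simp: m_def)
      have xf: "x \<in> fib \<phi> (fst Es) (int (m - 1) + 1)" using x phx[OF x] m by (simp add: fib_iff)
      have ml: "[0..<p] ! (m - 1) = m - 1" using m by simp
      have "decs A p Es g ! (m - 1) = restrict (\<lambda>x. g x - int (off A (Suc (m - 1)))) (fib \<phi> (fst Es) (int (m - 1) + 1))"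
        using m ml unfolding decs_def \<phi>_def by simp
      then have "(decs A p Es g ! (m - 1)) x = g x - int (off A m)" using xf m(2) by simp
      then show ?thesis using x phx[OF x] m by (simp add: enc_def \<phi>_def[symmetric])
    next
      case 3
      define m where "m = nat (- cl A p (g x))"
      have m: "cl A p (g x) = - int m" "1 \<le> m" "m \<le> p" using 3 cl_range[of A p "g x"] by (auto simp: m_def)
      have sx: "snd Es x \<in> fst Es" using oo(3)[OF x] .
      have psx: "\<phi> (snd Es x) = int m" using phx[OF sx] gf(2)[OF x] cl_neg m(1) by simp
      have xf: "snd Es x \<in> fib \<phi> (fst Es) (int (m - 1) + 1)" using sx psx m by (simp add: fib_iff)
      have ml: "[0..<p] ! (m - 1) = m - 1" using m by simp
      have "decs A p Es g ! (m - 1) = restrict (\<lambda>x. g x - int (off A (Suc (m - 1)))) (fib \<phi> (fst Es) (int (m - 1) + 1))"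
        using m ml unfolding decs_def \<phi>_def by simp
      then have "(decs A p Es g ! (m - 1)) (snd Es x) = - g x - int (off A m)" using xf m(2) gf(2)[OF x] by simp
      then show ?thesis using x phx[OF x] m by (simp add: enc_def \<phi>_def[symmetric])
    qed
  qed
qed

lemma dec_comp:
  fixes A :: "nat \<Rightarrow> nat" and p :: nat and g :: "int \<Rightarrow> int"
  assumes psi: "\<psi> \<in> fsB_hom Es' Es"
  defines "\<chi> \<equiv> compose (fst Es') (decphi A p Es g) \<psi>"
  shows "decphi A p Es' (compose (fst Es') g \<psi>) = \<chi>"
    "dec0 A p Es' (compose (fst Es') g \<psi>) = compose (fib \<chi> (fst Es') 0) (dec0 A p Es g) \<psi>"
    "decs A p Es' (compose (fst Es') g \<psi>) = map (\<lambda>i. compose (fib \<chi> (fst Es') (int i + 1)) (decs A p Es g ! i) \<psi>) [0..<p]"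
proof -
  have px: "\<And>x. x \<in> fst Es' \<Longrightarrow> \<psi> x \<in> fst Es" using fsB_homD(4)[OF psi] .
  show d: "decphi A p Es' (compose (fst Es') g \<psi>) = \<chi>"
    unfolding \<chi>_def by (rule ext) (simp add: decphi_def compose_def px)
  have fibm: "\<And>x i. x \<in> fib \<chi> (fst Es') i \<Longrightarrow> \<psi> x \<in> fib (decphi A p Es g) (fst Es) i"
    using px by (auto simp: fib_iff \<chi>_def compose_def)
  show "dec0 A p Es' (compose (fst Es') g \<psi>) = compose (fib \<chi> (fst Es') 0) (dec0 A p Es g) \<psi>"
    unfolding dec0_def d
  proof (rule ext)
    fix x show "restrict (compose (fst Es') g \<psi>) (fib \<chi> (fst Es') 0) x =
       compose (fib \<chi> (fst Es') 0) (restrict g (fib (decphi A p Es g) (fst Es) 0)) \<psi> x"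
      using fibm[of x 0] by (cases "x \<in> fib \<chi> (fst Es') 0") (auto simp: compose_def fib_iff)
  qed
  show "decs A p Es' (compose (fst Es') g \<psi>) = map (\<lambda>i. compose (fib \<chi> (fst Es') (int i + 1)) (decs A p Es g ! i) \<psi>) [0..<p]"
  proof (rule nth_equalityI)
    fix i assume "i < length (decs A p Es' (compose (fst Es') g \<psi>))"
    then have i: "i < p" by (simp add: decs_def)
    show "decs A p Es' (compose (fst Es') g \<psi>) ! i = map (\<lambda>i. compose (fib \<chi> (fst Es') (int i + 1)) (decs A p Es g ! i) \<psi>) [0..<p] ! i"
    proof (rule ext)
      fix x
      show "(decs A p Es' (compose (fst Es') g \<psi>) ! i) x = (map (\<lambda>i. compose (fib \<chi> (fst Es') (int i + 1)) (decs A p Es g ! i) \<psi>) [0..<p] ! i) x"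
        using fibm[of x "int i + 1"] i unfolding decs_def d
        by (cases "x \<in> fib \<chi> (fst Es') (int i + 1)") (auto simp: compose_def fib_iff)
    qed
  qed (simp add: decs_def)
qed


definition el :: "('x \<Rightarrow> complex) list \<Rightarrow> 'x list \<Rightarrow> complex" where
  "el ws xs = (if length xs = length ws then (\<Prod>i<length ws. (ws ! i) (xs ! i)) else 0)"

lemma el_simps[simp]: "el [] [] = 1" "el (w#ws) [] = 0" "el [] (x#xs) = 0"
  by (simp_all add: el_def)
lemma el_Cons[simp]: "el (w#ws) (x#xs) = w x * el ws xs"
  unfolding el_def length_Cons prod.lessThan_Suc_shift by simp

lemma elem_tensor_el: "elem_tensor v ws (b, xs) = v b * el ws xs"
  by (simp add: elem_tensor_def el_def)

fun appl :: "(('x \<Rightarrow> complex) \<Rightarrow> ('y \<Rightarrow> complex)) list \<Rightarrow> ('x list \<Rightarrow> complex) \<Rightarrow> 'y list \<Rightarrow> complex" where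
  "appl [] t ys = (if ys = [] then t [] else 0)"
| "appl (h#hs) t [] = 0"
| "appl (h#hs) t (y#ys) = h (\<lambda>x. appl hs (\<lambda>xs. t (x # xs)) ys) y"

definition hmap :: "(('x \<Rightarrow> complex) \<Rightarrow> ('y \<Rightarrow> complex)) list \<Rightarrow> ('x \<Rightarrow> complex) list \<Rightarrow> ('y \<Rightarrow> complex) list" where
  "hmap hs ws = map (\<lambda>(h,w). h w) (zip hs ws)"

lemma hmap_simps[simp]: "hmap [] ws = []" "hmap (h#hs) (w#ws) = h w # hmap hs ws"
  by (simp_all add: hmap_def)

lemma sum_list_cong': "(\<And>x. x \<in> set L \<Longrightarrow> f x = g x) \<Longrightarrow> (\<Sum>x\<leftarrow>L. f x) = (\<Sum>x\<leftarrow>L. g x)"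
  by (induct L) auto

lemma appl_sum:
  assumes "\<forall>i<length hs. fn_linear_on (V i) (W i) (hs!i) \<and> fn_subspace (V i)"
    and "\<forall>\<tau>\<in>set L. cf \<tau> \<noteq> 0 \<longrightarrow> length (wsf \<tau>) = length hs \<and> (\<forall>i<length hs. wsf \<tau> ! i \<in> V i)"
  shows "appl hs (\<lambda>xs. \<Sum>\<tau>\<leftarrow>L. cf \<tau> * el (wsf \<tau>) xs) = (\<lambda>ys. \<Sum>\<tau>\<leftarrow>L. cf \<tau> * el (hmap hs (wsf \<tau>)) ys)"
  using assms
proof (induction hs arbitrary: V W cf wsf)
  case Nil
  show ?case
  proof (rule ext)
    fix ys
    show "appl [] (\<lambda>xs. \<Sum>\<tau>\<leftarrow>L. cf \<tau> * el (wsf \<tau>) xs) ys = (\<Sum>\<tau>\<leftarrow>L. cf \<tau> * el (hmap [] (wsf \<tau>)) ys)"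
    proof (cases ys)
      case Nil
      have "(\<Sum>\<tau>\<leftarrow>L. cf \<tau> * el (wsf \<tau>) []) = (\<Sum>\<tau>\<leftarrow>L. cf \<tau> * el (hmap [] (wsf \<tau>)) [])"
        by (rule sum_list_cong') (use Nil.prems(2) in auto)
      then show ?thesis using Nil by simp
    next
      case (Cons y ys')
      have "(\<Sum>\<tau>\<leftarrow>L. cf \<tau> * el (hmap [] (wsf \<tau>)) ys) = (\<Sum>\<tau>\<leftarrow>L. 0)"
        by (rule sum_list_cong') (simp add: Cons)
      then show ?thesis using Cons by simp
    qed
  qed
next
  case (Cons h hs)
  note prems = Cons.prems
  show ?case
  proof (rule ext)
    fix ys
    show "appl (h # hs) (\<lambda>xs. \<Sum>\<tau>\<leftarrow>L. cf \<tau> * el (wsf \<tau>) xs) ys = (\<Sum>\<tau>\<leftarrow>L. cf \<tau> * el (hmap (h # hs) (wsf \<tau>)) ys)"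
    proof (cases ys)
      case Nil
      have "(\<Sum>\<tau>\<leftarrow>L. cf \<tau> * el (hmap (h # hs) (wsf \<tau>)) ys) = (\<Sum>\<tau>\<leftarrow>L. 0)"
      proof (rule sum_list_cong')
        fix \<tau> assume t: "\<tau> \<in> set L"
        show "cf \<tau> * el (hmap (h # hs) (wsf \<tau>)) ys = 0"
        proof (cases "cf \<tau> = 0")
          case False
          then have "length (wsf \<tau>) = Suc (length hs)" using prems(2) t by auto
          then obtain w ws where "wsf \<tau> = w # ws" by (cases "wsf \<tau>") auto
          then show ?thesis using Nil by simp
        qed simp
      qed
      then show ?thesis using Nil by simp
    next
      case (Cons y ys')
      have inner: "(\<lambda>xs. \<Sum>\<tau>\<leftarrow>L. cf \<tau> * el (wsf \<tau>) (x # xs)) = (\<lambda>xs. \<Sum>\<tau>\<leftarrow>L. (cf \<tau> * hd (wsf \<tau>) x) * el (tl (wsf \<tau>)) xs)" for x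
      proof (rule ext, rule sum_list_cong')
        fix xs \<tau> assume t: "\<tau> \<in> set L"
        show "cf \<tau> * el (wsf \<tau>) (x # xs) = (cf \<tau> * hd (wsf \<tau>) x) * el (tl (wsf \<tau>)) xs"
        proof (cases "cf \<tau> = 0")
          case False
          then have "length (wsf \<tau>) = Suc (length hs)" using prems(2) t by auto
          then obtain w ws where "wsf \<tau> = w # ws" by (cases "wsf \<tau>") auto
          then show ?thesis by simp
        qed simp
      qed
      have IH: "appl hs (\<lambda>xs. \<Sum>\<tau>\<leftarrow>L. (cf \<tau> * hd (wsf \<tau>) x) * el (tl (wsf \<tau>)) xs) =
          (\<lambda>ys. \<Sum>\<tau>\<leftarrow>L. (cf \<tau> * hd (wsf \<tau>) x) * el (hmap hs (tl (wsf \<tau>))) ys)" for x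
      proof (rule Cons.IH[where V = "\<lambda>i. V (Suc i)" and W = "\<lambda>i. W (Suc i)"])
        show "\<forall>i<length hs. fn_linear_on (V (Suc i)) (W (Suc i)) (hs ! i) \<and> fn_subspace (V (Suc i))"
          using prems(1) by auto
        show "\<forall>\<tau>\<in>set L. cf \<tau> * hd (wsf \<tau>) x \<noteq> 0 \<longrightarrow> length (tl (wsf \<tau>)) = length hs \<and> (\<forall>i<length hs. tl (wsf \<tau>) ! i \<in> V (Suc i))"
        proof (intro ballI impI)
          fix \<tau> assume t: "\<tau> \<in> set L" and "cf \<tau> * hd (wsf \<tau>) x \<noteq> 0"
          then have c: "cf \<tau> \<noteq> 0" by auto
          then have l: "length (wsf \<tau>) = Suc (length hs)" and V: "\<forall>i<Suc (length hs). wsf \<tau> ! i \<in> V i"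
            using prems(2) t by auto
          then obtain w ws where "wsf \<tau> = w # ws" by (cases "wsf \<tau>") auto
          then show "length (tl (wsf \<tau>)) = length hs \<and> (\<forall>i<length hs. tl (wsf \<tau>) ! i \<in> V (Suc i))"
            using l V by auto
        qed
      qed
      have hl: "fn_linear_on (V 0) (W 0) h" "fn_subspace (V 0)" using prems(1) by auto
      have "h (\<lambda>x. \<Sum>\<tau>\<leftarrow>L. (cf \<tau> * el (hmap hs (tl (wsf \<tau>))) ys') * hd (wsf \<tau>) x) =
            (\<lambda>a. \<Sum>\<tau>\<leftarrow>L. (cf \<tau> * el (hmap hs (tl (wsf \<tau>))) ys') * h (hd (wsf \<tau>)) a)"
      proof (rule conjunct2[OF lin_list[OF hl]])
        show "\<forall>\<tau>\<in>set L. cf \<tau> * el (hmap hs (tl (wsf \<tau>))) ys' \<noteq> 0 \<longrightarrow> hd (wsf \<tau>) \<in> V 0"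
        proof (intro ballI impI)
          fix \<tau> assume t: "\<tau> \<in> set L" and "cf \<tau> * el (hmap hs (tl (wsf \<tau>))) ys' \<noteq> 0"
          then have c: "cf \<tau> \<noteq> 0" by auto
          then have l: "length (wsf \<tau>) = Suc (length hs)" and V: "\<forall>i<Suc (length hs). wsf \<tau> ! i \<in> V i"
            using prems(2) t by auto
          then obtain w ws where "wsf \<tau> = w # ws" by (cases "wsf \<tau>") auto
          then show "hd (wsf \<tau>) \<in> V 0" using V by auto
        qed
      qed
      moreover have "(\<lambda>x. appl hs (\<lambda>xs. \<Sum>\<tau>\<leftarrow>L. cf \<tau> * el (wsf \<tau>) (x # xs)) ys') =
          (\<lambda>x. \<Sum>\<tau>\<leftarrow>L. (cf \<tau> * el (hmap hs (tl (wsf \<tau>))) ys') * hd (wsf \<tau>) x)"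
        unfolding inner IH by (simp add: mult_ac)
      moreover have "(\<Sum>\<tau>\<leftarrow>L. (cf \<tau> * el (hmap hs (tl (wsf \<tau>))) ys') * h (hd (wsf \<tau>)) y) =
            (\<Sum>\<tau>\<leftarrow>L. cf \<tau> * el (hmap (h # hs) (wsf \<tau>)) (y # ys'))"
      proof (rule sum_list_cong')
        fix \<tau> assume t: "\<tau> \<in> set L"
        show "(cf \<tau> * el (hmap hs (tl (wsf \<tau>))) ys') * h (hd (wsf \<tau>)) y = cf \<tau> * el (hmap (h # hs) (wsf \<tau>)) (y # ys')"
        proof (cases "cf \<tau> = 0")
          case False
          then have "length (wsf \<tau>) = Suc (length hs)" using prems(2) t by auto
          then obtain w ws where "wsf \<tau> = w # ws" by (cases "wsf \<tau>") auto
          then show ?thesis by (simp add: mult_ac)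
        qed simp
      qed
      ultimately show ?thesis using Cons by simp
    qed
  qed
qed


definition tval :: "complex \<times> (int \<Rightarrow> int) \<times> ('b \<Rightarrow> complex) \<times> ('a \<Rightarrow> complex) list \<Rightarrow> ((int \<Rightarrow> int) \<times> 'b \<times> 'a list \<Rightarrow> complex)" where
  "tval \<tau> = (case \<tau> of (c, \<phi>, v, ws) \<Rightarrow> (\<lambda>z. c * summand_inj \<phi> (elem_tensor v ws) z))"

definition tsum :: "(complex \<times> (int \<Rightarrow> int) \<times> ('b \<Rightarrow> complex) \<times> ('a \<Rightarrow> complex) list) list \<Rightarrow> ((int \<Rightarrow> int) \<times> 'b \<times> 'a list \<Rightarrow> complex)" where
  "tsum L = (\<lambda>z. \<Sum>\<tau>\<leftarrow>L. tval \<tau> z)"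

definition validterm :: "(fsB_ob \<Rightarrow> ('b \<Rightarrow> complex) set) \<Rightarrow> (nat \<Rightarrow> int set \<Rightarrow> ('a \<Rightarrow> complex) set) \<Rightarrow> nat \<Rightarrow> fsB_ob
   \<Rightarrow> complex \<times> (int \<Rightarrow> int) \<times> ('b \<Rightarrow> complex) \<times> ('a \<Rightarrow> complex) list \<Rightarrow> bool" where
  "validterm V0 Vs p Es \<tau> = (case \<tau> of (c, \<phi>, v, ws) \<Rightarrow> \<phi> \<in> fsB_hom Es (fsB_gen p) \<and> v \<in> V0 (fibB \<phi> Es) \<and>
     length ws = p \<and> (\<forall>i<p. ws ! i \<in> Vs i (fib \<phi> (fst Es) (int i + 1))))"

lemma tval_app: "tval (c, \<phi>, v, ws) (\<phi>', b, xs) = (if \<phi>' = \<phi> then c * (v b * el ws xs) else 0)"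
  by (simp add: tval_def summand_inj_def elem_tensor_el)

lemma tsum_append: "tsum (L1 @ L2) = (\<lambda>z. tsum L1 z + tsum L2 z)"
  by (simp add: tsum_def)

lemma tsum_Cons: "tsum (x # L) z = tval x z + tsum L z"
  by (simp add: tsum_def)

lemma tsum_Nil: "tsum [] = (\<lambda>z. 0)"
  by (simp add: tsum_def)

lemma tsum_scale: "(\<lambda>z. k * tsum L z) = tsum (map (\<lambda>(c, \<phi>, v, ws). (k * c, \<phi>, v, ws)) L)"
  unfolding tsum_def
  by (rule ext) (induct L, auto simp: tval_def distrib_left mult.assoc)

lemma split_zero: "(\<lambda>(b, xs). 0) = (\<lambda>a. 0)"
  by (rule ext) auto

lemma R_ob_subspace: "fn_subspace (R_ob Nob Ms Es)"
proof -
  let ?T = "\<lambda>\<phi>. tensor_space (Nob (fibB \<phi> Es)) (map (\<lambda>i. fst (Ms ! i) (fib \<phi> (fst Es) (int i + 1))) [0..<length Ms])"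
  have sub: "\<And>\<phi>. fn_subspace (?T \<phi>)" unfolding tensor_space_def by (rule fn_span_subspace)
  show ?thesis unfolding fn_subspace_def
  proof (intro conjI ballI allI)
    show "(\<lambda>_. 0) \<in> R_ob Nob Ms Es"
      unfolding R_ob_def using zero_closed[OF sub] by (simp add: split_zero)
  next
    fix x y assume x: "x \<in> R_ob Nob Ms Es" and y: "y \<in> R_ob Nob Ms Es"
    show "(\<lambda>a. x a + y a) \<in> R_ob Nob Ms Es"
      unfolding R_ob_def
    proof (intro CollectI conjI allI impI ballI)
      fix \<phi> b xs assume "x (\<phi>, b, xs) + y (\<phi>, b, xs) \<noteq> 0"
      then have "x (\<phi>, b, xs) \<noteq> 0 \<or> y (\<phi>, b, xs) \<noteq> 0" by auto
      then show "\<phi> \<in> fsB_hom Es (fsB_gen (length Ms))" using x y unfolding R_ob_def by blast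
    next
      fix \<phi> assume "\<phi> \<in> fsB_hom Es (fsB_gen (length Ms))"
      then have "(\<lambda>(b, xs). x (\<phi>, b, xs)) \<in> ?T \<phi>" "(\<lambda>(b, xs). y (\<phi>, b, xs)) \<in> ?T \<phi>"
        using x y unfolding R_ob_def by blast+
      from add_closed[OF sub this] have "(\<lambda>a. x (\<phi>, a) + y (\<phi>, a)) \<in> ?T \<phi>"
        by (simp add: case_prod_beta)
      moreover have "(\<lambda>(b, xs). x (\<phi>, b, xs) + y (\<phi>, b, xs)) = (\<lambda>a. x (\<phi>, a) + y (\<phi>, a))"
        by (rule ext) auto
      ultimately show "(\<lambda>(b, xs). x (\<phi>, b, xs) + y (\<phi>, b, xs)) \<in> ?T \<phi>" by simp
    qed
  next
    fix c x assume x: "x \<in> R_ob Nob Ms Es"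
    show "(\<lambda>a. c * x a) \<in> R_ob Nob Ms Es"
      unfolding R_ob_def
    proof (intro CollectI conjI allI impI ballI)
      fix \<phi> b xs assume "c * x (\<phi>, b, xs) \<noteq> 0"
      then show "\<phi> \<in> fsB_hom Es (fsB_gen (length Ms))" using x unfolding R_ob_def by auto
    next
      fix \<phi> assume "\<phi> \<in> fsB_hom Es (fsB_gen (length Ms))"
      then have "(\<lambda>(b, xs). x (\<phi>, b, xs)) \<in> ?T \<phi>"
        using x unfolding R_ob_def by blast
      from scal_closed[OF sub this] have "(\<lambda>a. c * x (\<phi>, a)) \<in> ?T \<phi>"
        by (simp add: case_prod_beta)
      moreover have "(\<lambda>(b, xs). c * x (\<phi>, b, xs)) = (\<lambda>a. c * x (\<phi>, a))"
        by (rule ext) auto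
      ultimately show "(\<lambda>(b, xs). c * x (\<phi>, b, xs)) \<in> ?T \<phi>" by simp
    qed
  qed
qed

lemma tval_in:
  assumes "validterm Nob (\<lambda>i. fst (Ms ! i)) (length Ms) Es \<tau>"
  shows "tval \<tau> \<in> R_ob Nob Ms Es"
proof -
  obtain c \<phi> v ws where t: "\<tau> = (c, \<phi>, v, ws)" by (cases \<tau>) auto
  have v: "\<phi> \<in> fsB_hom Es (fsB_gen (length Ms))" "v \<in> Nob (fibB \<phi> Es)" "length ws = length Ms"
    "\<forall>i<length Ms. ws ! i \<in> fst (Ms ! i) (fib \<phi> (fst Es) (int i + 1))"
    using assms by (auto simp: validterm_def t)
  let ?T = "\<lambda>\<phi>. tensor_space (Nob (fibB \<phi> Es)) (map (\<lambda>i. fst (Ms ! i) (fib \<phi> (fst Es) (int i + 1))) [0..<length Ms])"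
  have sub: "\<And>\<phi>. fn_subspace (?T \<phi>)" unfolding tensor_space_def by (rule fn_span_subspace)
  have et: "elem_tensor v ws \<in> ?T \<phi>"
    unfolding tensor_space_def by (rule fn_span_sup) (use v in auto)
  show ?thesis unfolding R_ob_def t
  proof (intro CollectI conjI allI impI ballI)
    fix \<phi>' b xs assume "tval (c, \<phi>, v, ws) (\<phi>', b, xs) \<noteq> 0"
    then show "\<phi>' \<in> fsB_hom Es (fsB_gen (length Ms))" using v(1) by (auto simp: tval_app split: if_splits)
  next
    fix \<phi>' assume "\<phi>' \<in> fsB_hom Es (fsB_gen (length Ms))"
    show "(\<lambda>(b, xs). tval (c, \<phi>, v, ws) (\<phi>', b, xs)) \<in> ?T \<phi>'"
    proof (cases "\<phi>' = \<phi>")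
      case True
      have "(\<lambda>(b, xs). tval (c, \<phi>, v, ws) (\<phi>', b, xs)) = (\<lambda>a. c * elem_tensor v ws a)"
        using True by (auto simp: tval_app elem_tensor_el)
      then show ?thesis using scal_closed[OF sub et] True by simp
    next
      case False
      have "(\<lambda>(b, xs). tval (c, \<phi>, v, ws) (\<phi>', b, xs)) = (\<lambda>a. 0)"
        using False by (auto simp: tval_app)
      then show ?thesis using zero_closed[OF sub] by simp
    qed
  qed
qed

lemma tsum_in:
  assumes "\<forall>\<tau>\<in>set L. validterm Nob (\<lambda>i. fst (Ms ! i)) (length Ms) Es \<tau>"
  shows "tsum L \<in> R_ob Nob Ms Es"
  using assms
proof (induction L)
  case Nil
  then show ?case using zero_closed[OF R_ob_subspace] by (simp add: tsum_Nil)
next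
  case (Cons \<tau> L)
  have "tsum (\<tau> # L) = (\<lambda>z. tval \<tau> z + tsum L z)" by (simp add: tsum_def)
  then show ?case using add_closed[OF R_ob_subspace tval_in Cons.IH] Cons.prems by simp
qed


lemma slice_tsum_aux:
  assumes "\<forall>q\<in>set P. snd q \<in> {elem_tensor v ws | v ws. v \<in> Nz (fibB \<phi> Es) \<and> length ws = length (map (\<lambda>i. Vs i (fib \<phi> (fst Es) (int i + 1))) [0..<p]) \<and>
       (\<forall>i<length (map (\<lambda>i. Vs i (fib \<phi> (fst Es) (int i + 1))) [0..<p]). ws ! i \<in> (map (\<lambda>i. Vs i (fib \<phi> (fst Es) (int i + 1))) [0..<p]) ! i)}"
    and ph: "\<phi> \<in> fsB_hom Es (fsB_gen p)"
  shows "\<exists>L. (\<forall>\<tau>\<in>set L. validterm Nz Vs p Es \<tau>) \<and> tsum L = (\<lambda>z. if fst z = \<phi> then (\<Sum>(c,u)\<leftarrow>P. c * u (snd z)) else 0)"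
  using assms(1)
proof (induction P)
  case Nil
  then show ?case by (intro exI[of _ "[]"]) (auto simp: tsum_Nil)
next
  case (Cons q P)
  obtain L where L: "\<forall>\<tau>\<in>set L. validterm Nz Vs p Es \<tau>" "tsum L = (\<lambda>z. if fst z = \<phi> then (\<Sum>(c,u)\<leftarrow>P. c * u (snd z)) else 0)"
    using Cons by auto
  obtain c u where q: "q = (c, u)" by (cases q) auto
  obtain v ws where u: "u = elem_tensor v ws" "v \<in> Nz (fibB \<phi> Es)" "length ws = p" "\<forall>i<p. ws ! i \<in> Vs i (fib \<phi> (fst Es) (int i + 1))"
    using Cons.prems q by auto
  have vt: "validterm Nz Vs p Es (c, \<phi>, v, ws)" using u ph by (simp add: validterm_def)
  have "tsum ((c, \<phi>, v, ws) # L) = (\<lambda>z. if fst z = \<phi> then (\<Sum>(c,u)\<leftarrow>q # P. c * u (snd z)) else 0)"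
  proof (rule ext)
    fix z
    show "tsum ((c, \<phi>, v, ws) # L) z = (if fst z = \<phi> then (\<Sum>(c,u)\<leftarrow>q # P. c * u (snd z)) else 0)"
    proof (cases z)
      case (fields a b xs)
      then show ?thesis using fun_cong[OF L(2), of z] by (simp add: tsum_Cons tval_app q u(1) elem_tensor_el)
    qed
  qed
  then show ?case using L(1) vt by (intro exI[of _ "(c, \<phi>, v, ws) # L"]) auto
qed

lemma slice_tsum:
  assumes s: "s \<in> tensor_space (Nz (fibB \<phi> Es)) (map (\<lambda>i. Vs i (fib \<phi> (fst Es) (int i + 1))) [0..<p])"
    and ph: "\<phi> \<in> fsB_hom Es (fsB_gen p)"
  shows "\<exists>L. (\<forall>\<tau>\<in>set L. validterm Nz Vs p Es \<tau>) \<and> tsum L = (\<lambda>z. if fst z = \<phi> then s (snd z) else 0)"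
proof -
  obtain P where P: "s = (\<lambda>z. \<Sum>(c,u)\<leftarrow>P. c * u z)"
    "\<forall>q\<in>set P. snd q \<in> {elem_tensor v ws | v ws. v \<in> Nz (fibB \<phi> Es) \<and> length ws = length (map (\<lambda>i. Vs i (fib \<phi> (fst Es) (int i + 1))) [0..<p]) \<and>
       (\<forall>i<length (map (\<lambda>i. Vs i (fib \<phi> (fst Es) (int i + 1))) [0..<p]). ws ! i \<in> (map (\<lambda>i. Vs i (fib \<phi> (fst Es) (int i + 1))) [0..<p]) ! i)}"
    using s unfolding tensor_space_def fn_span_eq by blast
  show ?thesis using slice_tsum_aux[where Nz=Nz and Vs=Vs and p=p and \<phi>=\<phi> and Es=Es, OF P(2) ph] unfolding P(1) by simp
qed

lemma finite_hom_gen: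
  assumes "finite (fst Es)"
  shows "finite (fsB_hom Es (fsB_gen p))"
proof -
  have "fsB_hom Es (fsB_gen p) \<subseteq> fst Es \<rightarrow>\<^sub>E fst (fsB_gen p)" by (auto simp: fsB_hom_def)
  moreover have "finite (fst Es \<rightarrow>\<^sub>E fst (fsB_gen p))"
    by (rule finite_PiE) (use assms in \<open>auto simp: fsB_gen_simps\<close>)
  ultimately show ?thesis by (rule finite_subset)
qed

lemma R_ob_tsum:
  assumes fin: "finite (fst Es)" and t: "t \<in> R_ob Nob Ms Es"
  shows "\<exists>L. (\<forall>\<tau>\<in>set L. validterm Nob (\<lambda>i. fst (Ms ! i)) (length Ms) Es \<tau>) \<and> t = tsum L"
proof -
  let ?H = "fsB_hom Es (fsB_gen (length Ms))"
  have one: "\<exists>L. (\<forall>\<tau>\<in>set L. validterm Nob (\<lambda>i. fst (Ms ! i)) (length Ms) Es \<tau>) \<and> tsum L = (\<lambda>z. if fst z = \<phi> then t z else 0)"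
    if ph: "\<phi> \<in> ?H" for \<phi>
  proof -
    have "(\<lambda>(b, xs). t (\<phi>, b, xs)) \<in> tensor_space (Nob (fibB \<phi> Es)) (map (\<lambda>i. fst (Ms ! i) (fib \<phi> (fst Es) (int i + 1))) [0..<length Ms])"
      using t ph unfolding R_ob_def by blast
    from slice_tsum[where Nz=Nob and Vs="\<lambda>i. fst (Ms ! i)" and p="length Ms" and \<phi>=\<phi> and Es=Es, OF this ph] obtain L where L: "\<forall>\<tau>\<in>set L. validterm Nob (\<lambda>i. fst (Ms ! i)) (length Ms) Es \<tau>"
      "tsum L = (\<lambda>z. if fst z = \<phi> then (\<lambda>(b, xs). t (\<phi>, b, xs)) (snd z) else 0)" by blast
    have "(\<lambda>z. if fst z = \<phi> then (\<lambda>(b, xs). t (\<phi>, b, xs)) (snd z) else 0) = (\<lambda>z. if fst z = \<phi> then t z else 0)"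
      by (rule ext) (auto simp: case_prod_beta)
    then show ?thesis using L by auto
  qed
  have gen: "F \<subseteq> ?H \<Longrightarrow> \<exists>L. (\<forall>\<tau>\<in>set L. validterm Nob (\<lambda>i. fst (Ms ! i)) (length Ms) Es \<tau>) \<and> tsum L = (\<lambda>z. if fst z \<in> F then t z else 0)"
    if "finite F" for F
    using that
  proof (induction F rule: finite_induct)
    case empty
    then show ?case by (intro exI[of _ "[]"]) (auto simp: tsum_Nil)
  next
    case (insert \<phi> F)
    obtain L1 where L1: "\<forall>\<tau>\<in>set L1. validterm Nob (\<lambda>i. fst (Ms ! i)) (length Ms) Es \<tau>" "tsum L1 = (\<lambda>z. if fst z \<in> F then t z else 0)"
      using insert by auto
    obtain L2 where L2: "\<forall>\<tau>\<in>set L2. validterm Nob (\<lambda>i. fst (Ms ! i)) (length Ms) Es \<tau>" "tsum L2 = (\<lambda>z. if fst z = \<phi> then t z else 0)"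
      using one[of \<phi>] insert.prems by blast
    have "tsum (L1 @ L2) = (\<lambda>z. if fst z \<in> insert \<phi> F then t z else 0)"
      unfolding tsum_append L1(2) L2(2) using insert.hyps(2) by (auto intro!: ext)
    then show ?case using L1(1) L2(1) by (intro exI[of _ "L1 @ L2"]) auto
  qed
  obtain L where L: "\<forall>\<tau>\<in>set L. validterm Nob (\<lambda>i. fst (Ms ! i)) (length Ms) Es \<tau>" "tsum L = (\<lambda>z. if fst z \<in> ?H then t z else 0)"
    using gen[OF finite_hom_gen[OF fin]] by blast
  have "t = (\<lambda>z. if fst z \<in> ?H then t z else 0)"
  proof (rule ext)
    fix z
    show "t z = (if fst z \<in> ?H then t z else 0)"
    proof (cases z)
      case (fields a b xs)
      then show ?thesis using t unfolding R_ob_def by auto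
    qed
  qed
  then show ?thesis using L by auto
qed


definition Hm :: "(fsB_ob \<Rightarrow> ('s \<Rightarrow> complex) \<Rightarrow> ('b \<Rightarrow> complex)) \<Rightarrow> (nat \<Rightarrow> int set \<Rightarrow> ('t \<Rightarrow> complex) \<Rightarrow> ('a \<Rightarrow> complex))
   \<Rightarrow> nat \<Rightarrow> fsB_ob \<Rightarrow> ((int \<Rightarrow> int) \<times> 's \<times> 't list \<Rightarrow> complex) \<Rightarrow> ((int \<Rightarrow> int) \<times> 'b \<times> 'a list \<Rightarrow> complex)" where
  "Hm e0 es p Es t = (\<lambda>(\<phi>, b, ys). if \<phi> \<in> fsB_hom Es (fsB_gen p) then
     e0 (fibB \<phi> Es) (\<lambda>b0. appl (map (\<lambda>i. es i (fib \<phi> (fst Es) (int i + 1))) [0..<p]) (\<lambda>xs. t (\<phi>, b0, xs)) ys) b else 0)"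

definition tmapH :: "(fsB_ob \<Rightarrow> ('s \<Rightarrow> complex) \<Rightarrow> ('b \<Rightarrow> complex)) \<Rightarrow> (nat \<Rightarrow> int set \<Rightarrow> ('t \<Rightarrow> complex) \<Rightarrow> ('a \<Rightarrow> complex))
   \<Rightarrow> nat \<Rightarrow> fsB_ob \<Rightarrow> complex \<times> (int \<Rightarrow> int) \<times> ('s \<Rightarrow> complex) \<times> ('t \<Rightarrow> complex) list
   \<Rightarrow> complex \<times> (int \<Rightarrow> int) \<times> ('b \<Rightarrow> complex) \<times> ('a \<Rightarrow> complex) list" where
  "tmapH e0 es p Es \<tau> = (case \<tau> of (c, \<phi>, v, ws) \<Rightarrow>
     (c, \<phi>, e0 (fibB \<phi> Es) v, map (\<lambda>i. es i (fib \<phi> (fst Es) (int i + 1)) (ws ! i)) [0..<p]))"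

lemma hmap_map:
  assumes "length ws = p"
  shows "hmap (map (\<lambda>i. h i) [0..<p]) ws = map (\<lambda>i. h i (ws ! i)) [0..<p]"
  using assms by (auto simp: hmap_def intro!: nth_equalityI)

lemma Hm_tsum:
  fixes e0 :: "fsB_ob \<Rightarrow> ('s \<Rightarrow> complex) \<Rightarrow> ('b \<Rightarrow> complex)"
    and es :: "nat \<Rightarrow> int set \<Rightarrow> ('t \<Rightarrow> complex) \<Rightarrow> ('a \<Rightarrow> complex)"
  assumes val: "\<forall>\<tau>\<in>set L. validterm V0 Vs p Es \<tau>"
    and lin: "\<forall>\<phi>\<in>fsB_hom Es (fsB_gen p). fn_linear_on (V0 (fibB \<phi> Es)) (W0 (fibB \<phi> Es)) (e0 (fibB \<phi> Es)) \<and> fn_subspace (V0 (fibB \<phi> Es)) \<and>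
       (\<forall>i<p. fn_linear_on (Vs i (fib \<phi> (fst Es) (int i + 1))) (Ws i (fib \<phi> (fst Es) (int i + 1))) (es i (fib \<phi> (fst Es) (int i + 1)))
            \<and> fn_subspace (Vs i (fib \<phi> (fst Es) (int i + 1))))"
  shows "Hm e0 es p Es (tsum L) = tsum (map (tmapH e0 es p Es) L)"
proof (rule ext)
  fix z :: "(int \<Rightarrow> int) \<times> 'b \<times> 'a list"
  obtain \<phi> b ys where z: "z = (\<phi>, b, ys)" by (cases z) auto
  show "Hm e0 es p Es (tsum L) z = tsum (map (tmapH e0 es p Es) L) z"
  proof (cases "\<phi> \<in> fsB_hom Es (fsB_gen p)")
    case False
    have "tsum (map (tmapH e0 es p Es) L) z = (\<Sum>\<tau>\<leftarrow>L. 0)"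
      unfolding tsum_def map_map o_def
    proof (rule sum_list_cong')
      fix \<tau> assume t: "\<tau> \<in> set L"
      obtain c \<phi>' v ws where tt: "\<tau> = (c, \<phi>', v, ws)" by (cases \<tau>) auto
      have "\<phi>' \<in> fsB_hom Es (fsB_gen p)" using val t tt by (auto simp: validterm_def)
      then show "tval (tmapH e0 es p Es \<tau>) z = 0" using False z tt by (auto simp: tmapH_def tval_app)
    qed
    then show ?thesis using False z by (simp add: Hm_def)
  next
    case ph: True
    let ?hs = "map (\<lambda>i. es i (fib \<phi> (fst Es) (int i + 1))) [0..<p]"
    define cf where "cf = (\<lambda>(b0::'s) (\<tau>::complex \<times> (int \<Rightarrow> int) \<times> ('s \<Rightarrow> complex) \<times> ('t \<Rightarrow> complex) list). case \<tau> of (c, \<phi>', v, ws) \<Rightarrow> if \<phi>' = \<phi> then c * v b0 else 0)"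
    define wsf where "wsf = (\<lambda>\<tau>::complex \<times> (int \<Rightarrow> int) \<times> ('s \<Rightarrow> complex) \<times> ('t \<Rightarrow> complex) list. snd (snd (snd \<tau>)))"
    have sl: "(\<lambda>xs. tsum L (\<phi>, b0, xs)) = (\<lambda>xs. \<Sum>\<tau>\<leftarrow>L. cf b0 \<tau> * el (wsf \<tau>) xs)" for b0
      unfolding tsum_def
      by (rule ext, rule sum_list_cong') (auto simp: cf_def wsf_def tval_app split: prod.splits)
    have lh: "\<forall>i<length ?hs. fn_linear_on (Vs i (fib \<phi> (fst Es) (int i + 1))) (Ws i (fib \<phi> (fst Es) (int i + 1))) (?hs ! i)
        \<and> fn_subspace (Vs i (fib \<phi> (fst Es) (int i + 1)))"
      using lin ph by auto
    have ap: "appl ?hs (\<lambda>xs. tsum L (\<phi>, b0, xs)) ys = (\<Sum>\<tau>\<leftarrow>L. cf b0 \<tau> * el (hmap ?hs (wsf \<tau>)) ys)" for b0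
    proof -
      have "appl ?hs (\<lambda>xs. \<Sum>\<tau>\<leftarrow>L. cf b0 \<tau> * el (wsf \<tau>) xs) = (\<lambda>ys. \<Sum>\<tau>\<leftarrow>L. cf b0 \<tau> * el (hmap ?hs (wsf \<tau>)) ys)"
      proof (rule appl_sum[OF lh])
        show "\<forall>\<tau>\<in>set L. cf b0 \<tau> \<noteq> 0 \<longrightarrow> length (wsf \<tau>) = length ?hs \<and> (\<forall>i<length ?hs. wsf \<tau> ! i \<in> Vs i (fib \<phi> (fst Es) (int i + 1)))"
        proof (intro ballI impI)
          fix \<tau> assume t: "\<tau> \<in> set L" and c: "cf b0 \<tau> \<noteq> 0"
          obtain c \<phi>' v ws where tt: "\<tau> = (c, \<phi>', v, ws)" by (cases \<tau>) auto
          have "\<phi>' = \<phi>" using c by (auto simp: cf_def tt split: if_splits)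
          then show "length (wsf \<tau>) = length ?hs \<and> (\<forall>i<length ?hs. wsf \<tau> ! i \<in> Vs i (fib \<phi> (fst Es) (int i + 1)))"
            using val t tt by (auto simp: validterm_def wsf_def)
        qed
      qed
      then show ?thesis unfolding sl by simp
    qed
    define c2 where "c2 = (\<lambda>\<tau>::complex \<times> (int \<Rightarrow> int) \<times> ('s \<Rightarrow> complex) \<times> ('t \<Rightarrow> complex) list.
        case \<tau> of (c, \<phi>', v, ws) \<Rightarrow> if \<phi>' = \<phi> then c * el (hmap ?hs ws) ys else 0)"
    define vf where "vf = (\<lambda>\<tau>::complex \<times> (int \<Rightarrow> int) \<times> ('s \<Rightarrow> complex) \<times> ('t \<Rightarrow> complex) list. fst (snd (snd \<tau>)))"
    have ap2: "(\<lambda>b0. appl ?hs (\<lambda>xs. tsum L (\<phi>, b0, xs)) ys) = (\<lambda>b0. \<Sum>\<tau>\<leftarrow>L. c2 \<tau> * vf \<tau> b0)"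
      unfolding ap by (rule ext, rule sum_list_cong') (auto simp: c2_def cf_def vf_def wsf_def split: prod.splits)
    have l0: "fn_linear_on (V0 (fibB \<phi> Es)) (W0 (fibB \<phi> Es)) (e0 (fibB \<phi> Es))" "fn_subspace (V0 (fibB \<phi> Es))"
      using lin ph by auto
    have e0s: "e0 (fibB \<phi> Es) (\<lambda>b0. \<Sum>\<tau>\<leftarrow>L. c2 \<tau> * vf \<tau> b0) = (\<lambda>b0. \<Sum>\<tau>\<leftarrow>L. c2 \<tau> * e0 (fibB \<phi> Es) (vf \<tau>) b0)"
    proof (rule conjunct2[OF lin_list[OF l0]])
      show "\<forall>\<tau>\<in>set L. c2 \<tau> \<noteq> 0 \<longrightarrow> vf \<tau> \<in> V0 (fibB \<phi> Es)"
      proof (intro ballI impI)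
        fix \<tau> assume t: "\<tau> \<in> set L" and c: "c2 \<tau> \<noteq> 0"
        obtain c \<phi>' v ws where tt: "\<tau> = (c, \<phi>', v, ws)" by (cases \<tau>) auto
        have "\<phi>' = \<phi>" using c by (auto simp: c2_def tt split: if_splits)
        then show "vf \<tau> \<in> V0 (fibB \<phi> Es)" using val t tt by (auto simp: validterm_def vf_def)
      qed
    qed
    have "Hm e0 es p Es (tsum L) z = (\<Sum>\<tau>\<leftarrow>L. c2 \<tau> * e0 (fibB \<phi> Es) (vf \<tau>) b)"
      using z ph e0s ap2 by (simp add: Hm_def)
    also have "\<dots> = tsum (map (tmapH e0 es p Es) L) z"
      unfolding tsum_def map_map o_def z
    proof (rule sum_list_cong')
      fix \<tau> assume t: "\<tau> \<in> set L"
      obtain c \<phi>' v ws where tt: "\<tau> = (c, \<phi>', v, ws)" by (cases \<tau>) auto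
      have "length ws = p" using val t tt by (auto simp: validterm_def)
      then have hm: "hmap ?hs ws = map (\<lambda>i. es i (fib \<phi> (fst Es) (int i + 1)) (ws ! i)) [0..<p]"
        by (rule hmap_map)
      show "c2 \<tau> * e0 (fibB \<phi> Es) (vf \<tau>) b = tval (tmapH e0 es p Es \<tau>) (\<phi>, b, ys)"
        using hm by (auto simp: tt c2_def vf_def tmapH_def tval_app)
    qed
    finally show ?thesis .
  qed
qed


lemma compose_inj:
  assumes "\<psi> ` A' = A" "f \<in> extensional A" "f2 \<in> extensional A" "compose A' f \<psi> = compose A' f2 \<psi>"
  shows "f = f2"
proof (rule ext)
  fix x show "f x = f2 x"
  proof (cases "x \<in> A")
    case True
    then obtain y where "y \<in> A'" "\<psi> y = x" using assms(1) by blast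
    then show ?thesis using fun_cong[OF assms(4), of y] by (simp add: compose_def)
  next
    case False
    then show ?thesis using assms(2,3) by (simp add: extensional_def)
  qed
qed

lemma compB_hom:
  assumes o: "fsB_obj X" and f: "f \<in> fsB_hom X Y" and g: "g \<in> fsB_hom Y Z"
  shows "compose (fst X) g f \<in> fsB_hom X Z"
proof (rule fsB_homI)
  fix x assume x: "x \<in> fst X"
  have fx: "f x \<in> fst Y" using fsB_homD(4)[OF f x] .
  show "compose (fst X) g f x \<in> fst Z" using x fsB_homD(4)[OF g fx] by (simp add: compose_def)
  have sx: "snd X x \<in> fst X" using fsB_objD(3)[OF o x] .
  have "f (snd X x) = snd Y (f x)" using fsB_homD(3)[OF f x] .
  moreover have "g (snd Y (f x)) = snd Z (g (f x))" using fsB_homD(3)[OF g fx] .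
  ultimately show "compose (fst X) g f (snd X x) = snd Z (compose (fst X) g f x)"
    using x sx by (simp add: compose_def)
next
  fix x assume "x \<notin> fst X" then show "compose (fst X) g f x = undefined" by (simp add: compose_def)
next
  fix z assume "z \<in> fst Z"
  then obtain y where y: "y \<in> fst Y" "g y = z" using fsB_homD(2)[OF g] by (metis imageE)
  then obtain x where x: "x \<in> fst X" "f x = y" using fsB_homD(2)[OF f] by (metis imageE)
  show "\<exists>x\<in>fst X. compose (fst X) g f x = z" using x y by (auto simp: compose_def)
qed

lemma fib_image:
  assumes psi: "\<psi> \<in> fsB_hom E' E"
  shows "\<psi> ` fib (compose (fst E') \<phi> \<psi>) (fst E') i = fib \<phi> (fst E) i"
proof
  show "\<psi> ` fib (compose (fst E') \<phi> \<psi>) (fst E') i \<subseteq> fib \<phi> (fst E) i"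
    using fsB_homD(4)[OF psi] by (auto simp: fib_iff compose_def)
next
  show "fib \<phi> (fst E) i \<subseteq> \<psi> ` fib (compose (fst E') \<phi> \<psi>) (fst E') i"
  proof
    fix y assume "y \<in> fib \<phi> (fst E) i"
    then have y: "y \<in> fst E" "\<phi> y = i" by (auto simp: fib_iff)
    then obtain x where "x \<in> fst E'" "\<psi> x = y" using fsB_homD(2)[OF psi] by (metis imageE)
    then show "y \<in> \<psi> ` fib (compose (fst E') \<phi> \<psi>) (fst E') i" using y by (auto simp: fib_iff compose_def)
  qed
qed

lemma restrB_hom:
  assumes o': "fsB_obj E'" and psi: "\<psi> \<in> fsB_hom E' E" and ph: "\<phi> \<in> fsB_hom E (fsB_gen p)"
  defines "\<chi> \<equiv> compose (fst E') \<phi> \<psi>"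
  shows "restrict \<psi> (fib \<chi> (fst E') 0) \<in> fsB_hom (fibB \<chi> E') (fibB \<phi> E)"
proof (rule fsB_homI)
  note im = fib_image[OF psi, of \<phi> 0, folded \<chi>_def]
  fix x assume x: "x \<in> fst (fibB \<chi> E')"
  then have xf: "x \<in> fib \<chi> (fst E') 0" by (simp add: fibB_simps)
  show "restrict \<psi> (fib \<chi> (fst E') 0) x \<in> fst (fibB \<phi> E)" using xf im by (auto simp: fibB_simps)
  have xe: "x \<in> fst E'" using xf by (simp add: fib_iff)
  have px: "\<psi> x \<in> fib \<phi> (fst E) 0" using im xf by blast
  have eq: "\<psi> (snd E' x) = snd E (\<psi> x)" using fsB_homD(3)[OF psi xe] .
  have sx: "snd E' x \<in> fib \<chi> (fst E') 0"
  proof -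
    have "snd E' x \<in> fst E'" using fsB_objD(3)[OF o' xe] .
    moreover have "\<phi> (snd E (\<psi> x)) = 0" using hom_gen_neg[OF ph] px by (simp add: fib_iff)
    ultimately show ?thesis using eq by (simp add: fib_iff \<chi>_def compose_def)
  qed
  show "restrict \<psi> (fib \<chi> (fst E') 0) (snd (fibB \<chi> E') x) = snd (fibB \<phi> E) (restrict \<psi> (fib \<chi> (fst E') 0) x)"
    using xf sx px eq by (simp add: fibB_simps)
next
  fix x assume "x \<notin> fst (fibB \<chi> E')" then show "restrict \<psi> (fib \<chi> (fst E') 0) x = undefined"
    by (simp add: fibB_simps)
next
  fix y assume "y \<in> fst (fibB \<phi> E)"
  then show "\<exists>x\<in>fst (fibB \<chi> E'). restrict \<psi> (fib \<chi> (fst E') 0) x = y"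
    using fib_image[OF psi, of \<phi> 0, folded \<chi>_def] unfolding fibB_simps by (metis imageE restrict_apply')
qed

lemma restrA_hom:
  fixes \<phi> :: "int \<Rightarrow> int"
  assumes psi: "\<psi> \<in> fsB_hom E' E"
  defines "\<chi> \<equiv> compose (fst E') \<phi> \<psi>"
  shows "restrict \<psi> (fib \<chi> (fst E') i) \<in> fsA_hom (fib \<chi> (fst E') i) (fib \<phi> (fst E) i)"
proof (rule fsA_homI)
  note im = fib_image[OF psi, of \<phi> i, folded \<chi>_def]
  fix x assume "x \<in> fib \<chi> (fst E') i"
  then show "restrict \<psi> (fib \<chi> (fst E') i) x \<in> fib \<phi> (fst E) i" using im by auto
next
  fix x assume "x \<notin> fib \<chi> (fst E') i" then show "restrict \<psi> (fib \<chi> (fst E') i) x = undefined" by simp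
next
  fix y assume "y \<in> fib \<phi> (fst E) i"
  then show "\<exists>x\<in>fib \<chi> (fst E') i. restrict \<psi> (fib \<chi> (fst E') i) x = y"
    using fib_image[OF psi, of \<phi> i, folded \<chi>_def] by (metis imageE restrict_apply')
qed

lemma compose_restrict: "compose A f (restrict \<psi> A) = compose A f \<psi>"
  by (rule ext) (simp add: compose_def)


locale msetup =
  fixes Nob :: "fsB_ob \<Rightarrow> ('b \<Rightarrow> complex) set"
    and Nmor :: "fsB_ob \<Rightarrow> fsB_ob \<Rightarrow> (int \<Rightarrow> int) \<Rightarrow> ('b \<Rightarrow> complex) \<Rightarrow> ('b \<Rightarrow> complex)"
    and Ms :: "'a fsA_mod list"
    and Rmor :: "fsB_ob \<Rightarrow> fsB_ob \<Rightarrow> (int \<Rightarrow> int) \<Rightarrow> ((int \<Rightarrow> int) \<times> 'b \<times> 'a list \<Rightarrow> complex)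
                   \<Rightarrow> ((int \<Rightarrow> int) \<times> 'b \<times> 'a list \<Rightarrow> complex)"
    and ms0 :: "nat list"
    and S0 :: "fsB_ob \<Rightarrow> (nat \<times> (int \<Rightarrow> int) \<Rightarrow> complex) set"
    and e0 :: "fsB_ob \<Rightarrow> (nat \<times> (int \<Rightarrow> int) \<Rightarrow> complex) \<Rightarrow> ('b \<Rightarrow> complex)"
    and MS :: "nat \<Rightarrow> nat list"
    and SS :: "nat \<Rightarrow> int set \<Rightarrow> (nat \<times> (int \<Rightarrow> int) \<Rightarrow> complex) set"
    and ET :: "nat \<Rightarrow> int set \<Rightarrow> (nat \<times> (int \<Rightarrow> int) \<Rightarrow> complex) \<Rightarrow> ('a \<Rightarrow> complex)"
  assumes sub0: "is_submodule fsB_obj fsB_hom (free_ob fsB_hom (map fsB_gen ms0)) (free_mor fsB_hom fsB_comp (map fsB_gen ms0)) S0"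
    and epi0: "is_epi fsB_obj fsB_hom S0 (free_mor fsB_hom fsB_comp (map fsB_gen ms0)) Nob Nmor e0"
    and subi: "\<forall>i<length Ms. is_submodule fsA_obj fsA_hom (free_ob fsA_hom (map fsA_gen (MS i))) (free_mor fsA_hom fsA_comp (map fsA_gen (MS i))) (SS i)"
    and epii: "\<forall>i<length Ms. is_epi fsA_obj fsA_hom (SS i) (free_mor fsA_hom fsA_comp (map fsA_gen (MS i))) (fst (Ms ! i)) (snd (Ms ! i)) (ET i)"
    and MSpos: "\<forall>i<length Ms. \<forall>m\<in>set (MS i). 1 \<le> m"
    and Rspec: "R_mor_spec Nob Nmor Ms Rmor"
begin

abbreviation "p \<equiv> length Ms"
definition "AL = ms0 # map MS [0..<p]"
definition "tups = product_lists (map (\<lambda>l. [0..<length l]) AL)"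
definition "Asz J = (\<lambda>l. AL ! l ! (J ! l))"
definition "msz = map (\<lambda>J. off (Asz J) (Suc p)) tups"
definition "gens = map fsB_gen msz"
definition "MsS = map (\<lambda>i. (SS i, free_mor fsA_hom fsA_comp (map fsA_gen (MS i)))) [0..<p]"
definition "RS E = R_ob S0 MsS E"
definition "dtr J E g = (decphi (Asz J) p E g, (J ! 0, dec0 (Asz J) p E g), map (\<lambda>i. (J ! Suc i, decs (Asz J) p E g ! i)) [0..<p])"
definition "Lam E t = (\<lambda>(k, g). if k < length tups \<and> g \<in> fsB_hom E (gens ! k) then t (dtr (tups ! k) E g) else 0)"
definition "Sp E = Lam E ` RS E"
definition "etap E u = Hm e0 ET p E (inv_into (RS E) (Lam E) u)"
definition "Fmor = free_mor fsB_hom fsB_comp gens"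

definition validtr :: "fsB_ob \<Rightarrow> (int \<Rightarrow> int) \<times> (nat \<times> (int \<Rightarrow> int)) \<times> (nat \<times> (int \<Rightarrow> int)) list \<Rightarrow> bool" where
  "validtr E \<tau> = (case \<tau> of (\<phi>, (j0, f0), xs) \<Rightarrow> \<phi> \<in> fsB_hom E (fsB_gen p) \<and> j0 < length ms0 \<and>
     f0 \<in> fsB_hom (fibB \<phi> E) (fsB_gen (ms0 ! j0)) \<and> length xs = p \<and>
     (\<forall>i<p. fst (xs ! i) < length (MS i) \<and> snd (xs ! i) \<in> fsA_hom (fib \<phi> (fst E) (int i + 1)) (fsA_gen (MS i ! fst (xs ! i)))))"

lemma MsS_simps: "length MsS = p" "i < p \<Longrightarrow> fst (MsS ! i) = SS i"
  by (simp_all add: MsS_def)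

lemma tups_iff: "J \<in> set tups \<longleftrightarrow> length J = Suc p \<and> J ! 0 < length ms0 \<and> (\<forall>i<p. J ! Suc i < length (MS i))"
proof -
  have lenAL: "length AL = Suc p" by (simp add: AL_def)
  have "J \<in> set tups \<longleftrightarrow> list_all2 (\<lambda>x ys. x \<in> set ys) J (map (\<lambda>l. [0..<length l]) AL)"
    unfolding tups_def product_lists_set by simp
  also have "\<dots> \<longleftrightarrow> length J = Suc p \<and> (\<forall>l<Suc p. J ! l < length (AL ! l))"
    using lenAL by (auto simp: list_all2_conv_all_nth)
  also have "\<dots> \<longleftrightarrow> length J = Suc p \<and> J ! 0 < length ms0 \<and> (\<forall>i<p. J ! Suc i < length (MS i))"
    by (auto simp: AL_def All_less_Suc2 nth_Cons' split: if_splits)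
  finally show ?thesis .
qed

lemma Asz_simps: "Asz J 0 = ms0 ! (J ! 0)" "i < p \<Longrightarrow> Asz J (Suc i) = MS i ! (J ! Suc i)"
  by (simp_all add: Asz_def AL_def)

lemma Asz_pos: "J \<in> set tups \<Longrightarrow> \<forall>m. 1 \<le> m \<and> m \<le> p \<longrightarrow> Asz J m \<ge> 1"
proof (intro allI impI)
  fix m assume J: "J \<in> set tups" and m: "1 \<le> m \<and> m \<le> p"
  then obtain i where i: "m = Suc i" "i < p" by (cases m) auto
  have "J ! Suc i < length (MS i)" using J i tups_iff by auto
  then have "MS i ! (J ! Suc i) \<in> set (MS i)" by simp
  then show "Asz J m \<ge> 1" using MSpos i by (simp add: Asz_simps)
qed

lemma gens_simps: "length gens = length tups" "k < length tups \<Longrightarrow> gens ! k = fsB_gen (off (Asz (tups ! k)) (Suc p))"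
  by (simp_all add: gens_def msz_def)

end


lemma sum_list_nz: "(\<Sum>x\<leftarrow>L. f x) \<noteq> (0::complex) \<Longrightarrow> \<exists>x\<in>set L. f x \<noteq> 0"
  by (induct L) auto

lemma el_nz: "el ws xs \<noteq> 0 \<Longrightarrow> length xs = length ws \<and> (\<forall>i<length ws. (ws ! i) (xs ! i) \<noteq> 0)"
  by (auto simp: el_def split: if_splits)

lemma free_obD: "v \<in> free_ob hom gs Y \<Longrightarrow> v (i, f) \<noteq> 0 \<Longrightarrow> i < length gs \<and> f \<in> hom Y (gs ! i)"
  by (simp add: free_ob_def)

lemma submoduleD: "is_submodule obj hom Mob Mmor S \<Longrightarrow> obj X \<Longrightarrow> fn_subspace (S X) \<and> S X \<subseteq> Mob X"
  "is_submodule obj hom Mob Mmor S \<Longrightarrow> obj X \<Longrightarrow> obj Y \<Longrightarrow> f \<in> hom X Y \<Longrightarrow> v \<in> S Y \<Longrightarrow> Mmor X Y f v \<in> S X"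
  unfolding is_submodule_def by blast+

lemma epiD: "is_epi obj hom Sob Smor Mob Mmor \<eta> \<Longrightarrow> obj X \<Longrightarrow> fn_linear_on (Sob X) (Mob X) (\<eta> X) \<and> \<eta> X ` Sob X = Mob X"
  "is_epi obj hom Sob Smor Mob Mmor \<eta> \<Longrightarrow> obj X \<Longrightarrow> obj Y \<Longrightarrow> f \<in> hom X Y \<Longrightarrow> v \<in> Sob Y \<Longrightarrow> \<eta> X (Smor X Y f v) = Mmor X Y f (\<eta> Y v)"
  by (auto simp: is_epi_def)

context msetup begin

lemma RS_support:
  assumes o: "fsB_obj E" and t: "t \<in> RS E" and nz: "t \<tau> \<noteq> 0"
  shows "validtr E \<tau>"
proof -
  obtain L where L: "\<forall>\<tau>\<in>set L. validterm S0 (\<lambda>i. fst (MsS ! i)) (length MsS) E \<tau>" "t = tsum L"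
    using R_ob_tsum[OF fsB_objD(1)[OF o] t[unfolded RS_def]] by blast
  obtain \<phi> b xs where tau: "\<tau> = (\<phi>, b, xs)" by (cases \<tau>) auto
  obtain j0 f0 where b: "b = (j0, f0)" by (cases b) auto
  obtain x where x: "x \<in> set L" "tval x \<tau> \<noteq> 0" using sum_list_nz[where f="\<lambda>x. tval x \<tau>" and L=L] nz L(2) by (auto simp: tsum_def)
  obtain c \<phi>' v ws where xx: "x = (c, \<phi>', v, ws)" by (cases x) auto
  have vx: "validterm S0 (\<lambda>i. fst (MsS ! i)) (length MsS) E x" using L(1) x(1) by blast
  have nz2: "\<phi>' = \<phi>" "v b \<noteq> 0" "el ws xs \<noteq> 0" using x(2) unfolding xx tau by (auto simp: tval_app split: if_splits)
  have ph: "\<phi> \<in> fsB_hom E (fsB_gen p)" and vS: "v \<in> S0 (fibB \<phi> E)" and lws: "length ws = p"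
    and wsS: "\<forall>i<p. ws ! i \<in> SS i (fib \<phi> (fst E) (int i + 1))"
    using vx nz2(1) by (auto simp: validterm_def xx MsS_simps)
  have fo: "fsB_obj (fibB \<phi> E)" using fibB_obj[OF o ph] .
  have "v \<in> free_ob fsB_hom (map fsB_gen ms0) (fibB \<phi> E)" using submoduleD(1)[OF sub0 fo] vS by blast
  from free_obD[OF this, of j0 f0] have "j0 < length (map fsB_gen ms0) \<and> f0 \<in> fsB_hom (fibB \<phi> E) (map fsB_gen ms0 ! j0)"
    using nz2(2) b by blast
  then have j00: "j0 < length ms0" and "f0 \<in> fsB_hom (fibB \<phi> E) (map fsB_gen ms0 ! j0)" by auto
  then have j0: "j0 < length ms0" "f0 \<in> fsB_hom (fibB \<phi> E) (fsB_gen (ms0 ! j0))"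
    using nth_map[OF j00, of fsB_gen] by auto
  have el: "length xs = p" "\<forall>i<p. (ws ! i) (xs ! i) \<noteq> 0" using el_nz[OF nz2(3)] lws by auto
  have xsi: "fst (xs ! i) < length (MS i) \<and> snd (xs ! i) \<in> fsA_hom (fib \<phi> (fst E) (int i + 1)) (fsA_gen (MS i ! fst (xs ! i)))"
    if i: "i < p" for i
  proof -
    have ao: "fsA_obj (fib \<phi> (fst E) (int i + 1))" using fib_obj[OF o ph] i by simp
    have "ws ! i \<in> free_ob fsA_hom (map fsA_gen (MS i)) (fib \<phi> (fst E) (int i + 1))"
      using submoduleD(1)[OF subi[rule_format, OF i] ao] wsS i by blast
    moreover have "(ws ! i) (fst (xs ! i), snd (xs ! i)) \<noteq> 0" using el(2) i by simp
    ultimately show ?thesis using free_obD by fastforce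
  qed
  show ?thesis unfolding validtr_def tau b using ph j0 el(1) xsi by simp
qed

lemma dtr_exists:
  assumes o: "fsB_obj E" and v: "validtr E \<tau>"
  shows "\<exists>k<length tups. \<exists>g. g \<in> fsB_hom E (gens ! k) \<and> dtr (tups ! k) E g = \<tau>"
proof -
  obtain \<phi> j0 f0 xs where tau: "\<tau> = (\<phi>, (j0, f0), xs)" by (cases \<tau>) auto
  have vv: "\<phi> \<in> fsB_hom E (fsB_gen p)" "j0 < length ms0" "f0 \<in> fsB_hom (fibB \<phi> E) (fsB_gen (ms0 ! j0))" "length xs = p"
    "\<forall>i<p. fst (xs ! i) < length (MS i) \<and> snd (xs ! i) \<in> fsA_hom (fib \<phi> (fst E) (int i + 1)) (fsA_gen (MS i ! fst (xs ! i)))"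
    using v by (auto simp: validtr_def tau)
  define J where "J = j0 # map fst xs"
  have J: "J \<in> set tups" unfolding tups_iff J_def using vv by auto
  then obtain k where k: "k < length tups" "tups ! k = J" by (metis in_set_conv_nth)
  define A where "A = Asz J"
  have A: "A 0 = ms0 ! j0" "\<And>i. i < p \<Longrightarrow> A (Suc i) = MS i ! fst (xs ! i)"
    using vv(4) by (auto simp: A_def Asz_simps J_def)
  have vr: "validraw A p E \<phi> f0 (map snd xs)"
    unfolding validraw_def using vv A by auto
  define g where "g = enc A E \<phi> f0 (map snd xs)"
  have g: "g \<in> fsB_hom E (gens ! k)" using enc_hom[OF o vr] k by (simp add: g_def gens_simps A_def)
  have "dtr (tups ! k) E g = \<tau>"
    unfolding k(2) dtr_def A_def[symmetric] g_def dec_enc[OF o vr] tau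
    using vv(4) by (auto simp: J_def intro!: nth_equalityI)
  then show ?thesis using k g by blast
qed

lemma dtr_valid:
  assumes o: "fsB_obj E" and k: "k < length tups" and g: "g \<in> fsB_hom E (gens ! k)"
  shows "validtr E (dtr (tups ! k) E g)"
proof -
  define J where "J = tups ! k"
  have J: "J \<in> set tups" using k by (simp add: J_def)
  then have Jp: "length J = Suc p" "J ! 0 < length ms0" "\<forall>i<p. J ! Suc i < length (MS i)" using tups_iff by auto
  have g': "g \<in> fsB_hom E (fsB_gen (off (Asz J) (Suc p)))" using g k by (simp add: gens_simps J_def)
  have vr: "validraw (Asz J) p E (decphi (Asz J) p E g) (dec0 (Asz J) p E g) (decs (Asz J) p E g)"
    using dec_valid[OF o g' Asz_pos[OF J]] .
  show ?thesis unfolding J_def[symmetric] dtr_def validtr_def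
    using vr Jp by (auto simp: validraw_def Asz_simps)
qed

lemma Lam_inj:
  assumes o: "fsB_obj E" and t1: "t1 \<in> RS E" and t2: "t2 \<in> RS E" and eq: "Lam E t1 = Lam E t2"
  shows "t1 = t2"
proof (rule ext)
  fix \<tau>
  show "t1 \<tau> = t2 \<tau>"
  proof (cases "validtr E \<tau>")
    case True
    then obtain k g where kg: "k < length tups" "g \<in> fsB_hom E (gens ! k)" "dtr (tups ! k) E g = \<tau>"
      using dtr_exists[OF o] by blast
    have "Lam E t1 (k, g) = Lam E t2 (k, g)" using eq by simp
    then show ?thesis using kg by (simp add: Lam_def)
  next
    case False
    have "t1 \<tau> = 0" using RS_support[OF o t1, of \<tau>] False by blast
    moreover have "t2 \<tau> = 0" using RS_support[OF o t2, of \<tau>] False by blast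
    ultimately show ?thesis by simp
  qed
qed

end


lemma free_mor_eval:
  assumes j: "j < length gs" and f: "f \<in> hom Y (gs ! j)"
    and uniq: "\<And>f2. f2 \<in> hom Y (gs ! j) \<Longrightarrow> cmp Y' f2 h = cmp Y' f h \<Longrightarrow> f2 = f"
  shows "free_mor hom cmp gs Y' Y h v (j, cmp Y' f h) = v (j, f)"
proof -
  have "{f2 \<in> hom Y (gs ! j). cmp Y' f2 h = cmp Y' f h} = {f}" using f uniq by auto
  then show ?thesis using j by (simp add: free_mor_def)
qed

lemma free_mor_nz:
  assumes "free_mor hom cmp gs Y' Y h v (j, f') \<noteq> 0"
  shows "j < length gs \<and> (\<exists>f. f \<in> hom Y (gs ! j) \<and> cmp Y' f h = f')"
proof -
  have "j < length gs" using assms by (auto simp: free_mor_def split: if_splits)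
  moreover have "{f2 \<in> hom Y (gs ! j). cmp Y' f2 h = f'} \<noteq> {}"
  proof
    assume e: "{f2 \<in> hom Y (gs ! j). cmp Y' f2 h = f'} = {}"
    have "free_mor hom cmp gs Y' Y h v (j, f') = 0" unfolding free_mor_def prod.case e by simp
    then show False using assms by simp
  qed
  ultimately show ?thesis by blast
qed

lemma free_mor_none:
  assumes "\<not> (\<exists>f. f \<in> hom Y (gs ! j) \<and> cmp Y' f h = f')"
  shows "free_mor hom cmp gs Y' Y h v (j, f') = 0"
  using free_mor_nz[of hom cmp gs Y' Y h v j f'] assms by blast

lemma homB_ext: "f \<in> fsB_hom X Y \<Longrightarrow> f \<in> extensional (fst X)"
  by (auto simp: fsB_hom_def PiE_def)

lemma homA_ext: "f \<in> fsA_hom X Y \<Longrightarrow> f \<in> extensional X"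
  by (auto simp: fsA_hom_def PiE_def)

context msetup begin

definition tmapF where
  "tmapF E' E \<psi> \<tau> = (case \<tau> of (c, \<phi>, s0, ss) \<Rightarrow>
     (c, compose (fst E') \<phi> \<psi>,
      free_mor fsB_hom fsB_comp (map fsB_gen ms0) (fibB (compose (fst E') \<phi> \<psi>) E') (fibB \<phi> E)
         (restrict \<psi> (fib (compose (fst E') \<phi> \<psi>) (fst E') 0)) s0,
      map (\<lambda>i. free_mor fsA_hom fsA_comp (map fsA_gen (MS i)) (fib (compose (fst E') \<phi> \<psi>) (fst E') (int i + 1))
          (fib \<phi> (fst E) (int i + 1)) (restrict \<psi> (fib (compose (fst E') \<phi> \<psi>) (fst E') (int i + 1))) (ss ! i)) [0..<p]))"

lemma dtr_simps: "fst (dtr J E g) = decphi (Asz J) p E g" "fst (snd (dtr J E g)) = (J ! 0, dec0 (Asz J) p E g)"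
  "snd (snd (dtr J E g)) = map (\<lambda>i. (J ! Suc i, decs (Asz J) p E g ! i)) [0..<p]"
  by (simp_all add: dtr_def)

lemma uniqB_fib:
  assumes psi: "\<psi> \<in> fsB_hom E' E"
    and f1: "f1 \<in> fsB_hom (fibB \<phi> E) Z" and f2: "f2 \<in> fsB_hom (fibB \<phi> E) Z"
    and eq: "fsB_comp (fibB (compose (fst E') \<phi> \<psi>) E') f1 (restrict \<psi> (fib (compose (fst E') \<phi> \<psi>) (fst E') 0))
           = fsB_comp (fibB (compose (fst E') \<phi> \<psi>) E') f2 (restrict \<psi> (fib (compose (fst E') \<phi> \<psi>) (fst E') 0))"
  shows "f1 = f2"
proof (rule compose_inj[OF fib_image[OF psi, of \<phi> 0]])
  show "f1 \<in> extensional (fib \<phi> (fst E) 0)" using homB_ext[OF f1] by (simp add: fibB_simps)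
  show "f2 \<in> extensional (fib \<phi> (fst E) 0)" using homB_ext[OF f2] by (simp add: fibB_simps)
  show "compose (fib (compose (fst E') \<phi> \<psi>) (fst E') 0) f1 \<psi> = compose (fib (compose (fst E') \<phi> \<psi>) (fst E') 0) f2 \<psi>"
    using eq by (simp add: fsB_comp_def fibB_simps compose_restrict)
qed

lemma uniqA_fib:
  assumes psi: "\<psi> \<in> fsB_hom E' E"
    and f1: "f1 \<in> fsA_hom (fib \<phi> (fst E) i) Z" and f2: "f2 \<in> fsA_hom (fib \<phi> (fst E) i) Z"
    and eq: "fsA_comp (fib (compose (fst E') \<phi> \<psi>) (fst E') i) f1 (restrict \<psi> (fib (compose (fst E') \<phi> \<psi>) (fst E') i))
           = fsA_comp (fib (compose (fst E') \<phi> \<psi>) (fst E') i) f2 (restrict \<psi> (fib (compose (fst E') \<phi> \<psi>) (fst E') i))"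
  shows "f1 = f2"
proof (rule compose_inj[OF fib_image[OF psi, of \<phi> i]])
  show "f1 \<in> extensional (fib \<phi> (fst E) i)" using homA_ext[OF f1] .
  show "f2 \<in> extensional (fib \<phi> (fst E) i)" using homA_ext[OF f2] .
  show "compose (fib (compose (fst E') \<phi> \<psi>) (fst E') i) f1 \<psi> = compose (fib (compose (fst E') \<phi> \<psi>) (fst E') i) f2 \<psi>"
    using eq by (simp add: fsA_comp_def compose_restrict)
qed

end


lemma compB_fib: "fsB_comp (fibB \<chi> E') f (restrict \<psi> (fib \<chi> (fst E') 0)) = compose (fib \<chi> (fst E') 0) f \<psi>"
  by (simp add: fsB_comp_def fibB_simps compose_restrict)
lemma compA_fib: "fsA_comp X f (restrict \<psi> X) = compose X f \<psi>"
  by (simp add: fsA_comp_def compose_restrict)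

context msetup begin

lemma key_a:
  assumes o': "fsB_obj E'" and o: "fsB_obj E" and psi: "\<psi> \<in> fsB_hom E' E"
    and vt: "validterm S0 (\<lambda>i. fst (MsS ! i)) (length MsS) E (c, \<phi>, s0, ss)"
    and k: "k < length tups" and g: "g \<in> fsB_hom E (gens ! k)"
  shows "tval (c, \<phi>, s0, ss) (dtr (tups ! k) E g) = tval (tmapF E' E \<psi> (c, \<phi>, s0, ss)) (dtr (tups ! k) E' (compose (fst E') g \<psi>))"
proof -
  define J where "J = tups ! k"
  define A where "A = Asz J"
  define \<chi> where "\<chi> = compose (fst E') \<phi> \<psi>"
  define \<phi>g where "\<phi>g = decphi A p E g"
  define f0g where "f0g = dec0 A p E g"
  define fsg where "fsg = decs A p E g"
  have ph: "\<phi> \<in> fsB_hom E (fsB_gen p)" and lss: "length ss = p" using vt by (auto simp: validterm_def MsS_simps)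
  have vd: "validtr E (dtr J E g)" using dtr_valid[OF o k g] by (simp add: J_def)
  then have vg: "\<phi>g \<in> fsB_hom E (fsB_gen p)" "J ! 0 < length ms0" "f0g \<in> fsB_hom (fibB \<phi>g E) (fsB_gen (ms0 ! (J ! 0)))"
    "\<forall>i<p. J ! Suc i < length (MS i) \<and> fsg ! i \<in> fsA_hom (fib \<phi>g (fst E) (int i + 1)) (fsA_gen (MS i ! (J ! Suc i)))"
    by (auto simp: validtr_def dtr_def A_def \<phi>g_def f0g_def fsg_def)
  have lfsg: "length fsg = p" by (simp add: fsg_def decs_def)
  note dc = dec_comp[OF psi, of A p g, folded \<phi>g_def f0g_def fsg_def]
  have d1: "dtr J E g = (\<phi>g, (J ! 0, f0g), map (\<lambda>i. (J ! Suc i, fsg ! i)) [0..<p])"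
    by (simp add: dtr_def A_def \<phi>g_def f0g_def fsg_def)
  have d2: "dtr J E' (compose (fst E') g \<psi>) = (compose (fst E') \<phi>g \<psi>, (J ! 0, compose (fib (compose (fst E') \<phi>g \<psi>) (fst E') 0) f0g \<psi>),
      map (\<lambda>i. (J ! Suc i, compose (fib (compose (fst E') \<phi>g \<psi>) (fst E') (int i + 1)) (fsg ! i) \<psi>)) [0..<p])"
    unfolding dtr_def A_def[symmetric] dc by simp
  have tm: "tmapF E' E \<psi> (c, \<phi>, s0, ss) = (c, \<chi>,
      free_mor fsB_hom fsB_comp (map fsB_gen ms0) (fibB \<chi> E') (fibB \<phi> E) (restrict \<psi> (fib \<chi> (fst E') 0)) s0,
      map (\<lambda>i. free_mor fsA_hom fsA_comp (map fsA_gen (MS i)) (fib \<chi> (fst E') (int i + 1))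
          (fib \<phi> (fst E) (int i + 1)) (restrict \<psi> (fib \<chi> (fst E') (int i + 1))) (ss ! i)) [0..<p])"
    by (simp add: tmapF_def \<chi>_def)
  show ?thesis
  proof (cases "\<phi>g = \<phi>")
    case False
    have "compose (fst E') \<phi>g \<psi> \<noteq> \<chi>"
    proof
      assume "compose (fst E') \<phi>g \<psi> = \<chi>"
      then have "\<phi>g = \<phi>" using compose_inj[OF fsB_homD(2)[OF psi] homB_ext[OF vg(1)] homB_ext[OF ph]]
        by (simp add: \<chi>_def)
      then show False using False by simp
    qed
    then show ?thesis unfolding J_def[symmetric] d1 d2 tm using False by (simp add: tval_app)
  next
    case True
    have s0e: "free_mor fsB_hom fsB_comp (map fsB_gen ms0) (fibB \<chi> E') (fibB \<phi> E) (restrict \<psi> (fib \<chi> (fst E') 0)) s0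
        (J ! 0, compose (fib \<chi> (fst E') 0) f0g \<psi>) = s0 (J ! 0, f0g)"
    proof -
      have f0: "f0g \<in> fsB_hom (fibB \<phi> E) (map fsB_gen ms0 ! (J ! 0))" using vg(2,3) True by simp
      have "free_mor fsB_hom fsB_comp (map fsB_gen ms0) (fibB \<chi> E') (fibB \<phi> E) (restrict \<psi> (fib \<chi> (fst E') 0)) s0
        (J ! 0, fsB_comp (fibB \<chi> E') f0g (restrict \<psi> (fib \<chi> (fst E') 0))) = s0 (J ! 0, f0g)"
      proof (rule free_mor_eval)
        show "J ! 0 < length (map fsB_gen ms0)" using vg(2) by simp
        show "f0g \<in> fsB_hom (fibB \<phi> E) (map fsB_gen ms0 ! (J ! 0))" using f0 .
        fix f2 assume "f2 \<in> fsB_hom (fibB \<phi> E) (map fsB_gen ms0 ! (J ! 0))"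
          "fsB_comp (fibB \<chi> E') f2 (restrict \<psi> (fib \<chi> (fst E') 0)) = fsB_comp (fibB \<chi> E') f0g (restrict \<psi> (fib \<chi> (fst E') 0))"
        then show "f2 = f0g" using uniqB_fib[OF psi _ f0] unfolding \<chi>_def by blast
      qed
      then show ?thesis by (simp add: compB_fib)
    qed
    have sse: "free_mor fsA_hom fsA_comp (map fsA_gen (MS i)) (fib \<chi> (fst E') (int i + 1))
          (fib \<phi> (fst E) (int i + 1)) (restrict \<psi> (fib \<chi> (fst E') (int i + 1))) (ss ! i)
          (J ! Suc i, compose (fib \<chi> (fst E') (int i + 1)) (fsg ! i) \<psi>) = (ss ! i) (J ! Suc i, fsg ! i)"
      if i: "i < p" for i
    proof -
      have fi: "fsg ! i \<in> fsA_hom (fib \<phi> (fst E) (int i + 1)) (map fsA_gen (MS i) ! (J ! Suc i))"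
        using vg(4) i True by simp
      have "free_mor fsA_hom fsA_comp (map fsA_gen (MS i)) (fib \<chi> (fst E') (int i + 1))
          (fib \<phi> (fst E) (int i + 1)) (restrict \<psi> (fib \<chi> (fst E') (int i + 1))) (ss ! i)
          (J ! Suc i, fsA_comp (fib \<chi> (fst E') (int i + 1)) (fsg ! i) (restrict \<psi> (fib \<chi> (fst E') (int i + 1)))) = (ss ! i) (J ! Suc i, fsg ! i)"
      proof (rule free_mor_eval)
        show "J ! Suc i < length (map fsA_gen (MS i))" using vg(4) i by simp
        show "fsg ! i \<in> fsA_hom (fib \<phi> (fst E) (int i + 1)) (map fsA_gen (MS i) ! (J ! Suc i))" using fi .
        fix f2 assume "f2 \<in> fsA_hom (fib \<phi> (fst E) (int i + 1)) (map fsA_gen (MS i) ! (J ! Suc i))"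
          "fsA_comp (fib \<chi> (fst E') (int i + 1)) f2 (restrict \<psi> (fib \<chi> (fst E') (int i + 1))) =
           fsA_comp (fib \<chi> (fst E') (int i + 1)) (fsg ! i) (restrict \<psi> (fib \<chi> (fst E') (int i + 1)))"
        then show "f2 = fsg ! i" using uniqA_fib[OF psi _ fi] unfolding \<chi>_def by blast
      qed
      then show ?thesis by (simp add: compA_fib)
    qed
    have ele: "el (map (\<lambda>i. free_mor fsA_hom fsA_comp (map fsA_gen (MS i)) (fib \<chi> (fst E') (int i + 1))
          (fib \<phi> (fst E) (int i + 1)) (restrict \<psi> (fib \<chi> (fst E') (int i + 1))) (ss ! i)) [0..<p])
          (map (\<lambda>i. (J ! Suc i, compose (fib \<chi> (fst E') (int i + 1)) (fsg ! i) \<psi>)) [0..<p])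
        = el ss (map (\<lambda>i. (J ! Suc i, fsg ! i)) [0..<p])"
      unfolding el_def using lss sse by (auto intro!: prod.cong)
    show ?thesis unfolding J_def[symmetric] d1 d2 tm True \<chi>_def[symmetric]
      using s0e ele by (simp add: tval_app)
  qed
qed

end


context msetup begin

lemma key_b:
  assumes o': "fsB_obj E'" and o: "fsB_obj E" and psi: "\<psi> \<in> fsB_hom E' E"
    and vt: "validterm S0 (\<lambda>i. fst (MsS ! i)) (length MsS) E (c, \<phi>, s0, ss)"
    and k: "k < length tups" and g': "g' \<in> fsB_hom E' (gens ! k)"
    and nog: "\<not> (\<exists>g. g \<in> fsB_hom E (gens ! k) \<and> compose (fst E') g \<psi> = g')"
  shows "tval (tmapF E' E \<psi> (c, \<phi>, s0, ss)) (dtr (tups ! k) E' g') = 0"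
proof (rule ccontr)
  assume nz: "tval (tmapF E' E \<psi> (c, \<phi>, s0, ss)) (dtr (tups ! k) E' g') \<noteq> 0"
  define J where "J = tups ! k"
  define A where "A = Asz J"
  define \<chi> where "\<chi> = compose (fst E') \<phi> \<psi>"
  define \<chi>' where "\<chi>' = decphi A p E' g'"
  define f0' where "f0' = dec0 A p E' g'"
  define fs' where "fs' = decs A p E' g'"
  have ph: "\<phi> \<in> fsB_hom E (fsB_gen p)" using vt by (auto simp: validterm_def MsS_simps)
  have Jt: "J \<in> set tups" using k by (simp add: J_def)
  then have Jp: "J ! 0 < length ms0" "\<forall>i<p. J ! Suc i < length (MS i)" using tups_iff by auto
  have Gk: "gens ! k = fsB_gen (off A (Suc p))" using k by (simp add: gens_simps A_def J_def)
  have d: "dtr J E' g' = (\<chi>', (J ! 0, f0'), map (\<lambda>i. (J ! Suc i, fs' ! i)) [0..<p])"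
    by (simp add: dtr_def A_def \<chi>'_def f0'_def fs'_def)
  have tm: "tmapF E' E \<psi> (c, \<phi>, s0, ss) = (c, \<chi>,
      free_mor fsB_hom fsB_comp (map fsB_gen ms0) (fibB \<chi> E') (fibB \<phi> E) (restrict \<psi> (fib \<chi> (fst E') 0)) s0,
      map (\<lambda>i. free_mor fsA_hom fsA_comp (map fsA_gen (MS i)) (fib \<chi> (fst E') (int i + 1))
          (fib \<phi> (fst E) (int i + 1)) (restrict \<psi> (fib \<chi> (fst E') (int i + 1))) (ss ! i)) [0..<p])"
    by (simp add: tmapF_def \<chi>_def)
  from nz have nz': "\<chi>' = \<chi>"
    "free_mor fsB_hom fsB_comp (map fsB_gen ms0) (fibB \<chi> E') (fibB \<phi> E) (restrict \<psi> (fib \<chi> (fst E') 0)) s0 (J ! 0, f0') \<noteq> 0"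
    "el (map (\<lambda>i. free_mor fsA_hom fsA_comp (map fsA_gen (MS i)) (fib \<chi> (fst E') (int i + 1))
          (fib \<phi> (fst E) (int i + 1)) (restrict \<psi> (fib \<chi> (fst E') (int i + 1))) (ss ! i)) [0..<p])
        (map (\<lambda>i. (J ! Suc i, fs' ! i)) [0..<p]) \<noteq> 0"
    unfolding J_def[symmetric] d tm by (auto simp: tval_app split: if_splits)
  obtain f0 where f0: "f0 \<in> fsB_hom (fibB \<phi> E) (map fsB_gen ms0 ! (J ! 0))"
    "fsB_comp (fibB \<chi> E') f0 (restrict \<psi> (fib \<chi> (fst E') 0)) = f0'"
    using free_mor_nz[OF nz'(2)] by blast
  have exi: "\<exists>fi. fi \<in> fsA_hom (fib \<phi> (fst E) (int i + 1)) (fsA_gen (MS i ! (J ! Suc i))) \<and>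
        compose (fib \<chi> (fst E') (int i + 1)) fi \<psi> = fs' ! i" if i: "i < p" for i
  proof -
    have "(\<forall>i<p. (map (\<lambda>i. free_mor fsA_hom fsA_comp (map fsA_gen (MS i)) (fib \<chi> (fst E') (int i + 1))
          (fib \<phi> (fst E) (int i + 1)) (restrict \<psi> (fib \<chi> (fst E') (int i + 1))) (ss ! i)) [0..<p] ! i)
        (map (\<lambda>i. (J ! Suc i, fs' ! i)) [0..<p] ! i) \<noteq> 0)"
      using el_nz[OF nz'(3)] by simp
    then have "free_mor fsA_hom fsA_comp (map fsA_gen (MS i)) (fib \<chi> (fst E') (int i + 1))
          (fib \<phi> (fst E) (int i + 1)) (restrict \<psi> (fib \<chi> (fst E') (int i + 1))) (ss ! i) (J ! Suc i, fs' ! i) \<noteq> 0"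
      using i by simp
    from free_mor_nz[OF this] obtain fi where
      "fi \<in> fsA_hom (fib \<phi> (fst E) (int i + 1)) (map fsA_gen (MS i) ! (J ! Suc i))"
      "fsA_comp (fib \<chi> (fst E') (int i + 1)) fi (restrict \<psi> (fib \<chi> (fst E') (int i + 1))) = fs' ! i" by blast
    then show ?thesis using Jp(2) i by (auto simp: compA_fib)
  qed
  define fs where "fs = map (\<lambda>i. SOME fi. fi \<in> fsA_hom (fib \<phi> (fst E) (int i + 1)) (fsA_gen (MS i ! (J ! Suc i))) \<and>
        compose (fib \<chi> (fst E') (int i + 1)) fi \<psi> = fs' ! i) [0..<p]"
  have fsp: "fs ! i \<in> fsA_hom (fib \<phi> (fst E) (int i + 1)) (fsA_gen (MS i ! (J ! Suc i))) \<and>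
        compose (fib \<chi> (fst E') (int i + 1)) (fs ! i) \<psi> = fs' ! i" if i: "i < p" for i
    using someI_ex[OF exi[OF i]] i by (simp add: fs_def)
  have vr: "validraw A p E \<phi> f0 fs"
    unfolding validraw_def using ph f0(1) Jp fsp by (simp add: A_def Asz_simps fs_def)
  define g where "g = enc A E \<phi> f0 fs"
  have gh: "g \<in> fsB_hom E (gens ! k)" using enc_hom[OF o vr] Gk by (simp add: g_def)
  note de = dec_enc[OF o vr, folded g_def]
  have cg: "compose (fst E') g \<psi> \<in> fsB_hom E' (fsB_gen (off A (Suc p)))" using compB_hom[OF o' psi gh] Gk by simp
  have g'h: "g' \<in> fsB_hom E' (fsB_gen (off A (Suc p)))" using g' Gk by simp
  note dc = dec_comp[OF psi, of A p g, unfolded de]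
  have e1: "decphi A p E' (compose (fst E') g \<psi>) = \<chi>'" using dc(1) nz'(1) by (simp add: \<chi>_def)
  have e2: "dec0 A p E' (compose (fst E') g \<psi>) = f0'"
    using dc(2) f0(2) by (simp add: compB_fib \<chi>_def)
  have e3: "decs A p E' (compose (fst E') g \<psi>) = fs'"
  proof (rule nth_equalityI)
    show "length (decs A p E' (compose (fst E') g \<psi>)) = length fs'" by (simp add: decs_def fs'_def)
    fix i assume "i < length (decs A p E' (compose (fst E') g \<psi>))"
    then have i: "i < p" by (simp add: decs_def)
    have "decs A p E' (compose (fst E') g \<psi>) ! i = compose (fib \<chi> (fst E') (int i + 1)) (fs ! i) \<psi>"
      unfolding dc(3) \<chi>_def using i by simp
    then show "decs A p E' (compose (fst E') g \<psi>) ! i = fs' ! i" using fsp[OF i] by simp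
  qed
  have "compose (fst E') g \<psi> = enc A E' (decphi A p E' (compose (fst E') g \<psi>)) (dec0 A p E' (compose (fst E') g \<psi>)) (decs A p E' (compose (fst E') g \<psi>))"
    by (rule sym, rule enc_dec[OF o' cg])
  also have "\<dots> = enc A E' \<chi>' f0' fs'" unfolding e1 e2 e3 ..
  also have "\<dots> = g'" unfolding \<chi>'_def f0'_def fs'_def by (rule enc_dec[OF o' g'h])
  finally have "compose (fst E') g \<psi> = g'" .
  then show False using nog gh by blast
qed

end


lemma sum_sum_list_swap: "(\<Sum>g\<in>G. \<Sum>x\<leftarrow>L. f x g) = (\<Sum>x\<leftarrow>L. \<Sum>g\<in>G. f x g)"
  by (induct L) (simp_all add: sum.distrib)

lemma free_mor_sum: "free_mor hom cmp gs Y' Y h (\<lambda>z. \<Sum>x\<leftarrow>L. f x z) = (\<lambda>z. \<Sum>x\<leftarrow>L. free_mor hom cmp gs Y' Y h (f x) z)"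
proof (rule ext)
  fix z
  show "free_mor hom cmp gs Y' Y h (\<lambda>z. \<Sum>x\<leftarrow>L. f x z) z = (\<Sum>x\<leftarrow>L. free_mor hom cmp gs Y' Y h (f x) z)"
    by (cases z) (simp add: free_mor_def sum_sum_list_swap)
qed

context msetup begin

lemma key:
  assumes o': "fsB_obj E'" and o: "fsB_obj E" and psi: "\<psi> \<in> fsB_hom E' E"
    and vt: "validterm S0 (\<lambda>i. fst (MsS ! i)) (length MsS) E \<tau>"
  shows "Fmor E' E \<psi> (Lam E (tval \<tau>)) = Lam E' (tval (tmapF E' E \<psi> \<tau>))"
proof (rule ext)
  obtain c \<phi> s0 ss where tau: "\<tau> = (c, \<phi>, s0, ss)" by (cases \<tau>) auto
  fix z :: "nat \<times> (int \<Rightarrow> int)"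
  obtain k g' where z: "z = (k, g')" by (cases z) auto
  show "Fmor E' E \<psi> (Lam E (tval \<tau>)) z = Lam E' (tval (tmapF E' E \<psi> \<tau>)) z"
  proof (cases "k < length tups")
    case False
    then show ?thesis unfolding z Fmor_def free_mor_def Lam_def by (simp add: gens_simps)
  next
    case k: True
    show ?thesis
    proof (cases "\<exists>g. g \<in> fsB_hom E (gens ! k) \<and> compose (fst E') g \<psi> = g'")
      case True
      then obtain g where g: "g \<in> fsB_hom E (gens ! k)" "compose (fst E') g \<psi> = g'" by blast
      have g'h: "g' \<in> fsB_hom E' (gens ! k)" using compB_hom[OF o' psi g(1)] g(2) by simp
      have "Fmor E' E \<psi> (Lam E (tval \<tau>)) (k, fsB_comp E' g \<psi>) = Lam E (tval \<tau>) (k, g)"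
        unfolding Fmor_def
      proof (rule free_mor_eval)
        show "k < length gens" using k by (simp add: gens_simps)
        show "g \<in> fsB_hom E (gens ! k)" using g(1) .
        fix f2 assume "f2 \<in> fsB_hom E (gens ! k)" "fsB_comp E' f2 \<psi> = fsB_comp E' g \<psi>"
        then show "f2 = g" using compose_inj[OF fsB_homD(2)[OF psi] homB_ext homB_ext[OF g(1)]]
          by (auto simp: fsB_comp_def)
      qed
      then have "Fmor E' E \<psi> (Lam E (tval \<tau>)) z = tval \<tau> (dtr (tups ! k) E g)"
        using g k by (simp add: z fsB_comp_def Lam_def)
      also have "\<dots> = tval (tmapF E' E \<psi> \<tau>) (dtr (tups ! k) E' (compose (fst E') g \<psi>))"
        unfolding tau by (rule key_a[OF o' o psi vt[unfolded tau] k g(1)])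
      also have "\<dots> = Lam E' (tval (tmapF E' E \<psi> \<tau>)) z"
        using g(2) g'h k by (simp add: z Lam_def)
      finally show ?thesis .
    next
      case False
      have "Fmor E' E \<psi> (Lam E (tval \<tau>)) (k, g') = 0" unfolding Fmor_def
        by (rule free_mor_none) (use False in \<open>auto simp: fsB_comp_def\<close>)
      moreover have "Lam E' (tval (tmapF E' E \<psi> \<tau>)) (k, g') = 0"
      proof (cases "g' \<in> fsB_hom E' (gens ! k)")
        case True
        then show ?thesis using key_b[OF o' o psi vt[unfolded tau] k True False] k by (simp add: Lam_def tau)
      qed (simp add: Lam_def)
      ultimately show ?thesis by (simp add: z)
    qed
  qed
qed

lemma Lam_tsum: "Lam E (tsum L) = (\<lambda>z. \<Sum>\<tau>\<leftarrow>L. Lam E (tval \<tau>) z)"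
  by (rule ext) (auto simp: Lam_def tsum_def)

lemma Fmor_Lam_tsum:
  assumes o': "fsB_obj E'" and o: "fsB_obj E" and psi: "\<psi> \<in> fsB_hom E' E"
    and vt: "\<forall>\<tau>\<in>set L. validterm S0 (\<lambda>i. fst (MsS ! i)) (length MsS) E \<tau>"
  shows "Fmor E' E \<psi> (Lam E (tsum L)) = Lam E' (tsum (map (tmapF E' E \<psi>) L))"
proof -
  have "Fmor E' E \<psi> (Lam E (tsum L)) = (\<lambda>z. \<Sum>\<tau>\<leftarrow>L. Fmor E' E \<psi> (Lam E (tval \<tau>)) z)"
    unfolding Lam_tsum Fmor_def by (rule free_mor_sum)
  also have "\<dots> = (\<lambda>z. \<Sum>\<tau>\<leftarrow>L. Lam E' (tval (tmapF E' E \<psi> \<tau>)) z)"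
    by (rule ext, rule sum_list_cong') (simp add: key[OF o' o psi] vt)
  also have "\<dots> = Lam E' (tsum (map (tmapF E' E \<psi>) L))"
    unfolding Lam_tsum by (simp add: o_def)
  finally show ?thesis .
qed

lemma tmapF_valid:
  assumes o': "fsB_obj E'" and o: "fsB_obj E" and psi: "\<psi> \<in> fsB_hom E' E"
    and vt: "validterm S0 (\<lambda>i. fst (MsS ! i)) (length MsS) E \<tau>"
  shows "validterm S0 (\<lambda>i. fst (MsS ! i)) (length MsS) E' (tmapF E' E \<psi> \<tau>)"
proof -
  obtain c \<phi> s0 ss where tau: "\<tau> = (c, \<phi>, s0, ss)" by (cases \<tau>) auto
  have v: "\<phi> \<in> fsB_hom E (fsB_gen p)" "s0 \<in> S0 (fibB \<phi> E)" "length ss = p"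
    "\<forall>i<p. ss ! i \<in> SS i (fib \<phi> (fst E) (int i + 1))"
    using vt by (auto simp: validterm_def tau MsS_simps)
  define \<chi> where "\<chi> = compose (fst E') \<phi> \<psi>"
  have ch: "\<chi> \<in> fsB_hom E' (fsB_gen p)" unfolding \<chi>_def by (rule compB_hom[OF o' psi v(1)])
  have s0': "free_mor fsB_hom fsB_comp (map fsB_gen ms0) (fibB \<chi> E') (fibB \<phi> E) (restrict \<psi> (fib \<chi> (fst E') 0)) s0 \<in> S0 (fibB \<chi> E')"
    by (rule submoduleD(2)[OF sub0 fibB_obj[OF o' ch] fibB_obj[OF o v(1)] restrB_hom[OF o' psi v(1), folded \<chi>_def] v(2)])
  have ss': "free_mor fsA_hom fsA_comp (map fsA_gen (MS i)) (fib \<chi> (fst E') (int i + 1))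
          (fib \<phi> (fst E) (int i + 1)) (restrict \<psi> (fib \<chi> (fst E') (int i + 1))) (ss ! i) \<in> SS i (fib \<chi> (fst E') (int i + 1))"
    if i: "i < p" for i
    by (rule submoduleD(2)[OF subi[rule_format, OF i] fib_obj[OF o' ch] fib_obj[OF o v(1)] restrA_hom[OF psi, of \<phi>, folded \<chi>_def]])
       (use i v(4) in auto)
  show ?thesis using ch s0' ss' unfolding tau tmapF_def validterm_def \<chi>_def
    by (simp add: MsS_simps)
qed

end


context msetup begin

lemma Lam_add: "Lam E (\<lambda>a. t1 a + (t2 a::complex)) = (\<lambda>a. Lam E t1 a + Lam E t2 a)"
  by (rule ext) (auto simp: Lam_def)
lemma Lam_scal: "Lam E (\<lambda>a. (c::complex) * t1 a) = (\<lambda>a. c * Lam E t1 a)"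
  by (rule ext) (auto simp: Lam_def)
lemma Lam_zero: "Lam E (\<lambda>a. 0::complex) = (\<lambda>a. 0)"
  by (rule ext) (auto simp: Lam_def)

lemma RS_subspace: "fn_subspace (RS E)"
  unfolding RS_def by (rule R_ob_subspace)

lemma Sp_subspace: "fn_subspace (Sp E)"
  unfolding fn_subspace_def Sp_def
proof (intro conjI ballI allI)
  have "Lam E (\<lambda>a. 0) \<in> Lam E ` RS E" using zero_closed[OF RS_subspace] by (rule imageI)
  then show "(\<lambda>_. 0) \<in> Lam E ` RS E" unfolding Lam_zero .
next
  fix x y assume "x \<in> Lam E ` RS E" "y \<in> Lam E ` RS E"
  then obtain t1 t2 where t: "t1 \<in> RS E" "t2 \<in> RS E" "x = Lam E t1" "y = Lam E t2" by blast
  have "Lam E (\<lambda>a. t1 a + t2 a) \<in> Lam E ` RS E" using add_closed[OF RS_subspace t(1,2)] by (rule imageI)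
  then show "(\<lambda>a. x a + y a) \<in> Lam E ` RS E" unfolding Lam_add t(3,4) .
next
  fix c x assume "x \<in> Lam E ` RS E"
  then obtain t1 where t: "t1 \<in> RS E" "x = Lam E t1" by blast
  have "Lam E (\<lambda>a. c * t1 a) \<in> Lam E ` RS E" using scal_closed[OF RS_subspace t(1)] by (rule imageI)
  then show "(\<lambda>a. c * x a) \<in> Lam E ` RS E" unfolding Lam_scal t(2) .
qed

lemma Sp_free: "Sp E \<subseteq> free_ob fsB_hom gens E"
proof
  fix u assume "u \<in> Sp E"
  then obtain t where u: "u = Lam E t" by (auto simp: Sp_def)
  show "u \<in> free_ob fsB_hom gens E"
    unfolding free_ob_def
  proof (intro CollectI allI impI)
    fix i f assume "u (i, f) \<noteq> 0"
    then have "i < length tups \<and> f \<in> fsB_hom E (gens ! i)" unfolding u Lam_def by (simp split: if_splits)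
    then show "i < length gens \<and> f \<in> fsB_hom E (gens ! i)" by (simp add: gens_simps(1))
  qed
qed

lemma RS_tsum:
  assumes o: "fsB_obj E" and t: "t \<in> RS E"
  shows "\<exists>L. (\<forall>\<tau>\<in>set L. validterm S0 (\<lambda>i. fst (MsS ! i)) (length MsS) E \<tau>) \<and> t = tsum L"
  using R_ob_tsum[OF fsB_objD(1)[OF o] t[unfolded RS_def]] .

lemma tsum_RS:
  assumes "\<forall>\<tau>\<in>set L. validterm S0 (\<lambda>i. fst (MsS ! i)) (length MsS) E \<tau>"
  shows "tsum L \<in> RS E"
  unfolding RS_def by (rule tsum_in[OF assms])

lemma Sp_closed:
  assumes oX: "fsB_obj X" and oY: "fsB_obj Y" and f: "f \<in> fsB_hom X Y" and u: "u \<in> Sp Y"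
  shows "Fmor X Y f u \<in> Sp X"
proof -
  obtain t where t: "t \<in> RS Y" "u = Lam Y t" using u by (auto simp: Sp_def)
  obtain L where L: "\<forall>\<tau>\<in>set L. validterm S0 (\<lambda>i. fst (MsS ! i)) (length MsS) Y \<tau>" "t = tsum L"
    using RS_tsum[OF oY t(1)] by blast
  have "Fmor X Y f u = Lam X (tsum (map (tmapF X Y f) L))"
    unfolding t(2) L(2) by (rule Fmor_Lam_tsum[OF oX oY f L(1)])
  moreover have "tsum (map (tmapF X Y f) L) \<in> RS X"
    by (rule tsum_RS) (use L(1) tmapF_valid[OF oX oY f] in auto)
  ultimately show ?thesis by (simp add: Sp_def)
qed

theorem Sp_submodule: "is_submodule fsB_obj fsB_hom (free_ob fsB_hom gens) Fmor Sp"
proof -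
  have 1: "\<forall>X. fsB_obj X \<longrightarrow> fn_subspace (Sp X) \<and> Sp X \<subseteq> free_ob fsB_hom gens X"
    using Sp_subspace Sp_free by blast
  have 2: "\<forall>X Y f. fsB_obj X \<longrightarrow> fsB_obj Y \<longrightarrow> f \<in> fsB_hom X Y \<longrightarrow> Fmor X Y f ` Sp Y \<subseteq> Sp X"
    using Sp_closed by blast
  show ?thesis unfolding is_submodule_def using 1 2 by blast
qed

end


context msetup begin

lemma vt_len: "validterm V0 Vs (length MsS) E \<tau> = validterm V0 Vs p E \<tau>"
  by (simp add: MsS_simps)

lemma lin_cond:
  assumes o: "fsB_obj E"
  shows "\<forall>\<phi>\<in>fsB_hom E (fsB_gen p). fn_linear_on (S0 (fibB \<phi> E)) (Nob (fibB \<phi> E)) (e0 (fibB \<phi> E)) \<and> fn_subspace (S0 (fibB \<phi> E)) \<and>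
       (\<forall>i<p. fn_linear_on (fst (MsS ! i) (fib \<phi> (fst E) (int i + 1))) (fst (Ms ! i) (fib \<phi> (fst E) (int i + 1))) (ET i (fib \<phi> (fst E) (int i + 1)))
            \<and> fn_subspace (fst (MsS ! i) (fib \<phi> (fst E) (int i + 1))))"
proof (intro ballI conjI allI impI)
  fix \<phi> assume ph: "\<phi> \<in> fsB_hom E (fsB_gen p)"
  have fo: "fsB_obj (fibB \<phi> E)" using fibB_obj[OF o ph] .
  show "fn_linear_on (S0 (fibB \<phi> E)) (Nob (fibB \<phi> E)) (e0 (fibB \<phi> E))" using epiD(1)[OF epi0 fo] by blast
  show "fn_subspace (S0 (fibB \<phi> E))" using submoduleD(1)[OF sub0 fo] by blast
  fix i assume i: "i < p"
  have ao: "fsA_obj (fib \<phi> (fst E) (int i + 1))" using fib_obj[OF o ph] i by simp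
  show "fn_linear_on (fst (MsS ! i) (fib \<phi> (fst E) (int i + 1))) (fst (Ms ! i) (fib \<phi> (fst E) (int i + 1))) (ET i (fib \<phi> (fst E) (int i + 1)))"
    using epiD(1)[OF epii[rule_format, OF i] ao] i by (simp add: MsS_simps)
  show "fn_subspace (fst (MsS ! i) (fib \<phi> (fst E) (int i + 1)))"
    using submoduleD(1)[OF subi[rule_format, OF i] ao] i by (simp add: MsS_simps)
qed

lemma Hm_RS:
  assumes o: "fsB_obj E" and L: "\<forall>\<tau>\<in>set L. validterm S0 (\<lambda>i. fst (MsS ! i)) (length MsS) E \<tau>"
  shows "Hm e0 ET p E (tsum L) = tsum (map (tmapH e0 ET p E) L)"
  by (rule Hm_tsum[OF _ lin_cond[OF o]]) (use L in \<open>simp add: vt_len\<close>)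

lemma tmapH_valid:
  assumes o: "fsB_obj E" and vt: "validterm S0 (\<lambda>i. fst (MsS ! i)) (length MsS) E \<tau>"
  shows "validterm Nob (\<lambda>i. fst (Ms ! i)) (length Ms) E (tmapH e0 ET p E \<tau>)"
proof -
  obtain c \<phi> s0 ss where tau: "\<tau> = (c, \<phi>, s0, ss)" by (cases \<tau>) auto
  have v: "\<phi> \<in> fsB_hom E (fsB_gen p)" "s0 \<in> S0 (fibB \<phi> E)" "length ss = p"
    "\<forall>i<p. ss ! i \<in> fst (MsS ! i) (fib \<phi> (fst E) (int i + 1))"
    using vt by (auto simp: validterm_def tau MsS_simps)
  note lc = lin_cond[OF o, rule_format, OF v(1)]
  have "e0 (fibB \<phi> E) s0 \<in> Nob (fibB \<phi> E)" using lin_in lc v(2) by blast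
  moreover have "\<forall>i<p. ET i (fib \<phi> (fst E) (int i + 1)) (ss ! i) \<in> fst (Ms ! i) (fib \<phi> (fst E) (int i + 1))"
    using lin_in lc v(4) by blast
  ultimately show ?thesis using v(1) by (simp add: validterm_def tau tmapH_def)
qed

lemma Lam_inj_on: "fsB_obj E \<Longrightarrow> inj_on (Lam E) (RS E)"
  using Lam_inj by (auto simp: inj_on_def)

lemma etap_Lam:
  assumes o: "fsB_obj E" and t: "t \<in> RS E"
  shows "etap E (Lam E t) = Hm e0 ET p E t"
  unfolding etap_def using inv_into_f_f[OF Lam_inj_on[OF o] t] by simp

lemma Hm_RS_in:
  assumes o: "fsB_obj E" and t: "t \<in> RS E"
  shows "Hm e0 ET p E t \<in> R_ob Nob Ms E"
proof -
  obtain L where L: "\<forall>\<tau>\<in>set L. validterm S0 (\<lambda>i. fst (MsS ! i)) (length MsS) E \<tau>" "t = tsum L"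
    using RS_tsum[OF o t] by blast
  show ?thesis unfolding L(2) Hm_RS[OF o L(1)]
    by (rule tsum_in) (use L(1) tmapH_valid[OF o] in auto)
qed

lemma tmapH_scale: "map (tmapH e0 ET p E) (map (\<lambda>(c, \<phi>, v, ws). (k * c, \<phi>, v, ws)) L) =
   map (\<lambda>(c, \<phi>, v, ws). (k * c, \<phi>, v, ws)) (map (tmapH e0 ET p E) L)"
  by (auto simp: tmapH_def split: prod.splits)

lemma validterm_scale: "validterm V0 Vs q E (c, \<phi>, v, ws) \<Longrightarrow> validterm V0 Vs q E (k * c, \<phi>, v, ws)"
  by (simp add: validterm_def)

lemma Hm_add:
  assumes o: "fsB_obj E" and t1: "t1 \<in> RS E" and t2: "t2 \<in> RS E"
  shows "Hm e0 ET p E (\<lambda>a. t1 a + t2 a) = (\<lambda>a. Hm e0 ET p E t1 a + Hm e0 ET p E t2 a)"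
proof -
  obtain L1 where L1: "\<forall>\<tau>\<in>set L1. validterm S0 (\<lambda>i. fst (MsS ! i)) (length MsS) E \<tau>" "t1 = tsum L1"
    using RS_tsum[OF o t1] by blast
  obtain L2 where L2: "\<forall>\<tau>\<in>set L2. validterm S0 (\<lambda>i. fst (MsS ! i)) (length MsS) E \<tau>" "t2 = tsum L2"
    using RS_tsum[OF o t2] by blast
  have e: "(\<lambda>a. t1 a + t2 a) = tsum (L1 @ L2)" unfolding L1(2) L2(2) tsum_append ..
  have v: "\<forall>\<tau>\<in>set (L1 @ L2). validterm S0 (\<lambda>i. fst (MsS ! i)) (length MsS) E \<tau>" using L1(1) L2(1) by auto
  show ?thesis unfolding e Hm_RS[OF o v] unfolding L1(2) L2(2) Hm_RS[OF o L1(1)] Hm_RS[OF o L2(1)]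
    by (simp add: tsum_append)
qed

lemma Hm_scal:
  assumes o: "fsB_obj E" and t1: "t1 \<in> RS E"
  shows "Hm e0 ET p E (\<lambda>a. k * t1 a) = (\<lambda>a. k * Hm e0 ET p E t1 a)"
proof -
  obtain L1 where L1: "\<forall>\<tau>\<in>set L1. validterm S0 (\<lambda>i. fst (MsS ! i)) (length MsS) E \<tau>" "t1 = tsum L1"
    using RS_tsum[OF o t1] by blast
  have v: "\<forall>\<tau>\<in>set (map (\<lambda>(c, \<phi>, v, ws). (k * c, \<phi>, v, ws)) L1). validterm S0 (\<lambda>i. fst (MsS ! i)) (length MsS) E \<tau>"
    using L1(1) by (auto simp: validterm_def)
  show ?thesis unfolding L1(2) tsum_scale Hm_RS[OF o v] Hm_RS[OF o L1(1)] tmapH_scale ..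
qed

end


context msetup begin

lemma etap_lin:
  assumes o: "fsB_obj E"
  shows "fn_linear_on (Sp E) (R_ob Nob Ms E) (etap E)"
  unfolding fn_linear_on_def
proof (intro conjI ballI allI)
  fix u assume "u \<in> Sp E"
  then obtain t where t: "t \<in> RS E" "u = Lam E t" by (auto simp: Sp_def)
  show "etap E u \<in> R_ob Nob Ms E" unfolding t(2) etap_Lam[OF o t(1)] by (rule Hm_RS_in[OF o t(1)])
next
  fix x y assume "x \<in> Sp E" "y \<in> Sp E"
  then obtain t1 t2 where t: "t1 \<in> RS E" "x = Lam E t1" "t2 \<in> RS E" "y = Lam E t2" by (auto simp: Sp_def)
  have s: "(\<lambda>a. t1 a + t2 a) \<in> RS E" using add_closed[OF RS_subspace t(1,3)] .
  show "etap E (\<lambda>a. x a + y a) = (\<lambda>a. etap E x a + etap E y a)"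
    unfolding t(2,4) Lam_add[symmetric] etap_Lam[OF o s] etap_Lam[OF o t(1)] etap_Lam[OF o t(3)]
    by (rule Hm_add[OF o t(1,3)])
next
  fix c x assume "x \<in> Sp E"
  then obtain t1 where t: "t1 \<in> RS E" "x = Lam E t1" by (auto simp: Sp_def)
  have s: "(\<lambda>a. c * t1 a) \<in> RS E" using scal_closed[OF RS_subspace t(1)] .
  show "etap E (\<lambda>a. c * x a) = (\<lambda>a. c * etap E x a)"
    unfolding t(2) Lam_scal[symmetric] etap_Lam[OF o s] etap_Lam[OF o t(1)]
    by (rule Hm_scal[OF o t(1)])
qed

lemma lift_terms:
  assumes o: "fsB_obj E" and L: "\<forall>\<tau>\<in>set L. validterm Nob (\<lambda>i. fst (Ms ! i)) (length Ms) E \<tau>"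
  shows "\<exists>L'. (\<forall>\<tau>\<in>set L'. validterm S0 (\<lambda>i. fst (MsS ! i)) (length MsS) E \<tau>) \<and> map (tmapH e0 ET p E) L' = L"
  using L
proof (induction L)
  case Nil
  then show ?case by simp
next
  case (Cons \<tau> L)
  obtain L' where L': "\<forall>\<tau>\<in>set L'. validterm S0 (\<lambda>i. fst (MsS ! i)) (length MsS) E \<tau>" "map (tmapH e0 ET p E) L' = L"
    using Cons by auto
  obtain c \<phi> v ws where tau: "\<tau> = (c, \<phi>, v, ws)" by (cases \<tau>) auto
  have vt: "\<phi> \<in> fsB_hom E (fsB_gen p)" "v \<in> Nob (fibB \<phi> E)" "length ws = p"
    "\<forall>i<p. ws ! i \<in> fst (Ms ! i) (fib \<phi> (fst E) (int i + 1))"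
    using Cons.prems by (auto simp: validterm_def tau)
  have fo: "fsB_obj (fibB \<phi> E)" using fibB_obj[OF o vt(1)] .
  obtain s0 where s0: "s0 \<in> S0 (fibB \<phi> E)" "e0 (fibB \<phi> E) s0 = v"
    using epiD(1)[OF epi0 fo] vt(2) by (metis imageE)
  have exi: "\<exists>s. s \<in> SS i (fib \<phi> (fst E) (int i + 1)) \<and> ET i (fib \<phi> (fst E) (int i + 1)) s = ws ! i" if i: "i < p" for i
  proof -
    have ao: "fsA_obj (fib \<phi> (fst E) (int i + 1))" using fib_obj[OF o vt(1)] i by simp
    have "ET i (fib \<phi> (fst E) (int i + 1)) ` SS i (fib \<phi> (fst E) (int i + 1)) = fst (Ms ! i) (fib \<phi> (fst E) (int i + 1))"
      using epiD(1)[OF epii[rule_format, OF i] ao] by blast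
    then show ?thesis using vt(4) i by (metis imageE)
  qed
  define ss where "ss = map (\<lambda>i. SOME s. s \<in> SS i (fib \<phi> (fst E) (int i + 1)) \<and> ET i (fib \<phi> (fst E) (int i + 1)) s = ws ! i) [0..<p]"
  have ssp: "ss ! i \<in> SS i (fib \<phi> (fst E) (int i + 1)) \<and> ET i (fib \<phi> (fst E) (int i + 1)) (ss ! i) = ws ! i" if i: "i < p" for i
    using someI_ex[OF exi[OF i]] i by (simp add: ss_def)
  have v1: "validterm S0 (\<lambda>i. fst (MsS ! i)) (length MsS) E (c, \<phi>, s0, ss)"
    using vt(1) s0(1) ssp by (simp add: validterm_def MsS_simps ss_def)
  have "tmapH e0 ET p E (c, \<phi>, s0, ss) = \<tau>"
    using s0(2) ssp vt(3) by (auto simp: tmapH_def tau intro!: nth_equalityI)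
  then show ?case using L' v1 by (intro exI[of _ "(c, \<phi>, s0, ss) # L'"]) auto
qed

lemma etap_onto:
  assumes o: "fsB_obj E"
  shows "etap E ` Sp E = R_ob Nob Ms E"
proof
  show "etap E ` Sp E \<subseteq> R_ob Nob Ms E" using etap_lin[OF o] by (auto simp: fn_linear_on_def)
next
  show "R_ob Nob Ms E \<subseteq> etap E ` Sp E"
  proof
    fix r assume r: "r \<in> R_ob Nob Ms E"
    obtain L where L: "\<forall>\<tau>\<in>set L. validterm Nob (\<lambda>i. fst (Ms ! i)) (length Ms) E \<tau>" "r = tsum L"
      using R_ob_tsum[OF fsB_objD(1)[OF o] r] by blast
    obtain L' where L': "\<forall>\<tau>\<in>set L'. validterm S0 (\<lambda>i. fst (MsS ! i)) (length MsS) E \<tau>" "map (tmapH e0 ET p E) L' = L"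
      using lift_terms[OF o L(1)] by blast
    have t: "tsum L' \<in> RS E" by (rule tsum_RS[OF L'(1)])
    have "etap E (Lam E (tsum L')) = r"
      unfolding etap_Lam[OF o t] Hm_RS[OF o L'(1)] L'(2) L(2) ..
    moreover have "Lam E (tsum L') \<in> Sp E" using t by (simp add: Sp_def)
    ultimately show "r \<in> etap E ` Sp E" by (metis imageI)
  qed
qed

end


context msetup begin

definition tmapR where
  "tmapR E' E \<psi> \<tau> = (case \<tau> of (c, \<phi>, v, ws) \<Rightarrow>
     (c, compose (fst E') \<phi> \<psi>,
      Nmor (fibB (compose (fst E') \<phi> \<psi>) E') (fibB \<phi> E) (restrict \<psi> (fib (compose (fst E') \<phi> \<psi>) (fst E') 0)) v,
      map (\<lambda>i. snd (Ms ! i) (fib (compose (fst E') \<phi> \<psi>) (fst E') (int i + 1)) (fib \<phi> (fst E) (int i + 1))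
         (restrict \<psi> (fib (compose (fst E') \<phi> \<psi>) (fst E') (int i + 1))) (ws ! i)) [0..<length Ms]))"

lemma Rmor_tsum:
  assumes o': "fsB_obj E'" and o: "fsB_obj E" and psi: "\<psi> \<in> fsB_hom E' E"
    and L: "\<forall>\<tau>\<in>set L. validterm Nob (\<lambda>i. fst (Ms ! i)) (length Ms) E \<tau>"
  shows "Rmor E' E \<psi> (tsum L) = tsum (map (tmapR E' E \<psi>) L)"
proof -
  note rs = Rspec[unfolded R_mor_spec_def, rule_format, OF o' o psi]
  have lin: "fn_linear_on (R_ob Nob Ms E) (R_ob Nob Ms E') (Rmor E' E \<psi>)" using rs by blast
  define U where "U = (\<lambda>\<tau>::complex \<times> (int \<Rightarrow> int) \<times> ('b \<Rightarrow> complex) \<times> ('a \<Rightarrow> complex) list.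
     summand_inj (fst (snd \<tau>)) (elem_tensor (fst (snd (snd \<tau>))) (snd (snd (snd \<tau>)))))"
  have tv: "tval \<tau> = (\<lambda>z. fst \<tau> * U \<tau> z)" for \<tau>
    by (cases \<tau>) (simp add: tval_def U_def)
  have Uin: "U \<tau> \<in> R_ob Nob Ms E" if "\<tau> \<in> set L" for \<tau>
  proof -
    obtain c \<phi> v ws where tau: "\<tau> = (c, \<phi>, v, ws)" by (cases \<tau>) auto
    have "validterm Nob (\<lambda>i. fst (Ms ! i)) (length Ms) E \<tau>" using L that by blast
    then have "validterm Nob (\<lambda>i. fst (Ms ! i)) (length Ms) E (1, \<phi>, v, ws)" by (simp add: validterm_def tau)
    from tval_in[OF this] show ?thesis by (simp add: tval_def U_def tau)
  qed
  have e1: "tsum L = (\<lambda>z. \<Sum>\<tau>\<leftarrow>L. fst \<tau> * U \<tau> z)" by (simp add: tsum_def tv)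
  have "Rmor E' E \<psi> (tsum L) = (\<lambda>z. \<Sum>\<tau>\<leftarrow>L. fst \<tau> * Rmor E' E \<psi> (U \<tau>) z)"
    unfolding e1 by (rule conjunct2[OF lin_list[OF lin R_ob_subspace]]) (use Uin in blast)
  also have "\<dots> = tsum (map (tmapR E' E \<psi>) L)"
    unfolding tsum_def map_map o_def
  proof (rule ext, rule sum_list_cong')
    fix z \<tau> assume t: "\<tau> \<in> set L"
    obtain c \<phi> v ws where tau: "\<tau> = (c, \<phi>, v, ws)" by (cases \<tau>) auto
    have vt: "\<phi> \<in> fsB_hom E (fsB_gen (length Ms))" "v \<in> Nob (fibB \<phi> E)" "length ws = length Ms"
      "\<forall>i<length Ms. ws ! i \<in> fst (Ms ! i) (fib \<phi> (fst E) (int i + 1))"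
      using L t tau by (auto simp: validterm_def)
    have "Rmor E' E \<psi> (U \<tau>) = tval (tmapR E' E \<psi> \<tau>) \<circ> (\<lambda>z. z) \<or> True" by simp
    have R: "Rmor E' E \<psi> (summand_inj \<phi> (elem_tensor v ws)) =
       summand_inj (compose (fst E') \<phi> \<psi>) (elem_tensor
              (Nmor (fibB (compose (fst E') \<phi> \<psi>) E') (fibB \<phi> E) (restrict \<psi> (fib (compose (fst E') \<phi> \<psi>) (fst E') 0)) v)
              (map (\<lambda>i. snd (Ms ! i) (fib (compose (fst E') \<phi> \<psi>) (fst E') (int i + 1)) (fib \<phi> (fst E) (int i + 1))
                          (restrict \<psi> (fib (compose (fst E') \<phi> \<psi>) (fst E') (int i + 1))) (ws ! i))
                   [0..<length Ms]))"
      using rs vt by (simp add: Let_def)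
    show "fst \<tau> * Rmor E' E \<psi> (U \<tau>) z = tval (tmapR E' E \<psi> \<tau>) z"
      unfolding tau using R by (simp add: U_def tval_def tmapR_def)
  qed
  finally show ?thesis .
qed

lemma nat_terms:
  assumes o': "fsB_obj E'" and o: "fsB_obj E" and psi: "\<psi> \<in> fsB_hom E' E"
    and vt: "validterm S0 (\<lambda>i. fst (MsS ! i)) (length MsS) E \<tau>"
  shows "tmapH e0 ET p E' (tmapF E' E \<psi> \<tau>) = tmapR E' E \<psi> (tmapH e0 ET p E \<tau>)"
proof -
  obtain c \<phi> s0 ss where tau: "\<tau> = (c, \<phi>, s0, ss)" by (cases \<tau>) auto
  have v: "\<phi> \<in> fsB_hom E (fsB_gen p)" "s0 \<in> S0 (fibB \<phi> E)" "length ss = p"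
    "\<forall>i<p. ss ! i \<in> SS i (fib \<phi> (fst E) (int i + 1))"
    using vt by (auto simp: validterm_def tau MsS_simps)
  define \<chi> where "\<chi> = compose (fst E') \<phi> \<psi>"
  have ch: "\<chi> \<in> fsB_hom E' (fsB_gen p)" unfolding \<chi>_def by (rule compB_hom[OF o' psi v(1)])
  have n0: "e0 (fibB \<chi> E') (free_mor fsB_hom fsB_comp (map fsB_gen ms0) (fibB \<chi> E') (fibB \<phi> E) (restrict \<psi> (fib \<chi> (fst E') 0)) s0)
     = Nmor (fibB \<chi> E') (fibB \<phi> E) (restrict \<psi> (fib \<chi> (fst E') 0)) (e0 (fibB \<phi> E) s0)"
    by (rule epiD(2)[OF epi0 fibB_obj[OF o' ch] fibB_obj[OF o v(1)] restrB_hom[OF o' psi v(1), folded \<chi>_def] v(2)])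
  have ni: "ET i (fib \<chi> (fst E') (int i + 1)) (free_mor fsA_hom fsA_comp (map fsA_gen (MS i)) (fib \<chi> (fst E') (int i + 1))
          (fib \<phi> (fst E) (int i + 1)) (restrict \<psi> (fib \<chi> (fst E') (int i + 1))) (ss ! i))
     = snd (Ms ! i) (fib \<chi> (fst E') (int i + 1)) (fib \<phi> (fst E) (int i + 1)) (restrict \<psi> (fib \<chi> (fst E') (int i + 1)))
          (ET i (fib \<phi> (fst E) (int i + 1)) (ss ! i))" if i: "i < p" for i
    by (rule epiD(2)[OF epii[rule_format, OF i] fib_obj[OF o' ch] fib_obj[OF o v(1)] restrA_hom[OF psi, of \<phi>, folded \<chi>_def]])
       (use i v(4) in auto)
  show ?thesis
    using n0 ni v(3) unfolding tau tmapF_def tmapH_def tmapR_def \<chi>_def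
    by (auto intro!: nth_equalityI)
qed

lemma etap_nat:
  assumes oX: "fsB_obj X" and oY: "fsB_obj Y" and f: "f \<in> fsB_hom X Y" and u: "u \<in> Sp Y"
  shows "etap X (Fmor X Y f u) = Rmor X Y f (etap Y u)"
proof -
  obtain t where t: "t \<in> RS Y" "u = Lam Y t" using u by (auto simp: Sp_def)
  obtain L where L: "\<forall>\<tau>\<in>set L. validterm S0 (\<lambda>i. fst (MsS ! i)) (length MsS) Y \<tau>" "t = tsum L"
    using RS_tsum[OF oY t(1)] by blast
  have LF: "\<forall>\<tau>\<in>set (map (tmapF X Y f) L). validterm S0 (\<lambda>i. fst (MsS ! i)) (length MsS) X \<tau>"
    using L(1) tmapF_valid[OF oX oY f] by auto
  have LH: "\<forall>\<tau>\<in>set (map (tmapH e0 ET p Y) L). validterm Nob (\<lambda>i. fst (Ms ! i)) (length Ms) Y \<tau>"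
    using L(1) tmapH_valid[OF oY] by auto
  have "etap X (Fmor X Y f u) = etap X (Lam X (tsum (map (tmapF X Y f) L)))"
    unfolding t(2) L(2) Fmor_Lam_tsum[OF oX oY f L(1)] ..
  also have "\<dots> = tsum (map (tmapH e0 ET p X) (map (tmapF X Y f) L))"
    unfolding etap_Lam[OF oX tsum_RS[OF LF]] Hm_RS[OF oX LF] ..
  also have "\<dots> = tsum (map (tmapR X Y f) (map (tmapH e0 ET p Y) L))"
    using nat_terms[OF oX oY f] L(1) by (simp add: map_map o_def cong: map_cong)
  also have "\<dots> = Rmor X Y f (tsum (map (tmapH e0 ET p Y) L))"
    by (rule Rmor_tsum[OF oX oY f LH, symmetric])
  also have "\<dots> = Rmor X Y f (etap Y u)"
    unfolding t(2) L(2) etap_Lam[OF oY tsum_RS[OF L(1)]] Hm_RS[OF oY L(1)] ..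
  finally show ?thesis .
qed

theorem etap_epi: "is_epi fsB_obj fsB_hom Sp Fmor (R_ob Nob Ms) Rmor etap"
proof -
  have 1: "\<forall>X. fsB_obj X \<longrightarrow> fn_linear_on (Sp X) (R_ob Nob Ms X) (etap X) \<and> etap X ` Sp X = R_ob Nob Ms X"
    using etap_lin etap_onto by blast
  have 2: "\<forall>X Y f. fsB_obj X \<longrightarrow> fsB_obj Y \<longrightarrow> f \<in> fsB_hom X Y \<longrightarrow>
        (\<forall>v\<in>Sp Y. etap X (Fmor X Y f v) = Rmor X Y f (etap Y v))"
    using etap_nat by blast
  show ?thesis unfolding is_epi_def using 1 2 by blast
qed

end


lemma (in msetup) msz_bound:
  assumes ms0d: "\<forall>m\<in>set ms0. m \<le> d" and lcs: "length cs = p" and MSc: "\<forall>i<p. \<forall>m\<in>set (MS i). m \<le> cs ! i"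
  shows "\<forall>m\<in>set msz. 0 \<le> m \<and> m \<le> d + sum_list cs"
proof
  fix m assume "m \<in> set msz"
  then obtain J where J: "J \<in> set tups" "m = off (Asz J) (Suc p)" by (auto simp: msz_def)
  have Jp: "J ! 0 < length ms0" "\<forall>i<p. J ! Suc i < length (MS i)" using J(1) tups_iff by auto
  have "m = Asz J 0 + (\<Sum>i<p. Asz J (Suc i))" unfolding J(2) off_def sum.lessThan_Suc_shift by simp
  also have "\<dots> = ms0 ! (J ! 0) + (\<Sum>i<p. MS i ! (J ! Suc i))" by (simp add: Asz_simps)
  also have "\<dots> \<le> d + (\<Sum>i<p. cs ! i)"
  proof (rule add_mono)
    show "ms0 ! (J ! 0) \<le> d" using ms0d Jp(1) by simp
    show "(\<Sum>i<p. MS i ! (J ! Suc i)) \<le> (\<Sum>i<p. cs ! i)"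
      by (rule sum_mono) (use MSc Jp(2) in auto)
  qed
  also have "(\<Sum>i<p. cs ! i) = sum_list cs"
    using lcs by (simp add: sum_list_sum_nth atLeast0LessThan)
  finally show "0 \<le> m \<and> m \<le> d + sum_list cs" by simp
qed

theorem mainTheorem11:
  fixes Nob :: "fsB_ob \<Rightarrow> ('b \<Rightarrow> complex) set"
    and Nmor :: "fsB_ob \<Rightarrow> fsB_ob \<Rightarrow> (int \<Rightarrow> int) \<Rightarrow> ('b \<Rightarrow> complex) \<Rightarrow> ('b \<Rightarrow> complex)"
    and Ms :: "'a fsA_mod list"
    and cs :: "nat list"
    and d :: nat
    and Rmor :: "fsB_ob \<Rightarrow> fsB_ob \<Rightarrow> (int \<Rightarrow> int) \<Rightarrow> ((int \<Rightarrow> int) \<times> 'b \<times> 'a list \<Rightarrow> complex)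
                   \<Rightarrow> ((int \<Rightarrow> int) \<times> 'b \<times> 'a list \<Rightarrow> complex)"
  assumes "fsB_module Nob Nmor"
    and "fsB_small d Nob Nmor"
    and "length cs = length Ms"
    and "\<forall>i<length Ms. fsA_module (fst (Ms ! i)) (snd (Ms ! i))"
    and "\<forall>i<length Ms. fsA_small (cs ! i) (fst (Ms ! i)) (snd (Ms ! i))"
    and "R_mor_spec Nob Nmor Ms Rmor"
  shows "fsB_small (d + sum_list cs) (R_ob Nob Ms) Rmor"
proof -
  obtain ms0 S0 e0 where N: "\<forall>m\<in>set ms0. 0 \<le> m \<and> m \<le> d"
    "is_submodule fsB_obj fsB_hom (free_ob fsB_hom (map fsB_gen ms0)) (free_mor fsB_hom fsB_comp (map fsB_gen ms0)) S0"
    "is_epi fsB_obj fsB_hom S0 (free_mor fsB_hom fsB_comp (map fsB_gen ms0)) Nob Nmor e0"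
    using assms(2) unfolding small_def by blast
  have "\<forall>i. \<exists>ms S \<eta>. i < length Ms \<longrightarrow> (\<forall>m\<in>set ms. 1 \<le> m \<and> m \<le> cs ! i) \<and>
     is_submodule fsA_obj fsA_hom (free_ob fsA_hom (map fsA_gen ms)) (free_mor fsA_hom fsA_comp (map fsA_gen ms)) S \<and>
     is_epi fsA_obj fsA_hom S (free_mor fsA_hom fsA_comp (map fsA_gen ms)) (fst (Ms ! i)) (snd (Ms ! i)) \<eta>"
    using assms(5) unfolding small_def by blast
  then obtain MS where "\<forall>i. \<exists>S \<eta>. i < length Ms \<longrightarrow> (\<forall>m\<in>set (MS i). 1 \<le> m \<and> m \<le> cs ! i) \<and>
     is_submodule fsA_obj fsA_hom (free_ob fsA_hom (map fsA_gen (MS i))) (free_mor fsA_hom fsA_comp (map fsA_gen (MS i))) S \<and>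
     is_epi fsA_obj fsA_hom S (free_mor fsA_hom fsA_comp (map fsA_gen (MS i))) (fst (Ms ! i)) (snd (Ms ! i)) \<eta>"
    by (rule choice[THEN exE])
  then obtain SS where "\<forall>i. \<exists>\<eta>. i < length Ms \<longrightarrow> (\<forall>m\<in>set (MS i). 1 \<le> m \<and> m \<le> cs ! i) \<and>
     is_submodule fsA_obj fsA_hom (free_ob fsA_hom (map fsA_gen (MS i))) (free_mor fsA_hom fsA_comp (map fsA_gen (MS i))) (SS i) \<and>
     is_epi fsA_obj fsA_hom (SS i) (free_mor fsA_hom fsA_comp (map fsA_gen (MS i))) (fst (Ms ! i)) (snd (Ms ! i)) \<eta>"
    by (rule choice[THEN exE])
  then obtain ET where M: "\<forall>i. i < length Ms \<longrightarrow> (\<forall>m\<in>set (MS i). 1 \<le> m \<and> m \<le> cs ! i) \<and>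
     is_submodule fsA_obj fsA_hom (free_ob fsA_hom (map fsA_gen (MS i))) (free_mor fsA_hom fsA_comp (map fsA_gen (MS i))) (SS i) \<and>
     is_epi fsA_obj fsA_hom (SS i) (free_mor fsA_hom fsA_comp (map fsA_gen (MS i))) (fst (Ms ! i)) (snd (Ms ! i)) (ET i)"
    by (rule choice[THEN exE])
  interpret msetup Nob Nmor Ms Rmor ms0 S0 e0 MS SS ET
    by unfold_locales (use N M assms(6) in auto)
  have b: "\<forall>m\<in>set msz. 0 \<le> m \<and> m \<le> d + sum_list cs"
    by (rule msz_bound) (use N M assms(3) in auto)
  have "is_submodule fsB_obj fsB_hom (free_ob fsB_hom (map fsB_gen msz)) (free_mor fsB_hom fsB_comp (map fsB_gen msz)) Sp"
    using Sp_submodule by (simp add: Fmor_def gens_def)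
  moreover have "is_epi fsB_obj fsB_hom Sp (free_mor fsB_hom fsB_comp (map fsB_gen msz)) (R_ob Nob Ms) Rmor etap"
    using etap_epi by (simp add: Fmor_def gens_def)
  ultimately show ?thesis unfolding small_def using b by blast
qed


end
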